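(* Let $X$ be a diffeological space, $\pi_1:V_1\to X$ and $\pi_2:V_2\to X$ finite-dimensional diffeological vector pseudo-bundles over it, and $\nabla^1,\nabla^2$ connections on $V_1,V_2$. Then the operator $\nabla^1\oplus\nabla^2$ is well-defined as a map $C^\infty(X,V_1\oplus V_2)\to C^\infty(X,\Lambda^1(X)\otimes(V_1\oplus V_2))$ and is a connection on $V_1\oplus V_2$.
   Context: Diffeological spaces, smooth maps, functional diffeologies and diffeological vector pseudo-bundles (smooth surjections with vector space fibres whose fibrewise operations and zero section are smooth) are as usual; the direct sum $V_1\oplus V_2=V_1\times_XV_2$ carries the subset diffeology of the product, and tensor products the tensor product pseudo-bundle diffeology. $\mathrm{pr}_{V_i}:V_1\oplus V_2\to V_i$ are the projections and $\mathrm{Incl}_{V_i}:V_i\to V_1\oplus V_2$ the inclusions. $\Omega^1(X)$ is the space of diffeological 1-forms (assigning to each plot $p:U\to X$ an ordinary 1-form $\omega(p)$ with $\omega(p\circ F)=F^*\omega(p)$); $\Lambda^1(X)$ is the quotient of $X\times\Omega^1(X)$ by forms vanishing at each point ($\omega(p)(0)=0$ for all plots with $p(0)=x$), with quotient diffeology; $dh$ is the section $x\mapsto[x,dh]$, $dh(p)=d(h\circ p)$. A connection on a finite-dimensional pseudo-bundle $V\to X$ is a smooth linear operator $\nabla:C^\infty(X,V)\to C^\infty(X,\Lambda^1(X)\otimes V)$ with $\nabla(hs)=dh\otimes s+h\nabla s$ for smooth $h:X\to\mathbb{R}$. For $s\in C^\infty(X,V_1\oplus V_2)$ with $s_i=\mathrm{pr}_{V_i}\circ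 s$, $(\nabla^1\oplus\nabla^2)s=(\mathrm{Id}_{\Lambda^1(X)}\otimes\mathrm{Incl}_{V_1})\circ\nabla^1s_1+(\mathrm{Id}_{\Lambda^1(X)}\otimes\mathrm{Incl}_{V_2})\circ\nabla^2s_2$. *)

theory Defs
  imports "HOL-Analysis.Analysis"
begin

type_synonym rv = "nat \<Rightarrow> real"

definition Rn :: "nat \<Rightarrow> rv set" where
  "Rn n = {x. \<forall>i\<ge>n. x i = 0}"

definition open_in_Rn :: "nat \<Rightarrow> rv set \<Rightarrow> bool" where
  "open_in_Rn n U \<longleftrightarrow> U \<subseteq> Rn n \<and>
     (\<forall>x\<in>U. \<exists>e>0. \<forall>y\<in>Rn n. (\<forall>i<n. \<bar>y i - x i\<bar> < e) \<longrightarrow> y \<in> U)"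

definition shift :: "rv \<Rightarrow> nat \<Rightarrow> real \<Rightarrow> rv" where
  "shift x i t = (\<lambda>j. x j + (if j = i then t else 0))"

definition pd :: "nat \<Rightarrow> (rv \<Rightarrow> real) \<Rightarrow> rv \<Rightarrow> real" where
  "pd i f x = deriv (\<lambda>t. f (shift x i t)) 0"

definition iter_pd :: "nat list \<Rightarrow> (rv \<Rightarrow> real) \<Rightarrow> rv \<Rightarrow> real" where
  "iter_pd ks f = foldr pd ks f"

definition smooth_fn :: "nat \<Rightarrow> rv set \<Rightarrow> (rv \<Rightarrow> real) \<Rightarrow> bool" where
  "smooth_fn n U f \<longleftrightarrow> (\<forall>ks. set ks \<subseteq> {..<n} \<longrightarrow>
      continuous_on U (iter_pd ks f) \<and>
      (\<forall>i<n. \<forall>x\<in>U. (\<lambda>t. iter_pd ks f (shift x i t)) differentiable (at 0)))"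

definition smooth_map :: "nat \<Rightarrow> rv set \<Rightarrow> nat \<Rightarrow> (rv \<Rightarrow> rv) \<Rightarrow> bool" where
  "smooth_map m W n F \<longleftrightarrow> (\<forall>w\<in>W. F w \<in> Rn n) \<and> (\<forall>i<n. smooth_fn m W (\<lambda>w. F w i))"

definition joinset :: "nat \<Rightarrow> rv set \<Rightarrow> rv set \<Rightarrow> rv set" where
  "joinset n U W = {(\<lambda>i. if i < n then u i else w (i - n)) | u w. u \<in> U \<and> w \<in> W}"

definition fpart :: "nat \<Rightarrow> rv \<Rightarrow> rv" where
  "fpart n z = (\<lambda>i. if i < n then z i else 0)"

definition spart :: "nat \<Rightarrow> rv \<Rightarrow> rv" where
  "spart n z = (\<lambda>i. z (i + n))"

text \<open>A plot is a triple (n, U, p) with U open in R^n and p : U -> X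
  (represented extensionally, i.e. p = undefined off U).\<close>
type_synonym 'a plot = "nat \<times> rv set \<times> (rv \<Rightarrow> 'a)"

definition plot_of :: "nat \<Rightarrow> rv set \<Rightarrow> (rv \<Rightarrow> 'a) \<Rightarrow> 'a plot" where
  "plot_of n U p = (n, U, restrict p U)"

definition diffeology :: "'a set \<Rightarrow> 'a plot set \<Rightarrow> bool" where
  "diffeology X D \<longleftrightarrow>
     (\<forall>(n,U,p)\<in>D. open_in_Rn n U \<and> p = restrict p U \<and> p ` U \<subseteq> X) \<and>
     (\<forall>n U x. open_in_Rn n U \<and> x \<in> X \<longrightarrow> plot_of n U (\<lambda>_. x) \<in> D) \<and>
     (\<forall>n U p. open_in_Rn n U \<and> p ` U \<subseteq> X \<and>
        (\<forall>u\<in>U. \<exists>V. open_in_Rn n V \<and> u \<in> V \<and> V \<subseteq> U \<and> plot_of n V p \<in> D)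
        \<longrightarrow> plot_of n U p \<in> D) \<and>
     (\<forall>(n,U,p)\<in>D. \<forall>m W F. open_in_Rn m W \<and> smooth_map m W n F \<and> F ` W \<subseteq> U
        \<longrightarrow> plot_of m W (p \<circ> F) \<in> D)"

definition smooth_betw :: "'a set \<Rightarrow> 'a plot set \<Rightarrow> 'b set \<Rightarrow> 'b plot set \<Rightarrow> ('a \<Rightarrow> 'b) \<Rightarrow> bool" where
  "smooth_betw X DX Y DY f \<longleftrightarrow> (\<forall>x\<in>X. f x \<in> Y) \<and> (\<forall>(n,U,p)\<in>DX. plot_of n U (f \<circ> p) \<in> DY)"

definition real_diff :: "real plot set" where
  "real_diff = {(n,U,p). open_in_Rn n U \<and> p = restrict p U \<and> smooth_fn n U p}"

definition prod_diff :: "'a plot set \<Rightarrow> 'b plot set \<Rightarrow> ('a \<times> 'b) plot set" where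
  "prod_diff D1 D2 = {(n,U,p). open_in_Rn n U \<and> p = restrict p U \<and>
      plot_of n U (fst \<circ> p) \<in> D1 \<and> plot_of n U (snd \<circ> p) \<in> D2}"

definition subset_diff :: "'a plot set \<Rightarrow> 'a set \<Rightarrow> 'a plot set" where
  "subset_diff D A = {(n,U,p). (n,U,p) \<in> D \<and> p ` U \<subseteq> A}"

definition quot_diff :: "'a plot set \<Rightarrow> ('a \<Rightarrow> 'b) \<Rightarrow> 'b plot set" where
  "quot_diff D q = {(n,U,p). open_in_Rn n U \<and> p = restrict p U \<and>
      (\<forall>u\<in>U. \<exists>V r. open_in_Rn n V \<and> u \<in> V \<and> V \<subseteq> U \<and> (n, V, r) \<in> D \<and>
          (\<forall>v\<in>V. p v = q (r v)))}"

text \<open>functional diffeology on a set S of maps X -> Y (maps taken extensional on X)\<close>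
definition func_diff :: "'a plot set \<Rightarrow> 'b plot set \<Rightarrow> ('a \<Rightarrow> 'b) set \<Rightarrow> ('a \<Rightarrow> 'b) plot set" where
  "func_diff DX DY S = {(n,U,q). open_in_Rn n U \<and> q = restrict q U \<and> q ` U \<subseteq> S \<and>
      (\<forall>(m,W,p)\<in>DX. plot_of (n + m) (joinset n U W) (\<lambda>z. q (fpart n z) (p (spart n z))) \<in> DY)}"

record ('a, 'v) vpb =
  pb_tot :: "'v set"
  pb_diff :: "'v plot set"
  pb_proj :: "'v \<Rightarrow> 'a"
  pb_add :: "'v \<Rightarrow> 'v \<Rightarrow> 'v"
  pb_smul :: "real \<Rightarrow> 'v \<Rightarrow> 'v"
  pb_zero :: "'a \<Rightarrow> 'v"

definition fib :: "('a, 'v) vpb \<Rightarrow> 'a \<Rightarrow> 'v set" where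
  "fib B x = {v \<in> pb_tot B. pb_proj B v = x}"

definition vector_space_on :: "'v set \<Rightarrow> ('v \<Rightarrow> 'v \<Rightarrow> 'v) \<Rightarrow> (real \<Rightarrow> 'v \<Rightarrow> 'v) \<Rightarrow> 'v \<Rightarrow> bool" where
  "vector_space_on F add smul z \<longleftrightarrow> z \<in> F \<and>
     (\<forall>v\<in>F. \<forall>w\<in>F. add v w \<in> F) \<and> (\<forall>c. \<forall>v\<in>F. smul c v \<in> F) \<and>
     (\<forall>u\<in>F. \<forall>v\<in>F. \<forall>w\<in>F. add (add u v) w = add u (add v w)) \<and>
     (\<forall>v\<in>F. \<forall>w\<in>F. add v w = add w v) \<and>
     (\<forall>v\<in>F. add z v = v) \<and>
     (\<forall>v\<in>F. \<exists>w\<in>F. add v w = z) \<and>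
     (\<forall>c. \<forall>v\<in>F. \<forall>w\<in>F. smul c (add v w) = add (smul c v) (smul c w)) \<and>
     (\<forall>a b. \<forall>v\<in>F. smul (a + b) v = add (smul a v) (smul b v)) \<and>
     (\<forall>a b. \<forall>v\<in>F. smul a (smul b v) = smul (a * b) v) \<and>
     (\<forall>v\<in>F. smul 1 v = v)"

definition fibprod :: "('a, 'v) vpb \<Rightarrow> ('a, 'w) vpb \<Rightarrow> ('v \<times> 'w) set" where
  "fibprod B C = {(v, w). v \<in> pb_tot B \<and> w \<in> pb_tot C \<and> pb_proj B v = pb_proj C w}"

definition fibprod_diff :: "('a, 'v) vpb \<Rightarrow> ('a, 'w) vpb \<Rightarrow> ('v \<times> 'w) plot set" where
  "fibprod_diff B C = subset_diff (prod_diff (pb_diff B) (pb_diff C)) (fibprod B C)"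

definition is_vpb :: "'a set \<Rightarrow> 'a plot set \<Rightarrow> ('a, 'v) vpb \<Rightarrow> bool" where
  "is_vpb X DX B \<longleftrightarrow> diffeology X DX \<and> diffeology (pb_tot B) (pb_diff B) \<and>
     smooth_betw (pb_tot B) (pb_diff B) X DX (pb_proj B) \<and> pb_proj B ` pb_tot B = X \<and>
     (\<forall>x\<in>X. vector_space_on (fib B x) (pb_add B) (pb_smul B) (pb_zero B x)) \<and>
     smooth_betw (fibprod B B) (fibprod_diff B B) (pb_tot B) (pb_diff B) (\<lambda>(v, w). pb_add B v w) \<and>
     smooth_betw (UNIV \<times> pb_tot B) (prod_diff real_diff (pb_diff B)) (pb_tot B) (pb_diff B)
        (\<lambda>(c, v). pb_smul B c v) \<and>
     smooth_betw X DX (pb_tot B) (pb_diff B) (pb_zero B)"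

definition lincomb :: "('a, 'v) vpb \<Rightarrow> 'a \<Rightarrow> real list \<Rightarrow> 'v list \<Rightarrow> 'v" where
  "lincomb B x cs vs = foldr (\<lambda>(c, w) acc. pb_add B (pb_smul B c w) acc) (zip cs vs) (pb_zero B x)"

definition fin_dim_vpb :: "'a set \<Rightarrow> ('a, 'v) vpb \<Rightarrow> bool" where
  "fin_dim_vpb X B \<longleftrightarrow> (\<forall>x\<in>X. \<exists>vs. set vs \<subseteq> fib B x \<and>
      (\<forall>v\<in>fib B x. \<exists>cs. length cs = length vs \<and> v = lincomb B x cs vs))"

definition dsum :: "('a, 'v) vpb \<Rightarrow> ('a, 'w) vpb \<Rightarrow> ('a, 'v \<times> 'w) vpb" where
  "dsum B C = \<lparr> pb_tot = fibprod B C, pb_diff = fibprod_diff B C,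
     pb_proj = (\<lambda>(v, w). pb_proj B v),
     pb_add = (\<lambda>(v, w) (v', w'). (pb_add B v v', pb_add C w w')),
     pb_smul = (\<lambda>c (v, w). (pb_smul B c v, pb_smul C c w)),
     pb_zero = (\<lambda>x. (pb_zero B x, pb_zero C x)) \<rparr>"

definition Incl1 :: "('a, 'v) vpb \<Rightarrow> ('a, 'w) vpb \<Rightarrow> 'v \<Rightarrow> 'v \<times> 'w" where
  "Incl1 B C v = (v, pb_zero C (pb_proj B v))"

definition Incl2 :: "('a, 'v) vpb \<Rightarrow> ('a, 'w) vpb \<Rightarrow> 'w \<Rightarrow> 'v \<times> 'w" where
  "Incl2 B C w = (pb_zero B (pb_proj C w), w)"

text \<open>A 1-form assigns to each plot (n,U,p) the coefficient vector (first n entries)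
  of an ordinary 1-form on U.\<close>
type_synonym 'a form1 = "'a plot \<Rightarrow> rv \<Rightarrow> rv"

definition Omega1 :: "'a plot set \<Rightarrow> 'a form1 set" where
  "Omega1 DX = {\<omega>. \<omega> \<in> extensional DX \<and>
     (\<forall>(n,U,p)\<in>DX. \<omega> (n,U,p) \<in> extensional U \<and> (\<forall>u\<in>U. \<omega> (n,U,p) u \<in> Rn n) \<and>
        (\<forall>i<n. smooth_fn n U (\<lambda>u. \<omega> (n,U,p) u i))) \<and>
     (\<forall>(n,U,p)\<in>DX. \<forall>m W F. open_in_Rn m W \<and> smooth_map m W n F \<and> F ` W \<subseteq> U \<longrightarrow>
        (\<forall>w\<in>W. \<forall>j<m. \<omega> (plot_of m W (p \<circ> F)) w j =
            (\<Sum>i<n. \<omega> (n,U,p) (F w) i * pd j (\<lambda>v. F v i) w)))}"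

definition form_lin :: "'a plot set \<Rightarrow> real \<Rightarrow> 'a form1 \<Rightarrow> real \<Rightarrow> 'a form1 \<Rightarrow> 'a form1" where
  "form_lin DX a \<omega> b \<eta> = restrict (\<lambda>P. restrict (\<lambda>u i. a * \<omega> P u i + b * \<eta> P u i) (fst (snd P))) DX"

definition zero_form :: "'a plot set \<Rightarrow> 'a form1" where
  "zero_form DX = restrict (\<lambda>P. restrict (\<lambda>u i. 0) (fst (snd P))) DX"

definition Omega1_diff :: "'a plot set \<Rightarrow> 'a form1 plot set" where
  "Omega1_diff DX = {(m,W,q). open_in_Rn m W \<and> q = restrict q W \<and> q ` W \<subseteq> Omega1 DX \<and>
     (\<forall>(n,U,p)\<in>DX. \<forall>i<n. smooth_fn (m + n) (joinset m W U)
        (\<lambda>z. q (fpart m z) (n,U,p) (spart m z) i))}"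

definition vanishes_at :: "'a plot set \<Rightarrow> 'a \<Rightarrow> 'a form1 \<Rightarrow> bool" where
  "vanishes_at DX x \<omega> \<longleftrightarrow> (\<forall>(n,U,p)\<in>DX. (\<lambda>_. 0) \<in> U \<and> p (\<lambda>_. 0) = x \<longrightarrow>
      \<omega> (n,U,p) (\<lambda>_. 0) = (\<lambda>_. 0))"

type_synonym 'a lam = "'a \<times> 'a form1 set"

definition lcls :: "'a plot set \<Rightarrow> 'a \<Rightarrow> 'a form1 \<Rightarrow> 'a lam" where
  "lcls DX x \<omega> = (x, {\<eta> \<in> Omega1 DX. vanishes_at DX x (form_lin DX 1 \<eta> (-1) \<omega>)})"

definition Lam1 :: "'a set \<Rightarrow> 'a plot set \<Rightarrow> ('a, 'a lam) vpb" where
  "Lam1 X DX = \<lparr> pb_tot = (\<lambda>(x, \<omega>). lcls DX x \<omega>) ` (X \<times> Omega1 DX),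
     pb_diff = quot_diff (prod_diff (subset_diff DX X) (Omega1_diff DX)) (\<lambda>(x, \<omega>). lcls DX x \<omega>),
     pb_proj = fst,
     pb_add = (\<lambda>(x, c) (y, d). lcls DX x (form_lin DX 1 (SOME \<omega>. \<omega> \<in> c) 1 (SOME \<eta>. \<eta> \<in> d))),
     pb_smul = (\<lambda>a (x, c). lcls DX x (form_lin DX a (SOME \<omega>. \<omega> \<in> c) 0 (SOME \<omega>. \<omega> \<in> c))),
     pb_zero = (\<lambda>x. lcls DX x (zero_form DX)) \<rparr>"

definition dform :: "'a plot set \<Rightarrow> ('a \<Rightarrow> real) \<Rightarrow> 'a form1" where
  "dform DX h = restrict (\<lambda>(n,U,p). restrict (\<lambda>u i. if i < n then pd i (h \<circ> p) u else 0) U) DX"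

type_synonym ('a, 'l, 'v) tens = "'a \<times> (('l \<times> 'v) \<Rightarrow> real) set"

definition fsf :: "('a, 'l) vpb \<Rightarrow> ('a, 'v) vpb \<Rightarrow> 'a \<Rightarrow> (('l \<times> 'v) \<Rightarrow> real) set" where
  "fsf L B x = {f. finite {z. f z \<noteq> 0} \<and> (\<forall>z. f z \<noteq> 0 \<longrightarrow> fst z \<in> fib L x \<and> snd z \<in> fib B x)}"

definition delta :: "'z \<Rightarrow> 'z \<Rightarrow> real" where
  "delta z = (\<lambda>w. if w = z then 1 else 0)"

definition tgens :: "('a, 'l) vpb \<Rightarrow> ('a, 'v) vpb \<Rightarrow> 'a \<Rightarrow> (('l \<times> 'v) \<Rightarrow> real) set" where
  "tgens L B x = {f. \<exists>a\<in>fib L x. \<exists>a'\<in>fib L x. \<exists>b\<in>fib B x. \<exists>b'\<in>fib B x. \<exists>c.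
      f = (\<lambda>w. delta (pb_add L a a', b) w - delta (a, b) w - delta (a', b) w) \<or>
      f = (\<lambda>w. delta (a, pb_add B b b') w - delta (a, b) w - delta (a, b') w) \<or>
      f = (\<lambda>w. delta (pb_smul L c a, b) w - c * delta (a, b) w) \<or>
      f = (\<lambda>w. delta (a, pb_smul B c b) w - c * delta (a, b) w)}"

definition rel_sub :: "('a, 'l) vpb \<Rightarrow> ('a, 'v) vpb \<Rightarrow> 'a \<Rightarrow> (('l \<times> 'v) \<Rightarrow> real) set" where
  "rel_sub L B x = \<Inter> {S. (\<lambda>_. 0) \<in> S \<and> tgens L B x \<subseteq> S \<and>
      (\<forall>f\<in>S. \<forall>g\<in>S. (\<lambda>w. f w + g w) \<in> S) \<and> (\<forall>f\<in>S. \<forall>c. (\<lambda>w. c * f w) \<in> S)}"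

definition tcls :: "('a, 'l) vpb \<Rightarrow> ('a, 'v) vpb \<Rightarrow> 'a \<Rightarrow> (('l \<times> 'v) \<Rightarrow> real) \<Rightarrow> ('a, 'l, 'v) tens" where
  "tcls L B x f = (x, {g \<in> fsf L B x. (\<lambda>w. g w - f w) \<in> rel_sub L B x})"

definition tens :: "('a, 'l) vpb \<Rightarrow> ('a, 'v) vpb \<Rightarrow> 'l \<Rightarrow> 'v \<Rightarrow> ('a, 'l, 'v) tens" where
  "tens L B a b = tcls L B (pb_proj L a) (delta (a, b))"

definition tensor_pre :: "'a set \<Rightarrow> ('a, 'l) vpb \<Rightarrow> ('a, 'v) vpb \<Rightarrow> ('a, ('a, 'l, 'v) tens) vpb" where
  "tensor_pre X L B = \<lparr> pb_tot = {tcls L B x f | x f. x \<in> X \<and> f \<in> fsf L B x},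
     pb_diff = {},
     pb_proj = fst,
     pb_add = (\<lambda>(x, T) (y, T'). tcls L B x (\<lambda>w. (SOME f. f \<in> T) w + (SOME g. g \<in> T') w)),
     pb_smul = (\<lambda>c (x, T). tcls L B x (\<lambda>w. c * (SOME f. f \<in> T) w)),
     pb_zero = (\<lambda>x. tcls L B x (\<lambda>_. 0)) \<rparr>"

definition tensor_bundle :: "'a set \<Rightarrow> 'a plot set \<Rightarrow> ('a, 'l) vpb \<Rightarrow> ('a, 'v) vpb \<Rightarrow> ('a, ('a, 'l, 'v) tens) vpb" where
  "tensor_bundle X DX L B = (tensor_pre X L B) \<lparr> pb_diff :=
     \<Inter> {D. is_vpb X DX ((tensor_pre X L B) \<lparr> pb_diff := D \<rparr>) \<and>
           (\<forall>(n,U,p)\<in>fibprod_diff L B. plot_of n U (\<lambda>u. tens L B (fst (p u)) (snd (p u))) \<in> D)} \<rparr>"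

text \<open>Id \<otimes> g on Lambda \<otimes> B -> Lambda \<otimes> B', induced by a fibrewise linear g : B -> B'\<close>
definition tmap_id :: "('a, 'l) vpb \<Rightarrow> ('a, 'w) vpb \<Rightarrow> ('v \<Rightarrow> 'w) \<Rightarrow> ('a, 'l, 'v) tens \<Rightarrow> ('a, 'l, 'w) tens" where
  "tmap_id L B' g = (\<lambda>(x, T). tcls L B' x (\<lambda>(l, w').
      (\<Sum>z\<in>{z. (SOME f. f \<in> T) z \<noteq> 0 \<and> fst z = l \<and> g (snd z) = w'}. (SOME f. f \<in> T) z)))"

definition sections :: "'a set \<Rightarrow> 'a plot set \<Rightarrow> ('a, 'v) vpb \<Rightarrow> ('a \<Rightarrow> 'v) set" where
  "sections X DX B = {s. s \<in> extensional X \<and> smooth_betw X DX (pb_tot B) (pb_diff B) s \<and>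
      (\<forall>x\<in>X. pb_proj B (s x) = x)}"

definition sec_diff :: "'a set \<Rightarrow> 'a plot set \<Rightarrow> ('a, 'v) vpb \<Rightarrow> ('a \<Rightarrow> 'v) plot set" where
  "sec_diff X DX B = func_diff DX (pb_diff B) (sections X DX B)"

definition sec_add :: "'a set \<Rightarrow> ('a, 'v) vpb \<Rightarrow> ('a \<Rightarrow> 'v) \<Rightarrow> ('a \<Rightarrow> 'v) \<Rightarrow> ('a \<Rightarrow> 'v)" where
  "sec_add X B s t = restrict (\<lambda>x. pb_add B (s x) (t x)) X"

definition sec_smul :: "'a set \<Rightarrow> ('a, 'v) vpb \<Rightarrow> real \<Rightarrow> ('a \<Rightarrow> 'v) \<Rightarrow> ('a \<Rightarrow> 'v)" where
  "sec_smul X B c s = restrict (\<lambda>x. pb_smul B c (s x)) X"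

definition is_connection :: "'a set \<Rightarrow> 'a plot set \<Rightarrow> ('a, 'v) vpb \<Rightarrow>
    (('a \<Rightarrow> 'v) \<Rightarrow> ('a \<Rightarrow> ('a, 'a lam, 'v) tens)) \<Rightarrow> bool" where
  "is_connection X DX B N \<longleftrightarrow>
     (let L = Lam1 X DX; T = tensor_bundle X DX L B in
       (\<forall>s\<in>sections X DX B. N s \<in> sections X DX T) \<and>
       (\<forall>s\<in>sections X DX B. \<forall>t\<in>sections X DX B. N (sec_add X B s t) = sec_add X T (N s) (N t)) \<and>
       (\<forall>c. \<forall>s\<in>sections X DX B. N (sec_smul X B c s) = sec_smul X T c (N s)) \<and>
       smooth_betw (sections X DX B) (sec_diff X DX B) (sections X DX T) (sec_diff X DX T) N \<and>
       (\<forall>h. \<forall>s\<in>sections X DX B. smooth_betw X DX UNIV real_diff h \<longrightarrow>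
          N (restrict (\<lambda>x. pb_smul B (h x) (s x)) X) =
          restrict (\<lambda>x. pb_add T (tens L B (lcls DX x (dform DX h)) (s x)) (pb_smul T (h x) (N s x))) X))"

definition conn_sum :: "'a set \<Rightarrow> 'a plot set \<Rightarrow> ('a, 'v) vpb \<Rightarrow> ('a, 'w) vpb \<Rightarrow>
    (('a \<Rightarrow> 'v) \<Rightarrow> ('a \<Rightarrow> ('a, 'a lam, 'v) tens)) \<Rightarrow>
    (('a \<Rightarrow> 'w) \<Rightarrow> ('a \<Rightarrow> ('a, 'a lam, 'w) tens)) \<Rightarrow>
    (('a \<Rightarrow> 'v \<times> 'w) \<Rightarrow> ('a \<Rightarrow> ('a, 'a lam, 'v \<times> 'w) tens))" where
  "conn_sum X DX B1 B2 N1 N2 s =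
     (let L = Lam1 X DX; T = tensor_bundle X DX L (dsum B1 B2) in
      restrict (\<lambda>x. pb_add T
         (tmap_id L (dsum B1 B2) (Incl1 B1 B2) (N1 (restrict (fst \<circ> s) X) x))
         (tmap_id L (dsum B1 B2) (Incl2 B1 B2) (N2 (restrict (snd \<circ> s) X) x))) X)"

end

theory Submission
  imports Defs
begin


lemma vs_facts:
  assumes "vector_space_on F add smul z"
  shows "z \<in> F" "\<And>v w. v \<in> F \<Longrightarrow> w \<in> F \<Longrightarrow> add v w \<in> F"
    "\<And>c v. v \<in> F \<Longrightarrow> smul c v \<in> F"
    "\<And>u v w. u \<in> F \<Longrightarrow> v \<in> F \<Longrightarrow> w \<in> F \<Longrightarrow> add (add u v) w = add u (add v w)"
    "\<And>v w. v \<in> F \<Longrightarrow> w \<in> F \<Longrightarrow> add v w = add w v"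
    "\<And>v. v \<in> F \<Longrightarrow> add z v = v"
    "\<And>v. v \<in> F \<Longrightarrow> \<exists>w\<in>F. add v w = z"
    "\<And>c v w. v \<in> F \<Longrightarrow> w \<in> F \<Longrightarrow> smul c (add v w) = add (smul c v) (smul c w)"
    "\<And>a b v. v \<in> F \<Longrightarrow> smul (a + b) v = add (smul a v) (smul b v)"
    "\<And>a b v. v \<in> F \<Longrightarrow> smul a (smul b v) = smul (a * b) v"
    "\<And>v. v \<in> F \<Longrightarrow> smul 1 v = v"
  using assms unfolding vector_space_on_def by auto

lemma vs_add_zero_right:
  assumes "vector_space_on F add smul z" "v \<in> F"
  shows "add v z = v"
  using vs_facts[OF assms(1)] assms(2) by metis

lemma vs_cancel:
  assumes "vector_space_on F add smul z" "u \<in> F" "v \<in> F" "w \<in> F" "add u v = add u w"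
  shows "v = w"
proof -
  note f = vs_facts[OF assms(1)]
  obtain u' where u': "u' \<in> F" "add u u' = z" using f(7) assms(2) by blast
  have "add u' (add u v) = add u' (add u w)" using assms(5) by simp
  then have "add (add u' u) v = add (add u' u) w" using f(4) u' assms by simp
  moreover have "add u' u = z" using u' f(5) assms(2) by simp
  ultimately show ?thesis using f(6) assms by simp
qed

lemma vs_smul_zero:
  assumes "vector_space_on F add smul z"
  shows "smul c z = z"
proof -
  note f = vs_facts[OF assms(1)]
  have "smul c z = smul c (add z z)" using f(1,6) by simp
  also have "\<dots> = add (smul c z) (smul c z)" using f(1,8) by simp
  finally have "add (smul c z) z = add (smul c z) (smul c z)"
    using vs_add_zero_right[OF assms f(3)[OF f(1)]] by simp
  then have "z = smul c z" using vs_cancel[OF assms f(3)[OF f(1)] f(1) f(3)[OF f(1)]] by blast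
  then show ?thesis by simp
qed

lemma vs_swap4:
  assumes "vector_space_on F add smul z" "a \<in> F" "b \<in> F" "c \<in> F" "d \<in> F"
  shows "add (add a b) (add c d) = add (add a c) (add b d)"
proof -
  note f = vs_facts[OF assms(1)]
  have "add (add a b) (add c d) = add a (add b (add c d))" using f assms by simp
  also have "add b (add c d) = add (add b c) d" using f assms by simp
  also have "add b c = add c b" using f assms by simp
  also have "add (add c b) d = add c (add b d)" using f assms by simp
  also have "add a (add c (add b d)) = add (add a c) (add b d)" using f assms by simp
  finally show ?thesis .
qed

section \<open>Tensor algebra\<close>

definition rclosed :: "('z \<Rightarrow> real) set \<Rightarrow> bool" where
  "rclosed S \<longleftrightarrow> (\<lambda>_. 0) \<in> S \<and> (\<forall>f\<in>S. \<forall>g\<in>S. (\<lambda>w. f w + g w) \<in> S) \<and> (\<forall>f\<in>S. \<forall>c. (\<lambda>w. c * f w) \<in> S)"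

lemma rel_sub_alt: "rel_sub L B x = \<Inter> {S. rclosed S \<and> tgens L B x \<subseteq> S}"
  unfolding rel_sub_def rclosed_def by (rule arg_cong[where f=Inter]) blast

lemma rel_sub_induct:
  assumes "f \<in> rel_sub L B x" "rclosed S" "tgens L B x \<subseteq> S"
  shows "f \<in> S"
  using assms unfolding rel_sub_alt by blast

lemma rel_sub_closed: "rclosed (rel_sub L B x)"
  unfolding rclosed_def rel_sub_def by blast

lemma rel_sub_gens: "tgens L B x \<subseteq> rel_sub L B x"
  unfolding rel_sub_def by blast

lemma rel_sub_zero: "(\<lambda>_. 0) \<in> rel_sub L B x"
  using rel_sub_closed[of L B x] unfolding rclosed_def by (elim conjE)

lemma rel_sub_add: "f \<in> rel_sub L B x \<Longrightarrow> g \<in> rel_sub L B x \<Longrightarrow> (\<lambda>w. f w + g w) \<in> rel_sub L B x"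
  using rel_sub_closed[of L B x] unfolding rclosed_def by (elim conjE) blast

lemma rel_sub_smul: "f \<in> rel_sub L B x \<Longrightarrow> (\<lambda>w. c * f w) \<in> rel_sub L B x"
  using rel_sub_closed[of L B x] unfolding rclosed_def by (elim conjE) blast

lemma rel_sub_neg: "f \<in> rel_sub L B x \<Longrightarrow> (\<lambda>w. - f w) \<in> rel_sub L B x"
  using rel_sub_smul[of f L B x "-1"] by simp

lemma rel_sub_diff: "f \<in> rel_sub L B x \<Longrightarrow> g \<in> rel_sub L B x \<Longrightarrow> (\<lambda>w. f w - g w) \<in> rel_sub L B x"
  using rel_sub_add[OF _ rel_sub_neg, of f L B x g] by simp

lemma rel_sub_cong: "f \<in> rel_sub L B x \<Longrightarrow> (\<And>w. f w = g w) \<Longrightarrow> g \<in> rel_sub L B x"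
proof -
  assume "f \<in> rel_sub L B x" "\<And>w. f w = g w"
  then show ?thesis by (metis ext)
qed

lemma fsf_zero: "(\<lambda>_. 0) \<in> fsf L B x"
  unfolding fsf_def by simp

lemma fsf_add: assumes "f \<in> fsf L B x" "g \<in> fsf L B x" shows "(\<lambda>w. f w + g w) \<in> fsf L B x"
proof -
  have "{z. f z + g z \<noteq> 0} \<subseteq> {z. f z \<noteq> 0} \<union> {z. g z \<noteq> 0}" by auto
  then show ?thesis using assms unfolding fsf_def by (auto intro: finite_subset)
qed

lemma fsf_smul: assumes "f \<in> fsf L B x" shows "(\<lambda>w. c * f w) \<in> fsf L B x"
proof -
  have "{z. c * f z \<noteq> 0} \<subseteq> {z. f z \<noteq> 0}" by auto
  then show ?thesis using assms unfolding fsf_def by (auto intro: finite_subset)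
qed

lemma fsf_diff: assumes "f \<in> fsf L B x" "g \<in> fsf L B x" shows "(\<lambda>w. f w - g w) \<in> fsf L B x"
  using fsf_add[OF assms(1) fsf_smul[OF assms(2), of "-1"]] by simp

lemma fsf_delta: "a \<in> fib L x \<Longrightarrow> b \<in> fib B x \<Longrightarrow> delta (a, b) \<in> fsf L B x"
  unfolding fsf_def delta_def by (auto simp: fsf_def)

lemma fsf_rclosed: "rclosed (fsf L B x)"
  unfolding rclosed_def by (intro conjI ballI allI fsf_zero fsf_add fsf_smul)

definition fs :: "('z \<Rightarrow> real) set" where "fs = {f. finite {z. f z \<noteq> 0}}"

lemma fs_rclosed: "rclosed fs"
proof -
  have a: "finite {z. f z + g z \<noteq> 0}" if "finite {z. f z \<noteq> 0}" "finite {z. g z \<noteq> (0::real)}" for f g :: "'z \<Rightarrow> real"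
    by (rule finite_subset[of _ "{z. f z \<noteq> 0} \<union> {z. g z \<noteq> 0}"]) (use that in auto)
  have b: "finite {z. c * f z \<noteq> 0}" if "finite {z. f z \<noteq> 0}" for f :: "'z \<Rightarrow> real" and c
    by (rule finite_subset[of _ "{z. f z \<noteq> 0}"]) (use that in auto)
  show ?thesis unfolding rclosed_def fs_def using a b by auto
qed

lemma fs_delta: "delta z \<in> fs"
  unfolding fs_def delta_def by simp

lemma fsf_fs: "f \<in> fsf L B x \<Longrightarrow> f \<in> fs"
  unfolding fsf_def fs_def by simp

lemma tcls_eqI: "(\<lambda>w. f w - g w) \<in> rel_sub L B x \<Longrightarrow> tcls L B x f = tcls L B x g"
proof -
  assume d: "(\<lambda>w. f w - g w) \<in> rel_sub L B x"
  have "(\<lambda>w. h w - f w) \<in> rel_sub L B x \<longleftrightarrow> (\<lambda>w. h w - g w) \<in> rel_sub L B x" for h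
  proof
    assume "(\<lambda>w. h w - f w) \<in> rel_sub L B x"
    from rel_sub_add[OF this d] show "(\<lambda>w. h w - g w) \<in> rel_sub L B x" by simp
  next
    assume "(\<lambda>w. h w - g w) \<in> rel_sub L B x"
    from rel_sub_diff[OF this d] show "(\<lambda>w. h w - f w) \<in> rel_sub L B x" by simp
  qed
  then show ?thesis unfolding tcls_def by auto
qed

lemma tcls_self: "f \<in> fsf L B x \<Longrightarrow> f \<in> snd (tcls L B x f)"
  unfolding tcls_def using rel_sub_zero by simp

lemma tcls_some:
  assumes "f \<in> fsf L B x"
  shows "(SOME g. g \<in> snd (tcls L B x f)) \<in> fsf L B x"
    "(\<lambda>w. (SOME g. g \<in> snd (tcls L B x f)) w - f w) \<in> rel_sub L B x"
proof -
  have "\<exists>g. g \<in> snd (tcls L B x f)" using tcls_self[OF assms] by blast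
  then have "(SOME g. g \<in> snd (tcls L B x f)) \<in> snd (tcls L B x f)" by (rule someI_ex)
  then show "(SOME g. g \<in> snd (tcls L B x f)) \<in> fsf L B x"
    "(\<lambda>w. (SOME g. g \<in> snd (tcls L B x f)) w - f w) \<in> rel_sub L B x"
    unfolding tcls_def by auto
qed

lemma tcls_some_eq:
  assumes "f \<in> fsf L B x"
  shows "tcls L B x (SOME g. g \<in> snd (tcls L B x f)) = tcls L B x f"
  by (rule tcls_eqI[OF tcls_some(2)[OF assms]])

lemma tcls_fst[simp]: "fst (tcls L B x f) = x"
  unfolding tcls_def by simp

lemma tcls_pair: "tcls L B x f = (x, snd (tcls L B x f))"
  unfolding tcls_def by simp

lemma tp_simps[simp]:
  "pb_tot (tensor_pre X L B) = {tcls L B x f | x f. x \<in> X \<and> f \<in> fsf L B x}"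
  "pb_proj (tensor_pre X L B) = fst"
  "pb_zero (tensor_pre X L B) = (\<lambda>x. tcls L B x (\<lambda>_. 0))"
  unfolding tensor_pre_def by simp_all

lemma tp_add:
  assumes "f \<in> fsf L B x" "g \<in> fsf L B x"
  shows "pb_add (tensor_pre X L B) (tcls L B x f) (tcls L B x g) = tcls L B x (\<lambda>w. f w + g w)"
proof -
  have "pb_add (tensor_pre X L B) (tcls L B x f) (tcls L B x g) =
     tcls L B x (\<lambda>w. (SOME h. h \<in> snd (tcls L B x f)) w + (SOME h. h \<in> snd (tcls L B x g)) w)"
    by (subst (1 2) tcls_pair) (simp add: tensor_pre_def)
  also have "\<dots> = tcls L B x (\<lambda>w. f w + g w)"
    apply (rule tcls_eqI)
    using rel_sub_add[OF tcls_some(2)[OF assms(1)] tcls_some(2)[OF assms(2)]]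
    by (simp add: algebra_simps)
  finally show ?thesis .
qed

lemma tp_smul:
  assumes "f \<in> fsf L B x"
  shows "pb_smul (tensor_pre X L B) c (tcls L B x f) = tcls L B x (\<lambda>w. c * f w)"
proof -
  have "pb_smul (tensor_pre X L B) c (tcls L B x f) =
     tcls L B x (\<lambda>w. c * (SOME h. h \<in> snd (tcls L B x f)) w)"
    by (subst tcls_pair) (simp add: tensor_pre_def)
  also have "\<dots> = tcls L B x (\<lambda>w. c * f w)"
    apply (rule tcls_eqI)
    using rel_sub_smul[OF tcls_some(2)[OF assms(1)], of c]
    by (simp add: algebra_simps)
  finally show ?thesis .
qed

lemma tp_fib:
  "x \<in> X \<Longrightarrow> fib (tensor_pre X L B) x = {tcls L B x f | f. f \<in> fsf L B x}"
  unfolding fib_def by auto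

lemma tp_neg: "f \<in> fsf L B x \<Longrightarrow>
   pb_add (tensor_pre X L B) (tcls L B x f) (tcls L B x (\<lambda>w. (-1) * f w)) = pb_zero (tensor_pre X L B) x"
proof -
  assume f: "f \<in> fsf L B x"
  have "pb_add (tensor_pre X L B) (tcls L B x f) (tcls L B x (\<lambda>w. (-1) * f w)) = tcls L B x (\<lambda>w. f w + (-1) * f w)"
    by (rule tp_add[OF f fsf_smul[OF f]])
  then show ?thesis by simp
qed

lemma tp_vs:
  assumes "x \<in> X"
  shows "vector_space_on (fib (tensor_pre X L B) x) (pb_add (tensor_pre X L B))
           (pb_smul (tensor_pre X L B)) (pb_zero (tensor_pre X L B) x)"
proof -
  let ?S = "{tcls L B x f | f. f \<in> fsf L B x}"
  let ?a = "pb_add (tensor_pre X L B)" and ?s = "pb_smul (tensor_pre X L B)"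
  have mem: "\<And>v. v \<in> ?S \<Longrightarrow> \<exists>f. v = tcls L B x f \<and> f \<in> fsf L B x" by blast
  have inS: "\<And>f. f \<in> fsf L B x \<Longrightarrow> tcls L B x f \<in> ?S" by blast
  have c1: "pb_zero (tensor_pre X L B) x \<in> ?S" using inS[OF fsf_zero] by simp
  have c2: "?a v w \<in> ?S" if "v \<in> ?S" "w \<in> ?S" for v w
  proof -
    note hyp = that
    obtain f where "v = tcls L B x f" "f \<in> fsf L B x" using hyp(1) by blast
    moreover obtain g where "w = tcls L B x g" "g \<in> fsf L B x" using hyp(2) by blast
    ultimately show ?thesis using inS[OF fsf_add] by (simp add: tp_add)
  qed
  have c3: "?s c v \<in> ?S" if "v \<in> ?S" for v c
  proof -
    note hyp = that
    obtain f where "v = tcls L B x f" "f \<in> fsf L B x" using hyp(1) by blast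
    then show ?thesis using inS[OF fsf_smul] by (simp add: tp_smul)
  qed
  have c4: "?a (?a u v) w = ?a u (?a v w)" if "u \<in> ?S" "v \<in> ?S" "w \<in> ?S" for u v w
  proof -
    note hyp = that
    obtain f where "u = tcls L B x f" "f \<in> fsf L B x" using hyp(1) by blast
    moreover obtain g where "v = tcls L B x g" "g \<in> fsf L B x" using hyp(2) by blast
    moreover obtain h where "w = tcls L B x h" "h \<in> fsf L B x" using hyp(3) by blast
    ultimately show ?thesis by (simp add: tp_add fsf_add add.assoc)
  qed
  have c5: "?a v w = ?a w v" if "v \<in> ?S" "w \<in> ?S" for v w
  proof -
    note hyp = that
    obtain f where "v = tcls L B x f" "f \<in> fsf L B x" using hyp(1) by blast
    moreover obtain g where "w = tcls L B x g" "g \<in> fsf L B x" using hyp(2) by blast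
    ultimately show ?thesis by (simp add: tp_add add.commute)
  qed
  have c6: "?a (pb_zero (tensor_pre X L B) x) v = v" if "v \<in> ?S" for v
  proof -
    note hyp = that
    obtain f where "v = tcls L B x f" "f \<in> fsf L B x" using hyp(1) by blast
    then show ?thesis using tp_add[OF fsf_zero, of f L B x X] by simp
  qed
  have c7: "\<exists>w\<in>?S. ?a v w = pb_zero (tensor_pre X L B) x" if "v \<in> ?S" for v
  proof -
    note hyp = that
    obtain f where "v = tcls L B x f" "f \<in> fsf L B x" using hyp(1) by blast
    then show ?thesis using tp_neg[of f L B x X] inS[OF fsf_smul, of f "-1"] by blast
  qed
  have c8: "?s c (?a v w) = ?a (?s c v) (?s c w)" if "v \<in> ?S" "w \<in> ?S" for v w c
  proof -
    note hyp = that
    obtain f where "v = tcls L B x f" "f \<in> fsf L B x" using hyp(1) by blast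
    moreover obtain g where "w = tcls L B x g" "g \<in> fsf L B x" using hyp(2) by blast
    ultimately show ?thesis by (simp add: tp_add tp_smul fsf_add fsf_smul distrib_left)
  qed
  have c9: "?s (a + b) v = ?a (?s a v) (?s b v)" if "v \<in> ?S" for v a b
  proof -
    note hyp = that
    obtain f where "v = tcls L B x f" "f \<in> fsf L B x" using hyp(1) by blast
    then show ?thesis by (simp add: tp_add tp_smul fsf_smul distrib_right)
  qed
  have c10: "?s a (?s b v) = ?s (a * b) v" if "v \<in> ?S" for v a b
  proof -
    note hyp = that
    obtain f where "v = tcls L B x f" "f \<in> fsf L B x" using hyp(1) by blast
    then show ?thesis by (simp add: tp_smul fsf_smul mult.assoc)
  qed
  have c11: "?s 1 v = v" if "v \<in> ?S" for v
  proof -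
    note hyp = that
    obtain f where "v = tcls L B x f" "f \<in> fsf L B x" using hyp(1) by blast
    then show ?thesis by (simp add: tp_smul)
  qed
  show ?thesis unfolding tp_fib[OF assms] vector_space_on_def
    by (intro conjI ballI allI c1 c2 c3 c4 c5 c6 c7 c8 c9 c10 c11; assumption)
qed


definition push :: "('v \<Rightarrow> 'w) \<Rightarrow> (('l \<times> 'v) \<Rightarrow> real) \<Rightarrow> (('l \<times> 'w) \<Rightarrow> real)" where
  "push g f = (\<lambda>(l, w'). \<Sum>z\<in>{z. f z \<noteq> 0 \<and> fst z = l \<and> g (snd z) = w'}. f z)"

lemma tmap_id_eq: "tmap_id L B' g (x, T) = tcls L B' x (push g (SOME f. f \<in> T))"
  unfolding tmap_id_def push_def by simp

lemma fs_add: "f \<in> fs \<Longrightarrow> h \<in> fs \<Longrightarrow> (\<lambda>w. f w + h w) \<in> fs"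
  using fs_rclosed unfolding rclosed_def by blast
lemma fs_smul: "f \<in> fs \<Longrightarrow> (\<lambda>w. c * f w) \<in> fs"
  using fs_rclosed unfolding rclosed_def by blast
lemma fs_diff: "f \<in> fs \<Longrightarrow> h \<in> fs \<Longrightarrow> (\<lambda>w. f w - h w) \<in> fs"
  using fs_add[OF _ fs_smul[of h "-1"], of f] by simp

lemma push_alt:
  assumes "finite S" "{z. f z \<noteq> 0} \<subseteq> S"
  shows "push g f (l, w') = sum f {z\<in>S. fst z = l \<and> g (snd z) = w'}"
  unfolding push_def using assms
  by (auto intro!: sum.mono_neutral_left)

lemma push_add:
  assumes "f \<in> fs" "h \<in> fs"
  shows "push g (\<lambda>w. f w + h w) = (\<lambda>z. push g f z + push g h z)"
proof (rule ext, clarify)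
  fix l w'
  let ?S = "{z. f z \<noteq> 0} \<union> {z. h z \<noteq> 0}"
  have fin: "finite ?S" using assms unfolding fs_def by simp
  have "push g (\<lambda>w. f w + h w) (l, w') = (\<Sum>z\<in>{z\<in>?S. fst z = l \<and> g (snd z) = w'}. f z + h z)"
    by (rule push_alt[OF fin]) auto
  also have "\<dots> = push g f (l, w') + push g h (l, w')"
    by (simp add: sum.distrib push_alt[OF fin])
  finally show "push g (\<lambda>w. f w + h w) (l, w') = push g f (l, w') + push g h (l, w')" .
qed

lemma push_smul:
  assumes "f \<in> fs"
  shows "push g (\<lambda>w. c * f w) = (\<lambda>z. c * push g f z)"
proof (rule ext, clarify)
  fix l w'
  let ?S = "{z. f z \<noteq> 0}"
  have fin: "finite ?S" using assms unfolding fs_def by simp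
  have "push g (\<lambda>w. c * f w) (l, w') = (\<Sum>z\<in>{z\<in>?S. fst z = l \<and> g (snd z) = w'}. c * f z)"
    by (rule push_alt[OF fin]) auto
  also have "\<dots> = c * push g f (l, w')"
    by (simp add: sum_distrib_left push_alt[OF fin])
  finally show "push g (\<lambda>w. c * f w) (l, w') = c * push g f (l, w')" .
qed

lemma push_diff:
  assumes "f \<in> fs" "h \<in> fs"
  shows "push g (\<lambda>w. f w - h w) = (\<lambda>z. push g f z - push g h z)"
proof -
  have "push g (\<lambda>w. f w - h w) = push g (\<lambda>w. f w + (\<lambda>w. (-1) * h w) w)" by simp
  also have "\<dots> = (\<lambda>z. push g f z + push g (\<lambda>w. (-1) * h w) z)"
    by (rule push_add[OF assms(1) fs_smul[OF assms(2)]])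
  also have "\<dots> = (\<lambda>z. push g f z - push g h z)"
    unfolding push_smul[OF assms(2)] by simp
  finally show ?thesis .
qed

lemma push_zero: "push g (\<lambda>_. 0) = (\<lambda>_. 0)"
  unfolding push_def by (rule ext) (simp add: split_beta)

lemma push_delta: "push g (delta (a, b)) = delta (a, g b)"
proof (rule ext, clarify)
  fix l w'
  have "push g (delta (a, b)) (l, w') = sum (delta (a, b)) {z\<in>{(a,b)}. fst z = l \<and> g (snd z) = w'}"
    by (rule push_alt) (auto simp: delta_def)
  also have "{z\<in>{(a,b)}. fst z = l \<and> g (snd z) = w'} = (if l = a \<and> w' = g b then {(a,b)} else {})"
    by auto
  also have "sum (delta (a, b)) (if l = a \<and> w' = g b then {(a,b)} else {}) = delta (a, g b) (l, w')"
    by (simp add: delta_def)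
  finally show "push g (delta (a, b)) (l, w') = delta (a, g b) (l, w')" .
qed

lemma push_fs: assumes "f \<in> fs" shows "push g f \<in> fs"
proof -
  have "{z. push g f z \<noteq> 0} \<subseteq> (\<lambda>z. (fst z, g (snd z))) ` {z. f z \<noteq> 0}"
  proof
    fix z assume "z \<in> {z. push g f z \<noteq> 0}"
    then obtain l w' where z: "z = (l, w')" "push g f (l, w') \<noteq> 0" by (cases z) auto
    then obtain y where "f y \<noteq> 0" "fst y = l" "g (snd y) = w'"
      unfolding push_def by (auto elim: sum.not_neutral_contains_not_neutral)
    then show "z \<in> (\<lambda>z. (fst z, g (snd z))) ` {z. f z \<noteq> 0}" using z by force
  qed
  then show ?thesis using assms unfolding fs_def by (auto intro: finite_subset)
qed

definition flin :: "('a, 'v) vpb \<Rightarrow> ('a, 'w) vpb \<Rightarrow> ('v \<Rightarrow> 'w) \<Rightarrow> 'a \<Rightarrow> bool" where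
  "flin B B' g x \<longleftrightarrow> (\<forall>b\<in>fib B x. g b \<in> fib B' x) \<and>
     (\<forall>b\<in>fib B x. \<forall>b'\<in>fib B x. g (pb_add B b b') = pb_add B' (g b) (g b')) \<and>
     (\<forall>c. \<forall>b\<in>fib B x. g (pb_smul B c b) = pb_smul B' c (g b))"

lemma push_fsf:
  assumes "flin B B' g x" "f \<in> fsf L B x"
  shows "push g f \<in> fsf L B' x"
proof -
  have "push g f \<in> fs" using push_fs[OF fsf_fs[OF assms(2)]] .
  moreover have "fst z \<in> fib L x \<and> snd z \<in> fib B' x" if nz: "push g f z \<noteq> 0" for z
  proof -
    obtain l w' where z: "z = (l, w')" by (cases z)
    then obtain y where "f y \<noteq> 0" "fst y = l" "g (snd y) = w'"
      using nz z unfolding push_def by (auto elim: sum.not_neutral_contains_not_neutral)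
    moreover have "fst y \<in> fib L x \<and> snd y \<in> fib B x"
      using assms(2) \<open>f y \<noteq> 0\<close> unfolding fsf_def by blast
    ultimately show ?thesis using assms(1) z unfolding flin_def by auto
  qed
  ultimately show ?thesis unfolding fsf_def fs_def by blast
qed

lemma tgens_1: "a \<in> fib L x \<Longrightarrow> a' \<in> fib L x \<Longrightarrow> b \<in> fib B x \<Longrightarrow>
  (\<lambda>w. delta (pb_add L a a', b) w - delta (a, b) w - delta (a', b) w) \<in> tgens L B x"
  unfolding tgens_def mem_Collect_eq
  by (rule bexI[of _ a], rule bexI[of _ a'], rule bexI[of _ b], rule bexI[of _ b], rule exI[of _ 0],
      rule disjI1, rule refl, assumption+)

lemma tgens_2: "a \<in> fib L x \<Longrightarrow> b \<in> fib B x \<Longrightarrow> b' \<in> fib B x \<Longrightarrow>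
  (\<lambda>w. delta (a, pb_add B b b') w - delta (a, b) w - delta (a, b') w) \<in> tgens L B x"
  unfolding tgens_def mem_Collect_eq
  by (rule bexI[of _ a], rule bexI[of _ a], rule bexI[of _ b], rule bexI[of _ b'], rule exI[of _ 0],
      rule disjI2, rule disjI1, rule refl, assumption+)

lemma tgens_3: "a \<in> fib L x \<Longrightarrow> b \<in> fib B x \<Longrightarrow>
  (\<lambda>w. delta (pb_smul L c a, b) w - c * delta (a, b) w) \<in> tgens L B x"
  unfolding tgens_def mem_Collect_eq
  by (rule bexI[of _ a], rule bexI[of _ a], rule bexI[of _ b], rule bexI[of _ b], rule exI[of _ c],
      rule disjI2, rule disjI2, rule disjI1, rule refl, assumption+)

lemma tgens_4: "a \<in> fib L x \<Longrightarrow> b \<in> fib B x \<Longrightarrow>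
  (\<lambda>w. delta (a, pb_smul B c b) w - c * delta (a, b) w) \<in> tgens L B x"
  unfolding tgens_def mem_Collect_eq
  by (rule bexI[of _ a], rule bexI[of _ a], rule bexI[of _ b], rule bexI[of _ b], rule exI[of _ c],
      rule disjI2, rule disjI2, rule disjI2, rule refl, assumption+)

lemma push_d3:
  "push g (\<lambda>w. delta p w - delta q w - delta r w) =
   (\<lambda>w. delta (fst p, g (snd p)) w - delta (fst q, g (snd q)) w - delta (fst r, g (snd r)) w)"
proof -
  have "push g (\<lambda>w. delta p w - delta q w - delta r w) =
     (\<lambda>z. push g (\<lambda>w. delta p w - delta q w) z - push g (delta r) z)"
    using push_diff[OF fs_diff[OF fs_delta fs_delta] fs_delta, of g p q r] by simp
  also have "\<dots> = (\<lambda>z. push g (delta p) z - push g (delta q) z - push g (delta r) z)"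
    using push_diff[OF fs_delta fs_delta, of g p q] by simp
  finally show ?thesis using push_delta[of g "fst p" "snd p"] push_delta[of g "fst q" "snd q"]
      push_delta[of g "fst r" "snd r"] by simp
qed

lemma push_d2:
  "push g (\<lambda>w. delta p w - c * delta q w) =
   (\<lambda>w. delta (fst p, g (snd p)) w - c * delta (fst q, g (snd q)) w)"
proof -
  have "push g (\<lambda>w. delta p w - c * delta q w) =
     (\<lambda>z. push g (delta p) z - push g (\<lambda>w. c * delta q w) z)"
    using push_diff[OF fs_delta fs_smul[OF fs_delta], of g p c q] by simp
  also have "\<dots> = (\<lambda>z. push g (delta p) z - c * push g (delta q) z)"
    using push_smul[OF fs_delta, of g c q] by simp
  finally show ?thesis using push_delta[of g "fst p" "snd p"] push_delta[of g "fst q" "snd q"]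
    by simp
qed

lemma push_rel:
  assumes lin: "flin B B' g x" and f: "f \<in> rel_sub L B x"
  shows "push g f \<in> rel_sub L B' x"
proof -
  let ?S = "{f. f \<in> fs \<and> push g f \<in> rel_sub L B' x}"
  have g1: "\<And>b. b \<in> fib B x \<Longrightarrow> g b \<in> fib B' x"
    and g2: "\<And>b b'. b \<in> fib B x \<Longrightarrow> b' \<in> fib B x \<Longrightarrow> g (pb_add B b b') = pb_add B' (g b) (g b')"
    and g3: "\<And>c b. b \<in> fib B x \<Longrightarrow> g (pb_smul B c b) = pb_smul B' c (g b)"
    using lin unfolding flin_def by blast+
  have "rclosed ?S"
    unfolding rclosed_def
  proof (intro conjI ballI allI)
    show "(\<lambda>_. 0) \<in> ?S" unfolding fs_def by (simp add: push_zero rel_sub_zero)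
  next
    fix f h assume "f \<in> ?S" "h \<in> ?S"
    then show "(\<lambda>w. f w + h w) \<in> ?S" by (simp add: push_add fs_add rel_sub_add)
  next
    fix f c assume "f \<in> ?S"
    then show "(\<lambda>w. c * f w) \<in> ?S" by (simp add: push_smul fs_smul rel_sub_smul)
  qed
  moreover have "tgens L B x \<subseteq> ?S"
  proof
    fix f assume "f \<in> tgens L B x"
    then obtain a a' b b' c where ab: "a\<in>fib L x" "a'\<in>fib L x" "b\<in>fib B x" "b'\<in>fib B x" and
      f: "f = (\<lambda>w. delta (pb_add L a a', b) w - delta (a, b) w - delta (a', b) w) \<or>
        f = (\<lambda>w. delta (a, pb_add B b b') w - delta (a, b) w - delta (a, b') w) \<or>
        f = (\<lambda>w. delta (pb_smul L c a, b) w - c * delta (a, b) w) \<or>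
        f = (\<lambda>w. delta (a, pb_smul B c b) w - c * delta (a, b) w)"
      unfolding tgens_def by blast
    have fs3: "(\<lambda>w. delta p w - delta q w - delta r w) \<in> fs" for p q r
      by (intro fs_diff fs_delta)
    have fs2: "(\<lambda>w. delta p w - c * delta q w) \<in> fs" for p q
      by (intro fs_diff fs_smul fs_delta)
    from f show "f \<in> ?S"
    proof (elim disjE)
      assume f: "f = (\<lambda>w. delta (pb_add L a a', b) w - delta (a, b) w - delta (a', b) w)"
      show ?thesis unfolding f mem_Collect_eq push_d3 fst_conv snd_conv
        by (intro conjI fs3 subsetD[OF rel_sub_gens tgens_1[OF ab(1,2) g1[OF ab(3)]]])
    next
      assume f: "f = (\<lambda>w. delta (a, pb_add B b b') w - delta (a, b) w - delta (a, b') w)"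
      show ?thesis unfolding f mem_Collect_eq push_d3 fst_conv snd_conv g2[OF ab(3,4)]
        by (intro conjI fs3 subsetD[OF rel_sub_gens tgens_2[OF ab(1) g1[OF ab(3)] g1[OF ab(4)]]])
    next
      assume f: "f = (\<lambda>w. delta (pb_smul L c a, b) w - c * delta (a, b) w)"
      show ?thesis unfolding f mem_Collect_eq push_d2 fst_conv snd_conv
        by (intro conjI fs2 subsetD[OF rel_sub_gens tgens_3[OF ab(1) g1[OF ab(3)]]])
    next
      assume f: "f = (\<lambda>w. delta (a, pb_smul B c b) w - c * delta (a, b) w)"
      show ?thesis unfolding f mem_Collect_eq push_d2 fst_conv snd_conv g3[OF ab(3)]
        by (intro conjI fs2 subsetD[OF rel_sub_gens tgens_4[OF ab(1) g1[OF ab(3)]]])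
    qed
  qed
  ultimately have "f \<in> ?S" by (rule rel_sub_induct[OF f])
  then show ?thesis by simp
qed

lemma tmap_tcls:
  assumes lin: "flin B B' g x" and f: "f \<in> fsf L B x"
  shows "tmap_id L B' g (tcls L B x f) = tcls L B' x (push g f)"
proof -
  let ?f' = "SOME h. h \<in> snd (tcls L B x f)"
  have "tmap_id L B' g (tcls L B x f) = tcls L B' x (push g ?f')"
    by (subst tcls_pair) (rule tmap_id_eq)
  also have "\<dots> = tcls L B' x (push g f)"
  proof (rule tcls_eqI)
    have r: "(\<lambda>w. ?f' w - f w) \<in> rel_sub L B x" by (rule tcls_some(2)[OF f])
    have "push g (\<lambda>w. ?f' w - f w) = (\<lambda>w. push g ?f' w - push g f w)"
      by (rule push_diff[OF fsf_fs[OF tcls_some(1)[OF f]] fsf_fs[OF f]])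
    then show "(\<lambda>w. push g ?f' w - push g f w) \<in> rel_sub L B' x"
      using push_rel[OF lin r] by simp
  qed
  finally show ?thesis .
qed


lemma tb_simps[simp]:
  "pb_tot (tensor_bundle X DX L B) = pb_tot (tensor_pre X L B)"
  "pb_proj (tensor_bundle X DX L B) = pb_proj (tensor_pre X L B)"
  "pb_add (tensor_bundle X DX L B) = pb_add (tensor_pre X L B)"
  "pb_smul (tensor_bundle X DX L B) = pb_smul (tensor_pre X L B)"
  "pb_zero (tensor_bundle X DX L B) = pb_zero (tensor_pre X L B)"
  unfolding tensor_bundle_def by simp_all

lemma tb_fib[simp]: "fib (tensor_bundle X DX L B) x = fib (tensor_pre X L B) x"
  unfolding fib_def by simp

lemma tp_fibE:
  assumes "x \<in> X" "v \<in> fib (tensor_pre X L B) x"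
  obtains f where "v = tcls L B x f" "f \<in> fsf L B x"
proof -
  have "\<exists>f. v = tcls L B x f \<and> f \<in> fsf L B x"
    using assms(2) unfolding tp_fib[OF assms(1)] mem_Collect_eq .
  then show ?thesis using that by (elim exE conjE)
qed

lemma tp_fibI: "x \<in> X \<Longrightarrow> f \<in> fsf L B x \<Longrightarrow> tcls L B x f \<in> fib (tensor_pre X L B) x"
  unfolding tp_fib mem_Collect_eq by (rule exI, rule conjI, rule refl)

lemma tmap_fib:
  assumes "x \<in> X" "flin B B' g x" "v \<in> fib (tensor_pre X L B) x"
  shows "tmap_id L B' g v \<in> fib (tensor_pre X L B') x"
proof -
  obtain f where f: "v = tcls L B x f" "f \<in> fsf L B x" using tp_fibE[OF assms(1,3)] .
  show ?thesis unfolding f(1) tmap_tcls[OF assms(2) f(2)]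
    by (rule tp_fibI[OF assms(1) push_fsf[OF assms(2) f(2)]])
qed

lemma tmap_add:
  assumes "x \<in> X" "flin B B' g x" "v \<in> fib (tensor_pre X L B) x" "w \<in> fib (tensor_pre X L B) x"
  shows "tmap_id L B' g (pb_add (tensor_pre X L B) v w) =
         pb_add (tensor_pre X L B') (tmap_id L B' g v) (tmap_id L B' g w)"
proof -
  obtain f where f: "v = tcls L B x f" "f \<in> fsf L B x" using tp_fibE[OF assms(1,3)] .
  obtain h where h: "w = tcls L B x h" "h \<in> fsf L B x" using tp_fibE[OF assms(1,4)] .
  show ?thesis unfolding f(1) h(1) tp_add[OF f(2) h(2)] tmap_tcls[OF assms(2) fsf_add[OF f(2) h(2)]]
      tmap_tcls[OF assms(2) f(2)] tmap_tcls[OF assms(2) h(2)]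
      tp_add[OF push_fsf[OF assms(2) f(2)] push_fsf[OF assms(2) h(2)]]
      push_add[OF fsf_fs[OF f(2)] fsf_fs[OF h(2)]] ..
qed

lemma tmap_smul:
  assumes "x \<in> X" "flin B B' g x" "v \<in> fib (tensor_pre X L B) x"
  shows "tmap_id L B' g (pb_smul (tensor_pre X L B) c v) =
         pb_smul (tensor_pre X L B') c (tmap_id L B' g v)"
proof -
  obtain f where f: "v = tcls L B x f" "f \<in> fsf L B x" using tp_fibE[OF assms(1,3)] .
  show ?thesis unfolding f(1) tp_smul[OF f(2)] tmap_tcls[OF assms(2) fsf_smul[OF f(2)]]
      tmap_tcls[OF assms(2) f(2)] tp_smul[OF push_fsf[OF assms(2) f(2)]]
      push_smul[OF fsf_fs[OF f(2)]] ..
qed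

lemma tmap_zero:
  assumes "flin B B' g x"
  shows "tmap_id L B' g (pb_zero (tensor_pre X L B) x) = pb_zero (tensor_pre X L B') x"
  using tmap_tcls[OF assms fsf_zero] by (simp add: push_zero)

lemma fib_proj: "a \<in> fib L x \<Longrightarrow> pb_proj L a = x"
  unfolding fib_def by simp

lemma tens_eq: "a \<in> fib L x \<Longrightarrow> tens L B a b = tcls L B x (delta (a, b))"
  unfolding tens_def by (simp add: fib_proj)

lemma tens_fib:
  assumes "x \<in> X" "a \<in> fib L x" "b \<in> fib B x"
  shows "tens L B a b \<in> fib (tensor_pre X L B) x"
  unfolding tens_eq[OF assms(2)] by (rule tp_fibI[OF assms(1) fsf_delta[OF assms(2,3)]])

lemma tmap_tens:
  assumes "flin B B' g x" "a \<in> fib L x" "b \<in> fib B x"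
  shows "tmap_id L B' g (tens L B a b) = tens L B' a (g b)"
  unfolding tens_eq[OF assms(2)] tmap_tcls[OF assms(1) fsf_delta[OF assms(2,3)]] push_delta ..

lemma tens_add:
  assumes "a \<in> fib L x" "b \<in> fib B x" "b' \<in> fib B x"
  shows "pb_add (tensor_pre X L B) (tens L B a b) (tens L B a b') = tens L B a (pb_add B b b')"
proof -
  have "pb_add (tensor_pre X L B) (tens L B a b) (tens L B a b') =
      tcls L B x (\<lambda>w. delta (a, b) w + delta (a, b') w)"
    unfolding tens_eq[OF assms(1)] by (rule tp_add[OF fsf_delta[OF assms(1,2)] fsf_delta[OF assms(1,3)]])
  also have "\<dots> = tcls L B x (delta (a, pb_add B b b'))"
  proof (rule tcls_eqI)
    have "(\<lambda>w. - (\<lambda>w. delta (a, pb_add B b b') w - delta (a, b) w - delta (a, b') w) w) \<in> rel_sub L B x"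
      by (rule rel_sub_neg[OF subsetD[OF rel_sub_gens tgens_2[OF assms]]])
    then show "(\<lambda>w. delta (a, b) w + delta (a, b') w - delta (a, pb_add B b b') w) \<in> rel_sub L B x"
      by (simp add: algebra_simps)
  qed
  also have "\<dots> = tens L B a (pb_add B b b')" by (rule tens_eq[OF assms(1), symmetric])
  finally show ?thesis .
qed

lemma plot_of_cong: "(\<And>u. u \<in> U \<Longrightarrow> f u = g u) \<Longrightarrow> plot_of n U f = plot_of n U g"
proof -
  assume h: "\<And>u. u \<in> U \<Longrightarrow> f u = g u"
  have "restrict f U = restrict g U" by (rule restrict_ext) (rule h)
  then show ?thesis unfolding plot_of_def by simp
qed

lemma plot_of_restrict[simp]: "plot_of n U (restrict p U) = plot_of n U p"
  by (rule plot_of_cong) simp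

lemma plot_of_comp_restrict[simp]: "plot_of n U (f \<circ> restrict p U) = plot_of n U (f \<circ> p)"
  by (rule plot_of_cong) simp

lemma plot_of_eq_iff: "plot_of n U p = (n, U, restrict p U)"
  unfolding plot_of_def ..

lemma diffeology_plotD:
  assumes "diffeology X D" "(n, U, p) \<in> D"
  shows "open_in_Rn n U" "p = restrict p U" "p ` U \<subseteq> X"
proof -
  have "\<forall>P\<in>D. case P of (n,U,p) \<Rightarrow> open_in_Rn n U \<and> p = restrict p U \<and> p ` U \<subseteq> X"
    using assms(1) unfolding diffeology_def by (elim conjE)
  from bspec[OF this assms(2)]
  show "open_in_Rn n U" "p = restrict p U" "p ` U \<subseteq> X" by simp_all
qed

lemma diffeology_plot_of:
  assumes "diffeology X D" "(n, U, p) \<in> D"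
  shows "plot_of n U p = (n, U, p)"
  using diffeology_plotD(2)[OF assms] unfolding plot_of_def by simp

lemma diffeology_const:
  assumes "diffeology X D" "open_in_Rn n U" "x \<in> X"
  shows "plot_of n U (\<lambda>_. x) \<in> D"
proof -
  have "\<forall>n U x. open_in_Rn n U \<and> x \<in> X \<longrightarrow> plot_of n U (\<lambda>_. x) \<in> D"
    using assms(1) unfolding diffeology_def by (elim conjE)
  then show ?thesis using assms(2,3) by blast
qed

lemma diffeology_local:
  assumes "diffeology X D" "open_in_Rn n U" "p ` U \<subseteq> X"
    "\<And>u. u \<in> U \<Longrightarrow> \<exists>V. open_in_Rn n V \<and> u \<in> V \<and> V \<subseteq> U \<and> plot_of n V p \<in> D"
  shows "plot_of n U p \<in> D"
proof -
  have "\<forall>n U p. open_in_Rn n U \<and> p ` U \<subseteq> X \<and>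
        (\<forall>u\<in>U. \<exists>V. open_in_Rn n V \<and> u \<in> V \<and> V \<subseteq> U \<and> plot_of n V p \<in> D)
        \<longrightarrow> plot_of n U p \<in> D"
    using assms(1) unfolding diffeology_def by (elim conjE)
  then have i: "open_in_Rn n U \<and> p ` U \<subseteq> X \<and>
        (\<forall>u\<in>U. \<exists>V. open_in_Rn n V \<and> u \<in> V \<and> V \<subseteq> U \<and> plot_of n V p \<in> D)
        \<longrightarrow> plot_of n U p \<in> D" by blast
  show ?thesis by (rule mp[OF i]) (intro conjI ballI assms(2,3) assms(4))
qed

lemma diffeology_comp:
  assumes "diffeology X D" "(n, U, p) \<in> D" "open_in_Rn m W" "smooth_map m W n F" "F ` W \<subseteq> U"
  shows "plot_of m W (p \<circ> F) \<in> D"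
proof -
  have "\<forall>P\<in>D. case P of (n,U,p) \<Rightarrow> \<forall>m W F. open_in_Rn m W \<and> smooth_map m W n F \<and> F ` W \<subseteq> U
        \<longrightarrow> plot_of m W (p \<circ> F) \<in> D"
    using assms(1) unfolding diffeology_def by (elim conjE)
  from bspec[OF this assms(2)]
  have "\<forall>m W F. open_in_Rn m W \<and> smooth_map m W n F \<and> F ` W \<subseteq> U
        \<longrightarrow> plot_of m W (p \<circ> F) \<in> D" by simp
  then have i: "open_in_Rn m W \<and> smooth_map m W n F \<and> F ` W \<subseteq> U
        \<longrightarrow> plot_of m W (p \<circ> F) \<in> D" by blast
  show ?thesis by (rule mp[OF i]) (intro conjI assms(3-5))
qed

lemma diffeology_Inter:
  assumes "\<F> \<noteq> {}" "\<And>D. D \<in> \<F> \<Longrightarrow> diffeology X D"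
  shows "diffeology X (\<Inter>\<F>)"
proof -
  obtain D0 where D0: "D0 \<in> \<F>" using assms(1) by blast
  show ?thesis unfolding diffeology_def
  proof (intro conjI allI impI ballI)
    fix P assume "P \<in> \<Inter>\<F>"
    then have "P \<in> D0" by (rule InterD[OF _ D0])
    moreover obtain n U p where nUp: "P = (n, U, p)" by (cases P) auto
    ultimately show "case P of (n, U, p) \<Rightarrow> open_in_Rn n U \<and> p = restrict p U \<and> p ` U \<subseteq> X"
      using diffeology_plotD[OF assms(2)[OF D0]] by simp
  next
    fix n U x assume h: "open_in_Rn n U \<and> x \<in> X"
    show "plot_of n U (\<lambda>_. x) \<in> \<Inter>\<F>"
    proof (rule InterI)
      fix D assume D: "D \<in> \<F>"
      show "plot_of n U (\<lambda>_. x) \<in> D" using diffeology_const[OF assms(2)[OF D]] h by simp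
    qed
  next
    fix n U p assume h: "open_in_Rn n U \<and> p ` U \<subseteq> X \<and>
        (\<forall>u\<in>U. \<exists>V. open_in_Rn n V \<and> u \<in> V \<and> V \<subseteq> U \<and> plot_of n V p \<in> \<Inter>\<F>)"
    show "plot_of n U p \<in> \<Inter>\<F>"
    proof
      fix D assume D: "D \<in> \<F>"
      show "plot_of n U p \<in> D"
      proof (rule diffeology_local[OF assms(2)[OF D]])
        show "open_in_Rn n U" "p ` U \<subseteq> X" using h by simp_all
        fix u assume "u \<in> U"
        then obtain V where "open_in_Rn n V \<and> u \<in> V \<and> V \<subseteq> U \<and> plot_of n V p \<in> \<Inter>\<F>"
          using h by blast
        then show "\<exists>V. open_in_Rn n V \<and> u \<in> V \<and> V \<subseteq> U \<and> plot_of n V p \<in> D"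
          using D by blast
      qed
    qed
  next
    fix P assume P: "P \<in> \<Inter>\<F>"
    obtain n U p where nUp: "P = (n, U, p)" by (cases P) auto
    show "case P of (n, U, p) \<Rightarrow> \<forall>m W F. open_in_Rn m W \<and> smooth_map m W n F \<and> F ` W \<subseteq> U
        \<longrightarrow> plot_of m W (p \<circ> F) \<in> \<Inter>\<F>"
      unfolding nUp
    proof (simp only: prod.case, intro allI impI)
      fix m W F assume h: "open_in_Rn m W \<and> smooth_map m W n F \<and> F ` W \<subseteq> U"
      show "plot_of m W (p \<circ> F) \<in> \<Inter>\<F>"
      proof
        fix D assume D: "D \<in> \<F>"
        have "(n, U, p) \<in> D" using InterD[OF P D] nUp by simp
        then show "plot_of m W (p \<circ> F) \<in> D" using diffeology_comp[OF assms(2)[OF D]] h by simp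
      qed
    qed
  qed
qed

lemma smooth_betwD:
  assumes "smooth_betw X DX Y DY f" "(n, U, p) \<in> DX"
  shows "plot_of n U (f \<circ> p) \<in> DY"
  using assms unfolding smooth_betw_def by blast

lemma smooth_betw_mem: "smooth_betw X DX Y DY f \<Longrightarrow> x \<in> X \<Longrightarrow> f x \<in> Y"
  unfolding smooth_betw_def by blast

lemma prod_diffI:
  assumes "open_in_Rn n U" "plot_of n U q1 \<in> D1" "plot_of n U q2 \<in> D2"
  shows "plot_of n U (\<lambda>u. (q1 u, q2 u)) \<in> prod_diff D1 D2"
proof -
  let ?P = "restrict (\<lambda>u. (q1 u, q2 u)) U"
  have e1: "plot_of n U (fst \<circ> ?P) = plot_of n U q1" by (rule plot_of_cong) simp
  have e2: "plot_of n U (snd \<circ> ?P) = plot_of n U q2" by (rule plot_of_cong) simp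
  show ?thesis unfolding plot_of_eq_iff[of n U "\<lambda>u. (q1 u, q2 u)"] prod_diff_def mem_Collect_eq prod.case
    using assms e1 e2 by simp
qed

lemma prod_diffD:
  assumes "(n, U, p) \<in> prod_diff D1 D2"
  shows "open_in_Rn n U" "p = restrict p U" "plot_of n U (fst \<circ> p) \<in> D1" "plot_of n U (snd \<circ> p) \<in> D2"
  using assms unfolding prod_diff_def by simp_all

lemma fibprod_diffI:
  assumes "open_in_Rn n U" "plot_of n U q1 \<in> pb_diff B" "plot_of n U q2 \<in> pb_diff C"
    "\<And>u. u \<in> U \<Longrightarrow> (q1 u, q2 u) \<in> fibprod B C"
  shows "plot_of n U (\<lambda>u. (q1 u, q2 u)) \<in> fibprod_diff B C"
proof -
  have "plot_of n U (\<lambda>u. (q1 u, q2 u)) \<in> prod_diff (pb_diff B) (pb_diff C)"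
    by (rule prod_diffI[OF assms(1-3)])
  moreover have "restrict (\<lambda>u. (q1 u, q2 u)) U ` U \<subseteq> fibprod B C" using assms(4) by auto
  ultimately show ?thesis unfolding fibprod_diff_def subset_diff_def plot_of_eq_iff mem_Collect_eq prod.case
    by simp
qed

lemma fibprod_diffD:
  assumes "(n, U, p) \<in> fibprod_diff B C"
  shows "open_in_Rn n U" "p = restrict p U" "plot_of n U (fst \<circ> p) \<in> pb_diff B"
    "plot_of n U (snd \<circ> p) \<in> pb_diff C" "p ` U \<subseteq> fibprod B C"
  using assms unfolding fibprod_diff_def subset_diff_def prod_diff_def by simp_all

lemma vpb_add_plot:
  assumes V: "is_vpb X DX B" and q1: "plot_of n U q1 \<in> pb_diff B" and q2: "plot_of n U q2 \<in> pb_diff B"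
    and h: "\<And>u. u \<in> U \<Longrightarrow> q1 u \<in> pb_tot B \<and> q2 u \<in> pb_tot B \<and> pb_proj B (q1 u) = pb_proj B (q2 u)"
  shows "plot_of n U (\<lambda>u. pb_add B (q1 u) (q2 u)) \<in> pb_diff B"
proof -
  have dB: "diffeology (pb_tot B) (pb_diff B)" using V unfolding is_vpb_def by (elim conjE)
  have op: "open_in_Rn n U" using diffeology_plotD(1)[OF dB q1[unfolded plot_of_eq_iff]] .
  have sm: "smooth_betw (fibprod B B) (fibprod_diff B B) (pb_tot B) (pb_diff B) (\<lambda>(v, w). pb_add B v w)"
    using V unfolding is_vpb_def by (elim conjE)
  have "plot_of n U (\<lambda>u. (q1 u, q2 u)) \<in> fibprod_diff B B"
    by (rule fibprod_diffI[OF op q1 q2]) (use h in \<open>auto simp: fibprod_def\<close>)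
  from smooth_betwD[OF sm this[unfolded plot_of_eq_iff]]
  have "plot_of n U ((\<lambda>(v, w). pb_add B v w) \<circ> restrict (\<lambda>u. (q1 u, q2 u)) U) \<in> pb_diff B" .
  moreover have "plot_of n U ((\<lambda>(v, w). pb_add B v w) \<circ> restrict (\<lambda>u. (q1 u, q2 u)) U) =
     plot_of n U (\<lambda>u. pb_add B (q1 u) (q2 u))"
    by (rule plot_of_cong) simp
  ultimately show ?thesis by simp
qed


declare tp_simps(1)[simp del]

definition gens_ok :: "('a, 'l) vpb \<Rightarrow> ('a, 'v) vpb \<Rightarrow> ('a, 'l, 'v) tens plot set \<Rightarrow> bool" where
  "gens_ok L B D \<longleftrightarrow> (\<forall>(n,U,p)\<in>fibprod_diff L B. plot_of n U (\<lambda>u. tens L B (fst (p u)) (snd (p u))) \<in> D)"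

definition tfam :: "'a set \<Rightarrow> 'a plot set \<Rightarrow> ('a, 'l) vpb \<Rightarrow> ('a, 'v) vpb \<Rightarrow> ('a, 'l, 'v) tens plot set set" where
  "tfam X DX L B = {D. is_vpb X DX ((tensor_pre X L B) \<lparr> pb_diff := D \<rparr>) \<and> gens_ok L B D}"

lemma tb_eq: "tensor_bundle X DX L B = (tensor_pre X L B) \<lparr> pb_diff := \<Inter>(tfam X DX L B) \<rparr>"
  unfolding tensor_bundle_def tfam_def gens_ok_def ..

lemma tp_tot_iff: "v \<in> pb_tot (tensor_pre X L B) \<longleftrightarrow> fst v \<in> X \<and> v \<in> fib (tensor_pre X L B) (fst v)"
proof
  assume v: "v \<in> pb_tot (tensor_pre X L B)"
  then obtain x f where "v = tcls L B x f" "x \<in> X" "f \<in> fsf L B x" unfolding tp_simps by blast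
  then show "fst v \<in> X \<and> v \<in> fib (tensor_pre X L B) (fst v)" using v unfolding fib_def by simp
next
  assume "fst v \<in> X \<and> v \<in> fib (tensor_pre X L B) (fst v)"
  then show "v \<in> pb_tot (tensor_pre X L B)" unfolding fib_def by blast
qed

lemma tp_tot_fst: "v \<in> pb_tot (tensor_pre X L B) \<Longrightarrow> fst v \<in> X"
  using tp_tot_iff by blast

lemma tp_add_fst: "fst (pb_add (tensor_pre X L B) v w) = fst v"
  by (cases v; cases w) (simp add: tensor_pre_def)

lemma tp_smul_fst: "fst (pb_smul (tensor_pre X L B) c v) = fst v"
  by (cases v) (simp add: tensor_pre_def)

lemma tp_totI: "x \<in> X \<Longrightarrow> f \<in> fsf L B x \<Longrightarrow> tcls L B x f \<in> pb_tot (tensor_pre X L B)"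
  unfolding tp_simps mem_Collect_eq by (intro exI conjI) (rule refl | assumption)+

lemma tp_proj_surj: "fst ` pb_tot (tensor_pre X L B) = X"
proof
  show "fst ` pb_tot (tensor_pre X L B) \<subseteq> X" using tp_tot_iff by blast
  show "X \<subseteq> fst ` pb_tot (tensor_pre X L B)"
  proof
    fix x assume x: "x \<in> X"
    have t: "tcls L B x (\<lambda>_. 0) \<in> pb_tot (tensor_pre X L B)" by (rule tp_totI[OF x fsf_zero])
    show "x \<in> fst ` pb_tot (tensor_pre X L B)"
    proof (rule image_eqI[where f=fst and x="tcls L B x (\<lambda>_. 0)"])
      show "x = fst (tcls L B x (\<lambda>_. 0))" by simp
      show "tcls L B x (\<lambda>_. 0) \<in> pb_tot (tensor_pre X L B)" by (rule t)
    qed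
  qed
qed

lemma tp_add_tot:
  assumes "v \<in> pb_tot (tensor_pre X L B)" "w \<in> pb_tot (tensor_pre X L B)" "fst v = fst w"
  shows "pb_add (tensor_pre X L B) v w \<in> pb_tot (tensor_pre X L B)"
proof -
  have x: "fst v \<in> X" and v: "v \<in> fib (tensor_pre X L B) (fst v)" and w: "w \<in> fib (tensor_pre X L B) (fst v)"
    using assms tp_tot_iff by metis+
  have "pb_add (tensor_pre X L B) v w \<in> fib (tensor_pre X L B) (fst v)"
    by (rule vs_facts(2)[OF tp_vs[OF x] v w])
  then show ?thesis unfolding fib_def by simp
qed

lemma tp_smul_tot:
  assumes "v \<in> pb_tot (tensor_pre X L B)"
  shows "pb_smul (tensor_pre X L B) c v \<in> pb_tot (tensor_pre X L B)"
proof -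
  have x: "fst v \<in> X" and v: "v \<in> fib (tensor_pre X L B) (fst v)"
    using assms tp_tot_iff by metis+
  have "pb_smul (tensor_pre X L B) c v \<in> fib (tensor_pre X L B) (fst v)"
    by (rule vs_facts(3)[OF tp_vs[OF x] v])
  then show ?thesis unfolding fib_def by simp
qed

lemma tp_zero_tot: "x \<in> X \<Longrightarrow> pb_zero (tensor_pre X L B) x \<in> pb_tot (tensor_pre X L B)"
  unfolding tp_simps(3) by (rule tp_totI[OF _ fsf_zero])


lemma is_vpb_tpI:
  fixes X :: "'a set" and L :: "('a, 'l) vpb" and B :: "('a, 'v) vpb" and D
  defines "T \<equiv> (tensor_pre X L B) \<lparr> pb_diff := D \<rparr>"
  assumes dX: "diffeology X DX" and dT: "diffeology (pb_tot (tensor_pre X L B)) D"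
    and pr: "\<And>n U p. (n, U, p) \<in> D \<Longrightarrow> plot_of n U (fst \<circ> p) \<in> DX"
    and ad: "\<And>n U p. (n, U, p) \<in> fibprod_diff T T \<Longrightarrow> plot_of n U ((\<lambda>(v, w). pb_add T v w) \<circ> p) \<in> D"
    and sm: "\<And>n U p. (n, U, p) \<in> prod_diff real_diff D \<Longrightarrow> plot_of n U ((\<lambda>(c, v). pb_smul T c v) \<circ> p) \<in> D"
    and ze: "\<And>n U p. (n, U, p) \<in> DX \<Longrightarrow> plot_of n U (pb_zero T \<circ> p) \<in> D"
  shows "is_vpb X DX T"
  unfolding is_vpb_def
proof (intro conjI)
  show "diffeology X DX" by (rule dX)
  show "diffeology (pb_tot T) (pb_diff T)" using dT unfolding T_def by simp
  show "smooth_betw (pb_tot T) (pb_diff T) X DX (pb_proj T)"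
    unfolding smooth_betw_def T_def
  proof (intro conjI ballI)
    fix v assume "v \<in> pb_tot (tensor_pre X L B\<lparr>pb_diff := D\<rparr>)"
    then show "pb_proj (tensor_pre X L B\<lparr>pb_diff := D\<rparr>) v \<in> X" using tp_tot_iff[of v X L B] by simp
  next
    fix P assume "P \<in> pb_diff (tensor_pre X L B\<lparr>pb_diff := D\<rparr>)"
    then show "case P of (n, U, p) \<Rightarrow> plot_of n U (pb_proj (tensor_pre X L B\<lparr>pb_diff := D\<rparr>) \<circ> p) \<in> DX"
      using pr by (cases P) auto
  qed
  show "pb_proj T ` pb_tot T = X" unfolding T_def using tp_proj_surj by simp
  show "\<forall>x\<in>X. vector_space_on (fib T x) (pb_add T) (pb_smul T) (pb_zero T x)"
  proof (intro ballI)
    fix x assume "x \<in> X"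
    from tp_vs[OF this, of L B] show "vector_space_on (fib T x) (pb_add T) (pb_smul T) (pb_zero T x)"
      unfolding T_def fib_def by simp
  qed
  show "smooth_betw (fibprod T T) (fibprod_diff T T) (pb_tot T) (pb_diff T) (\<lambda>(v, w). pb_add T v w)"
    unfolding smooth_betw_def
  proof (intro conjI ballI)
    fix z assume "z \<in> fibprod T T"
    then show "(case z of (v, w) \<Rightarrow> pb_add T v w) \<in> pb_tot T"
      unfolding T_def fibprod_def by (auto intro!: tp_add_tot)
  next
    fix P assume "P \<in> fibprod_diff T T"
    then show "case P of (n, U, p) \<Rightarrow> plot_of n U ((\<lambda>(v, w). pb_add T v w) \<circ> p) \<in> pb_diff T"
      using ad unfolding T_def by auto
  qed
  show "smooth_betw (UNIV \<times> pb_tot T) (prod_diff real_diff (pb_diff T)) (pb_tot T) (pb_diff T) (\<lambda>(c, v). pb_smul T c v)"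
    unfolding smooth_betw_def
  proof (intro conjI ballI)
    fix z :: "real \<times> ('a \<times> ('l \<times> 'v \<Rightarrow> real) set)" assume "z \<in> UNIV \<times> pb_tot T"
    then show "(case z of (c, v) \<Rightarrow> pb_smul T c v) \<in> pb_tot T"
      unfolding T_def by (auto intro!: tp_smul_tot)
  next
    fix P assume "P \<in> prod_diff real_diff (pb_diff T)"
    then show "case P of (n, U, p) \<Rightarrow> plot_of n U ((\<lambda>(c, v). pb_smul T c v) \<circ> p) \<in> pb_diff T"
      using sm unfolding T_def by auto
  qed
  show "smooth_betw X DX (pb_tot T) (pb_diff T) (pb_zero T)"
    unfolding smooth_betw_def
  proof (intro conjI ballI)
    fix x assume "x \<in> X"
    then show "pb_zero T x \<in> pb_tot T" unfolding T_def using tp_zero_tot by simp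
  next
    fix P assume "P \<in> DX"
    then show "case P of (n, U, p) \<Rightarrow> plot_of n U (pb_zero T \<circ> p) \<in> pb_diff T"
      using ze unfolding T_def by auto
  qed
qed


definition D0 :: "'a set \<Rightarrow> 'a plot set \<Rightarrow> ('a, 'l) vpb \<Rightarrow> ('a, 'v) vpb \<Rightarrow> ('a, 'l, 'v) tens plot set" where
  "D0 X DX L B = {(n,U,p). open_in_Rn n U \<and> p = restrict p U \<and> p ` U \<subseteq> pb_tot (tensor_pre X L B) \<and>
      plot_of n U (fst \<circ> p) \<in> DX}"

lemma D0_plot_iff: "plot_of n U p \<in> D0 X DX L B \<longleftrightarrow>
   open_in_Rn n U \<and> p ` U \<subseteq> pb_tot (tensor_pre X L B) \<and> plot_of n U (fst \<circ> p) \<in> DX"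
  unfolding D0_def plot_of_eq_iff[of n U p] mem_Collect_eq prod.case
  by (auto simp: plot_of_eq_iff[symmetric])

lemma D0_memD: "(n, U, p) \<in> D0 X DX L B \<Longrightarrow> plot_of n U p = (n, U, p)"
  unfolding D0_def plot_of_def by auto

lemma D0_diffeology:
  assumes dX: "diffeology X DX"
  shows "diffeology (pb_tot (tensor_pre X L B)) (D0 X DX L B)"
  unfolding diffeology_def
proof (intro conjI allI impI ballI)
  fix P assume "P \<in> D0 X DX L B"
  then show "case P of (n, U, p) \<Rightarrow> open_in_Rn n U \<and> p = restrict p U \<and> p ` U \<subseteq> pb_tot (tensor_pre X L B)"
    unfolding D0_def by auto
next
  fix n U v assume h: "open_in_Rn n U \<and> v \<in> pb_tot (tensor_pre X L B)"
  have "fst v \<in> X" using h tp_tot_fst by blast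
  then have "plot_of n U (\<lambda>_. fst v) \<in> DX" using diffeology_const[OF dX] h by blast
  moreover have "plot_of n U (fst \<circ> (\<lambda>_. v)) = plot_of n U (\<lambda>_. fst v)" by (simp add: comp_def)
  ultimately show "plot_of n U (\<lambda>_. v) \<in> D0 X DX L B" unfolding D0_plot_iff using h by auto
next
  fix n U p assume h: "open_in_Rn n U \<and> p ` U \<subseteq> pb_tot (tensor_pre X L B) \<and>
        (\<forall>u\<in>U. \<exists>V. open_in_Rn n V \<and> u \<in> V \<and> V \<subseteq> U \<and> plot_of n V p \<in> D0 X DX L B)"
  have "plot_of n U (fst \<circ> p) \<in> DX"
  proof (rule diffeology_local[OF dX])
    show "open_in_Rn n U" using h by simp
    show "(fst \<circ> p) ` U \<subseteq> X"
    proof (rule image_subsetI)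
      fix u assume "u \<in> U"
      then have "p u \<in> pb_tot (tensor_pre X L B)" using h by blast
      then show "(fst \<circ> p) u \<in> X" by (simp add: tp_tot_fst)
    qed
    fix u assume "u \<in> U"
    then obtain V where V: "open_in_Rn n V" "u \<in> V" "V \<subseteq> U" "plot_of n V p \<in> D0 X DX L B" using h by blast
    then show "\<exists>V. open_in_Rn n V \<and> u \<in> V \<and> V \<subseteq> U \<and> plot_of n V (fst \<circ> p) \<in> DX"
      unfolding D0_plot_iff by blast
  qed
  then show "plot_of n U p \<in> D0 X DX L B" unfolding D0_plot_iff using h by blast
next
  fix P assume P: "P \<in> D0 X DX L B"
  obtain n U p where nUp: "P = (n, U, p)" by (cases P) auto
  have Pp: "(n, U, p) \<in> D0 X DX L B" using P nUp by simp
  have ip: "p ` U \<subseteq> pb_tot (tensor_pre X L B)" and fp: "plot_of n U (fst \<circ> p) \<in> DX"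
    using Pp unfolding D0_def by auto
  show "case P of (n, U, p) \<Rightarrow> \<forall>m W F. open_in_Rn m W \<and> smooth_map m W n F \<and> F ` W \<subseteq> U
        \<longrightarrow> plot_of m W (p \<circ> F) \<in> D0 X DX L B"
    unfolding nUp prod.case
  proof (intro allI impI)
    fix m W F assume h: "open_in_Rn m W \<and> smooth_map m W n F \<and> F ` W \<subseteq> U"
    have "plot_of m W (restrict (fst \<circ> p) U \<circ> F) \<in> DX"
      using diffeology_comp[OF dX fp[unfolded plot_of_eq_iff]] h by blast
    moreover have "plot_of m W (restrict (fst \<circ> p) U \<circ> F) = plot_of m W (fst \<circ> (p \<circ> F))"
      by (rule plot_of_cong) (use h in auto)
    ultimately show "plot_of m W (p \<circ> F) \<in> D0 X DX L B"
      unfolding D0_plot_iff using h ip by auto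
  qed
qed

lemma D0_vpb:
  assumes dX: "diffeology X DX"
  shows "is_vpb X DX ((tensor_pre X L B) \<lparr> pb_diff := D0 X DX L B \<rparr>)"
proof (rule is_vpb_tpI[OF dX D0_diffeology[OF dX]])
  fix n U p assume "(n, U, p) \<in> D0 X DX L B"
  then show "plot_of n U (fst \<circ> p) \<in> DX" unfolding D0_def by auto
next
  fix n U p
  assume P: "(n, U, p) \<in> fibprod_diff (tensor_pre X L B\<lparr>pb_diff := D0 X DX L B\<rparr>) (tensor_pre X L B\<lparr>pb_diff := D0 X DX L B\<rparr>)"
  note PD = fibprod_diffD[OF P]
  have "plot_of n U (fst \<circ> (fst \<circ> p)) \<in> DX"
    using PD(3) by (simp add: D0_plot_iff)
  moreover have "plot_of n U (fst \<circ> ((\<lambda>(v, w). pb_add (tensor_pre X L B) v w) \<circ> p)) = plot_of n U (fst \<circ> (fst \<circ> p))"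
    by (rule plot_of_cong) (simp add: split_beta tp_add_fst)
  moreover have "((\<lambda>(v, w). pb_add (tensor_pre X L B) v w) \<circ> p) ` U \<subseteq> pb_tot (tensor_pre X L B)"
  proof (rule image_subsetI)
    fix u assume "u \<in> U"
    then have "p u \<in> fibprod (tensor_pre X L B\<lparr>pb_diff := D0 X DX L B\<rparr>) (tensor_pre X L B\<lparr>pb_diff := D0 X DX L B\<rparr>)"
      using PD(5) by blast
    then have "fst (p u) \<in> pb_tot (tensor_pre X L B)" "snd (p u) \<in> pb_tot (tensor_pre X L B)"
      "fst (fst (p u)) = fst (snd (p u))" unfolding fibprod_def by auto
    from tp_add_tot[OF this] show "((\<lambda>(v, w). pb_add (tensor_pre X L B) v w) \<circ> p) u \<in> pb_tot (tensor_pre X L B)"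
      by (simp add: split_beta)
  qed
  ultimately show "plot_of n U ((\<lambda>(v, w). pb_add (tensor_pre X L B\<lparr>pb_diff := D0 X DX L B\<rparr>) v w) \<circ> p) \<in> D0 X DX L B"
    unfolding D0_plot_iff using PD(1) by simp
next
  fix n U p
  assume P: "(n, U, p) \<in> prod_diff real_diff (D0 X DX L B)"
  note PD = prod_diffD[OF P]
  have s: "\<And>u. u \<in> U \<Longrightarrow> snd (p u) \<in> pb_tot (tensor_pre X L B)"
    using PD(4) unfolding D0_plot_iff by (auto simp: pb_diff_def)
  have im: "p ` U \<subseteq> UNIV \<times> pb_tot (tensor_pre X L B)"
  proof (rule image_subsetI)
    fix u assume "u \<in> U"
    from s[OF this] show "p u \<in> UNIV \<times> pb_tot (tensor_pre X L B)" by (cases "p u") auto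
  qed
  have "plot_of n U (fst \<circ> (snd \<circ> p)) \<in> DX"
    using PD(4) by (simp add: D0_plot_iff)
  moreover have "plot_of n U (fst \<circ> ((\<lambda>(c, v). pb_smul (tensor_pre X L B) c v) \<circ> p)) = plot_of n U (fst \<circ> (snd \<circ> p))"
    by (rule plot_of_cong) (simp add: split_beta tp_smul_fst)
  moreover have "((\<lambda>(c, v). pb_smul (tensor_pre X L B) c v) \<circ> p) ` U \<subseteq> pb_tot (tensor_pre X L B)"
    using im by (auto intro!: tp_smul_tot)
  ultimately show "plot_of n U ((\<lambda>(c, v). pb_smul (tensor_pre X L B\<lparr>pb_diff := D0 X DX L B\<rparr>) c v) \<circ> p) \<in> D0 X DX L B"
    unfolding D0_plot_iff using PD(1) by simp
next
  fix n U p assume P: "(n, U, p) \<in> DX"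
  note PD = diffeology_plotD[OF dX P]
  have "plot_of n U (fst \<circ> (pb_zero (tensor_pre X L B) \<circ> p)) = plot_of n U p"
    by (rule plot_of_cong) simp
  moreover have "plot_of n U p \<in> DX" using diffeology_plot_of[OF dX P] P by simp
  moreover have "(pb_zero (tensor_pre X L B) \<circ> p) ` U \<subseteq> pb_tot (tensor_pre X L B)"
  proof (rule image_subsetI)
    fix u assume "u \<in> U"
    then have "p u \<in> X" using PD(3) by blast
    from tp_zero_tot[OF this, of L B] show "(pb_zero (tensor_pre X L B) \<circ> p) u \<in> pb_tot (tensor_pre X L B)"
      by simp
  qed
  ultimately show "plot_of n U (pb_zero (tensor_pre X L B\<lparr>pb_diff := D0 X DX L B\<rparr>) \<circ> p) \<in> D0 X DX L B"
    unfolding D0_plot_iff using PD(1) by simp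
qed

lemma fibprod_memD: "(a, b) \<in> fibprod L B \<Longrightarrow> a \<in> pb_tot L \<and> b \<in> pb_tot B \<and> pb_proj L a = pb_proj B b"
  unfolding fibprod_def by simp

lemma fib_memI: "v \<in> pb_tot B \<Longrightarrow> v \<in> fib B (pb_proj B v)"
  unfolding fib_def by simp

lemma D0_gens:
  assumes Lp: "smooth_betw (pb_tot L) (pb_diff L) X DX (pb_proj L)"
  shows "gens_ok L B (D0 X DX L B)"
  unfolding gens_ok_def
proof (intro ballI, clarify)
  fix n U p assume P: "(n, U, p) \<in> fibprod_diff L B"
  note PD = fibprod_diffD[OF P]
  have im: "tens L B (fst (p u)) (snd (p u)) \<in> pb_tot (tensor_pre X L B)" if u: "u \<in> U" for u
  proof -
    obtain a b where ab: "p u = (a, b)" by (cases "p u")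
    have m: "a \<in> pb_tot L" "b \<in> pb_tot B" "pb_proj L a = pb_proj B b"
      using fibprod_memD PD(5) u ab by (metis image_subset_iff)+
    have x: "pb_proj L a \<in> X" using smooth_betw_mem[OF Lp m(1)] .
    have "tens L B a b \<in> fib (tensor_pre X L B) (pb_proj L a)"
      by (rule tens_fib[OF x fib_memI[OF m(1)]]) (use fib_memI[OF m(2)] m(3) in simp)
    then show ?thesis using ab unfolding fib_def by simp
  qed
  have "plot_of n U (pb_proj L \<circ> restrict (fst \<circ> p) U) \<in> DX"
    by (rule smooth_betwD[OF Lp PD(3)[unfolded plot_of_eq_iff]])
  moreover have "plot_of n U (pb_proj L \<circ> restrict (fst \<circ> p) U) =
      plot_of n U (fst \<circ> (\<lambda>u. tens L B (fst (p u)) (snd (p u))))"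
    by (rule plot_of_cong) (simp add: tens_def)
  ultimately show "plot_of n U (\<lambda>u. tens L B (fst (p u)) (snd (p u))) \<in> D0 X DX L B"
    unfolding D0_plot_iff using PD(1) im by auto
qed


lemma is_vpbD:
  assumes "is_vpb X DX T"
  shows "diffeology X DX" "diffeology (pb_tot T) (pb_diff T)"
    "smooth_betw (pb_tot T) (pb_diff T) X DX (pb_proj T)"
    "\<And>x. x \<in> X \<Longrightarrow> vector_space_on (fib T x) (pb_add T) (pb_smul T) (pb_zero T x)"
    "smooth_betw (fibprod T T) (fibprod_diff T T) (pb_tot T) (pb_diff T) (\<lambda>(v, w). pb_add T v w)"
    "smooth_betw (UNIV \<times> pb_tot T) (prod_diff real_diff (pb_diff T)) (pb_tot T) (pb_diff T) (\<lambda>(c, v). pb_smul T c v)"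
    "smooth_betw X DX (pb_tot T) (pb_diff T) (pb_zero T)"
  using assms unfolding is_vpb_def by blast+

lemma fibprod_diff_mono_tp:
  assumes "D1 \<subseteq> D2"
  shows "fibprod_diff ((tensor_pre X L B) \<lparr> pb_diff := D1 \<rparr>) ((tensor_pre X L B) \<lparr> pb_diff := D1 \<rparr>) \<subseteq>
         fibprod_diff ((tensor_pre X L B) \<lparr> pb_diff := D2 \<rparr>) ((tensor_pre X L B) \<lparr> pb_diff := D2 \<rparr>)"
  using assms unfolding fibprod_diff_def subset_diff_def prod_diff_def fibprod_def by auto

lemma prod_diff_mono2: "D1 \<subseteq> D2 \<Longrightarrow> prod_diff E D1 \<subseteq> prod_diff E D2"
  unfolding prod_diff_def by auto

lemma D0_tfam:
  assumes dX: "diffeology X DX" and Lp: "smooth_betw (pb_tot L) (pb_diff L) X DX (pb_proj L)"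
  shows "D0 X DX L B \<in> tfam X DX L B"
  unfolding tfam_def using D0_vpb[OF dX] D0_gens[OF Lp] by blast

lemma tb_vpb:
  assumes dX: "diffeology X DX" and Lp: "smooth_betw (pb_tot L) (pb_diff L) X DX (pb_proj L)"
  shows "is_vpb X DX (tensor_bundle X DX L B)"
proof -
  let ?F = "tfam X DX L B"
  let ?T = "\<lambda>D. (tensor_pre X L B) \<lparr> pb_diff := D \<rparr>"
  have F0: "D0 X DX L B \<in> ?F" by (rule D0_tfam[OF dX Lp])
  have FV: "is_vpb X DX (?T D)" if "D \<in> ?F" for D using that unfolding tfam_def by blast
  have "is_vpb X DX (?T (\<Inter>?F))"
  proof (rule is_vpb_tpI[OF dX])
    show "diffeology (pb_tot (tensor_pre X L B)) (\<Inter>?F)"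
      by (rule diffeology_Inter) (use F0 is_vpbD(2)[OF FV] in auto)
  next
    fix n U p assume "(n, U, p) \<in> \<Inter>?F"
    then have "(n, U, p) \<in> D0 X DX L B" using F0 by blast
    then show "plot_of n U (fst \<circ> p) \<in> DX" unfolding D0_def by auto
  next
    fix n U p assume P: "(n, U, p) \<in> fibprod_diff (?T (\<Inter>?F)) (?T (\<Inter>?F))"
    show "plot_of n U ((\<lambda>(v, w). pb_add (?T (\<Inter>?F)) v w) \<circ> p) \<in> \<Inter>?F"
    proof (rule InterI)
      fix D assume D: "D \<in> ?F"
      have "(n, U, p) \<in> fibprod_diff (?T D) (?T D)"
        using fibprod_diff_mono_tp[of "\<Inter>?F" D X L B] D P by blast
      from smooth_betwD[OF is_vpbD(5)[OF FV[OF D]] this]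
      show "plot_of n U ((\<lambda>(v, w). pb_add (?T (\<Inter>?F)) v w) \<circ> p) \<in> D" by simp
    qed
  next
    fix n U p assume P: "(n, U, p) \<in> prod_diff real_diff (\<Inter>?F)"
    show "plot_of n U ((\<lambda>(c, v). pb_smul (?T (\<Inter>?F)) c v) \<circ> p) \<in> \<Inter>?F"
    proof (rule InterI)
      fix D assume D: "D \<in> ?F"
      have "(n, U, p) \<in> prod_diff real_diff D"
        using prod_diff_mono2[of "\<Inter>?F" D real_diff] D P by blast
      moreover have "smooth_betw (UNIV \<times> pb_tot (tensor_pre X L B)) (prod_diff real_diff D)
          (pb_tot (tensor_pre X L B)) D (\<lambda>(c,v). pb_smul (tensor_pre X L B) c v)"
        using is_vpbD(6)[OF FV[OF D]] by simp
      ultimately have "plot_of n U ((\<lambda>(c,v). pb_smul (tensor_pre X L B) c v) \<circ> p) \<in> D"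
        using smooth_betwD by blast
      then
      show "plot_of n U ((\<lambda>(c, v). pb_smul (?T (\<Inter>?F)) c v) \<circ> p) \<in> D" by simp
    qed
  next
    fix n U p assume P: "(n, U, p) \<in> DX"
    show "plot_of n U (pb_zero (?T (\<Inter>?F)) \<circ> p) \<in> \<Inter>?F"
    proof (rule InterI)
      fix D assume D: "D \<in> ?F"
      from smooth_betwD[OF is_vpbD(7)[OF FV[OF D]] P]
      show "plot_of n U (pb_zero (?T (\<Inter>?F)) \<circ> p) \<in> D" by simp
    qed
  qed
  then show ?thesis unfolding tb_eq .
qed

lemma tb_gens:
  assumes dX: "diffeology X DX" and Lp: "smooth_betw (pb_tot L) (pb_diff L) X DX (pb_proj L)"
  shows "gens_ok L B (pb_diff (tensor_bundle X DX L B))"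
  unfolding gens_ok_def tb_eq
proof (intro ballI, clarify)
  fix n U p assume P: "(n, U, p) \<in> fibprod_diff L B"
  show "plot_of n U (\<lambda>u. tens L B (fst (p u)) (snd (p u))) \<in> pb_diff (tensor_pre X L B\<lparr>pb_diff := \<Inter> (tfam X DX L B)\<rparr>)"
    using P unfolding tfam_def gens_ok_def by auto
qed

lemma tb_sub: "D \<in> tfam X DX L B \<Longrightarrow> pb_diff (tensor_bundle X DX L B) \<subseteq> D"
  unfolding tb_eq by auto


lemma vpb_smul_plot:
  assumes V: "is_vpb X DX B" and c: "plot_of n U c \<in> real_diff" and q: "plot_of n U q \<in> pb_diff B"
    and h: "\<And>u. u \<in> U \<Longrightarrow> q u \<in> pb_tot B"
  shows "plot_of n U (\<lambda>u. pb_smul B (c u) (q u)) \<in> pb_diff B"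
proof -
  have dB: "diffeology (pb_tot B) (pb_diff B)" using is_vpbD(2)[OF V] .
  have op: "open_in_Rn n U" using diffeology_plotD(1)[OF dB q[unfolded plot_of_eq_iff]] .
  have "plot_of n U (\<lambda>u. (c u, q u)) \<in> prod_diff real_diff (pb_diff B)"
    by (rule prod_diffI[OF op c q])
  from smooth_betwD[OF is_vpbD(6)[OF V] this[unfolded plot_of_eq_iff]]
  have "plot_of n U ((\<lambda>(c, v). pb_smul B c v) \<circ> restrict (\<lambda>u. (c u, q u)) U) \<in> pb_diff B" .
  moreover have "plot_of n U ((\<lambda>(c, v). pb_smul B c v) \<circ> restrict (\<lambda>u. (c u, q u)) U) =
     plot_of n U (\<lambda>u. pb_smul B (c u) (q u))"
    by (rule plot_of_cong) simp
  ultimately show ?thesis by simp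
qed

lemma vpb_proj_plot:
  assumes V: "is_vpb X DX B" and q: "plot_of n U q \<in> pb_diff B"
  shows "plot_of n U (pb_proj B \<circ> q) \<in> DX"
  using smooth_betwD[OF is_vpbD(3)[OF V] q[unfolded plot_of_eq_iff]] by simp

lemma vpb_zero_plot:
  assumes V: "is_vpb X DX B" and P: "(n, U, p) \<in> DX"
  shows "plot_of n U (pb_zero B \<circ> p) \<in> pb_diff B"
  using smooth_betwD[OF is_vpbD(7)[OF V] P] .

locale tmsetup =
  fixes X :: "'a set" and DX :: "'a plot set" and L :: "('a, 'l) vpb"
    and B :: "('a, 'v) vpb" and B' :: "('a, 'w) vpb" and g :: "'v \<Rightarrow> 'w"
  assumes dX: "diffeology X DX"
    and Lp: "smooth_betw (pb_tot L) (pb_diff L) X DX (pb_proj L)"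
    and lin: "\<And>x. x \<in> X \<Longrightarrow> flin B B' g x"
    and gplot: "\<And>n U p. (n, U, p) \<in> fibprod_diff L B \<Longrightarrow>
        plot_of n U (\<lambda>u. (fst (p u), g (snd (p u)))) \<in> fibprod_diff L B'"
begin

abbreviation "T \<equiv> tensor_pre X L B"
abbreviation "T' \<equiv> tensor_pre X L B'"
abbreviation "TB' \<equiv> tensor_bundle X DX L B'"
abbreviation "tm \<equiv> tmap_id L B' g"

lemma VB': "is_vpb X DX TB'" by (rule tb_vpb[OF dX Lp])

lemma dD': "diffeology (pb_tot T') (pb_diff TB')" using is_vpbD(2)[OF VB'] by simp

lemma tm_tot: assumes "v \<in> pb_tot T" shows "tm v \<in> pb_tot T'" "fst (tm v) = fst v"
proof -
  have x: "fst v \<in> X" and v: "v \<in> fib T (fst v)" using assms tp_tot_iff by blast+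
  have "tm v \<in> fib T' (fst v)" by (rule tmap_fib[OF x lin[OF x] v])
  then show "tm v \<in> pb_tot T'" "fst (tm v) = fst v" unfolding fib_def by simp_all
qed

definition Dp :: "('a, 'l, 'v) tens plot set" where
  "Dp = {(n,U,p). open_in_Rn n U \<and> p = restrict p U \<and> p ` U \<subseteq> pb_tot T \<and>
      plot_of n U (tm \<circ> p) \<in> pb_diff TB'}"

lemma Dp_plot_iff: "plot_of n U p \<in> Dp \<longleftrightarrow>
   open_in_Rn n U \<and> p ` U \<subseteq> pb_tot T \<and> plot_of n U (tm \<circ> p) \<in> pb_diff TB'"
  unfolding Dp_def plot_of_eq_iff[of n U p] mem_Collect_eq prod.case
  by (auto simp: plot_of_eq_iff[symmetric])

lemma Dp_diffeology: "diffeology (pb_tot T) Dp"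
  unfolding diffeology_def
proof (intro conjI allI impI ballI)
  fix P assume "P \<in> Dp"
  then show "case P of (n, U, p) \<Rightarrow> open_in_Rn n U \<and> p = restrict p U \<and> p ` U \<subseteq> pb_tot T"
    unfolding Dp_def by auto
next
  fix n U v assume h: "open_in_Rn n U \<and> v \<in> pb_tot T"
  have "plot_of n U (\<lambda>_. tm v) \<in> pb_diff TB'" using diffeology_const[OF dD'] h tm_tot by blast
  moreover have "plot_of n U (tm \<circ> (\<lambda>_. v)) = plot_of n U (\<lambda>_. tm v)" by (simp add: comp_def)
  ultimately show "plot_of n U (\<lambda>_. v) \<in> Dp" unfolding Dp_plot_iff using h by auto
next
  fix n U p assume h: "open_in_Rn n U \<and> p ` U \<subseteq> pb_tot T \<and>
        (\<forall>u\<in>U. \<exists>V. open_in_Rn n V \<and> u \<in> V \<and> V \<subseteq> U \<and> plot_of n V p \<in> Dp)"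
  have "plot_of n U (tm \<circ> p) \<in> pb_diff TB'"
  proof (rule diffeology_local[OF dD'])
    show "open_in_Rn n U" using h by simp
    show "(tm \<circ> p) ` U \<subseteq> pb_tot T'"
    proof (rule image_subsetI)
      fix u assume "u \<in> U"
      then have "p u \<in> pb_tot T" using h by blast
      then show "(tm \<circ> p) u \<in> pb_tot T'" using tm_tot by simp
    qed
    fix u assume "u \<in> U"
    then obtain V where V: "open_in_Rn n V" "u \<in> V" "V \<subseteq> U" "plot_of n V p \<in> Dp" using h by blast
    then show "\<exists>V. open_in_Rn n V \<and> u \<in> V \<and> V \<subseteq> U \<and> plot_of n V (tm \<circ> p) \<in> pb_diff TB'"
      unfolding Dp_plot_iff by blast
  qed
  then show "plot_of n U p \<in> Dp" unfolding Dp_plot_iff using h by blast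
next
  fix P assume P: "P \<in> Dp"
  obtain n U p where nUp: "P = (n, U, p)" by (cases P) auto
  have Pp: "(n, U, p) \<in> Dp" using P nUp by simp
  have ip: "p ` U \<subseteq> pb_tot T" and fp: "plot_of n U (tm \<circ> p) \<in> pb_diff TB'"
    using Pp unfolding Dp_def by auto
  show "case P of (n, U, p) \<Rightarrow> \<forall>m W F. open_in_Rn m W \<and> smooth_map m W n F \<and> F ` W \<subseteq> U
        \<longrightarrow> plot_of m W (p \<circ> F) \<in> Dp"
    unfolding nUp prod.case
  proof (intro allI impI)
    fix m W F assume h: "open_in_Rn m W \<and> smooth_map m W n F \<and> F ` W \<subseteq> U"
    have "plot_of m W (restrict (tm \<circ> p) U \<circ> F) \<in> pb_diff TB'"
      using diffeology_comp[OF dD' fp[unfolded plot_of_eq_iff]] h by blast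
    moreover have "plot_of m W (restrict (tm \<circ> p) U \<circ> F) = plot_of m W (tm \<circ> (p \<circ> F))"
      by (rule plot_of_cong) (use h in auto)
    ultimately show "plot_of m W (p \<circ> F) \<in> Dp"
      unfolding Dp_plot_iff using h ip by auto
  qed
qed


lemma Dp_vpb: "is_vpb X DX (T \<lparr> pb_diff := Dp \<rparr>)"
proof (rule is_vpb_tpI[OF dX Dp_diffeology])
  fix n U p assume P: "(n, U, p) \<in> Dp"
  have ip: "p ` U \<subseteq> pb_tot T" and fp: "plot_of n U (tm \<circ> p) \<in> pb_diff TB'"
    using P unfolding Dp_def by auto
  have "plot_of n U (pb_proj TB' \<circ> (tm \<circ> p)) \<in> DX" by (rule vpb_proj_plot[OF VB' fp])
  moreover have "plot_of n U (pb_proj TB' \<circ> (tm \<circ> p)) = plot_of n U (fst \<circ> p)"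
  proof (rule plot_of_cong)
    fix u assume "u \<in> U"
    then have "p u \<in> pb_tot T" using ip by blast
    from tm_tot(2)[OF this] show "(pb_proj TB' \<circ> (tm \<circ> p)) u = (fst \<circ> p) u" by simp
  qed
  ultimately show "plot_of n U (fst \<circ> p) \<in> DX" by simp
next
  fix n U p
  assume P: "(n, U, p) \<in> fibprod_diff (T\<lparr>pb_diff := Dp\<rparr>) (T\<lparr>pb_diff := Dp\<rparr>)"
  note PD = fibprod_diffD[OF P]
  have pu: "fst (p u) \<in> pb_tot T \<and> snd (p u) \<in> pb_tot T \<and> fst (fst (p u)) = fst (snd (p u))" if "u \<in> U" for u
    using PD(5) that unfolding fibprod_def by auto
  have p1: "plot_of n U (tm \<circ> (fst \<circ> p)) \<in> pb_diff TB'" using PD(3) by (simp add: Dp_plot_iff)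
  have p2: "plot_of n U (tm \<circ> (snd \<circ> p)) \<in> pb_diff TB'" using PD(4) by (simp add: Dp_plot_iff)
  have "plot_of n U (\<lambda>u. pb_add TB' ((tm \<circ> (fst \<circ> p)) u) ((tm \<circ> (snd \<circ> p)) u)) \<in> pb_diff TB'"
    by (rule vpb_add_plot[OF VB' p1 p2]) (use pu tm_tot in auto)
  moreover have "plot_of n U (\<lambda>u. pb_add TB' ((tm \<circ> (fst \<circ> p)) u) ((tm \<circ> (snd \<circ> p)) u)) =
     plot_of n U (tm \<circ> ((\<lambda>(v, w). pb_add T v w) \<circ> p))"
  proof (rule plot_of_cong)
    fix u assume u: "u \<in> U"
    have x: "fst (fst (p u)) \<in> X" using pu[OF u] tp_tot_fst by blast
    have f1: "fst (p u) \<in> fib T (fst (fst (p u)))" and f2: "snd (p u) \<in> fib T (fst (fst (p u)))"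
      using pu[OF u] unfolding fib_def by auto
    show "pb_add TB' ((tm \<circ> (fst \<circ> p)) u) ((tm \<circ> (snd \<circ> p)) u) = (tm \<circ> ((\<lambda>(v, w). pb_add T v w) \<circ> p)) u"
      using tmap_add[OF x lin[OF x] f1 f2] by (simp add: split_beta)
  qed
  moreover have "((\<lambda>(v, w). pb_add T v w) \<circ> p) ` U \<subseteq> pb_tot T"
  proof (rule image_subsetI)
    fix u assume "u \<in> U"
    from tp_add_tot[of "fst (p u)" X L B "snd (p u)"] pu[OF this]
    show "((\<lambda>(v, w). pb_add T v w) \<circ> p) u \<in> pb_tot T" by (simp add: split_beta)
  qed
  ultimately show "plot_of n U ((\<lambda>(v, w). pb_add (T\<lparr>pb_diff := Dp\<rparr>) v w) \<circ> p) \<in> Dp"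
    unfolding Dp_plot_iff using PD(1) by simp
next
  fix n U p
  assume P: "(n, U, p) \<in> prod_diff real_diff Dp"
  note PD = prod_diffD[OF P]
  have s: "\<And>u. u \<in> U \<Longrightarrow> snd (p u) \<in> pb_tot T"
    using PD(4) unfolding Dp_plot_iff by auto
  have p2: "plot_of n U (tm \<circ> (snd \<circ> p)) \<in> pb_diff TB'" using PD(4) by (simp add: Dp_plot_iff)
  have "plot_of n U (\<lambda>u. pb_smul TB' ((fst \<circ> p) u) ((tm \<circ> (snd \<circ> p)) u)) \<in> pb_diff TB'"
    by (rule vpb_smul_plot[OF VB' PD(3) p2]) (use s tm_tot in auto)
  moreover have "plot_of n U (\<lambda>u. pb_smul TB' ((fst \<circ> p) u) ((tm \<circ> (snd \<circ> p)) u)) =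
     plot_of n U (tm \<circ> ((\<lambda>(c, v). pb_smul T c v) \<circ> p))"
  proof (rule plot_of_cong)
    fix u assume u: "u \<in> U"
    have x: "fst (snd (p u)) \<in> X" using s[OF u] tp_tot_fst by blast
    have f: "snd (p u) \<in> fib T (fst (snd (p u)))" using s[OF u] unfolding fib_def by auto
    show "pb_smul TB' ((fst \<circ> p) u) ((tm \<circ> (snd \<circ> p)) u) = (tm \<circ> ((\<lambda>(c, v). pb_smul T c v) \<circ> p)) u"
      using tmap_smul[OF x lin[OF x] f] by (simp add: split_beta)
  qed
  moreover have "((\<lambda>(c, v). pb_smul T c v) \<circ> p) ` U \<subseteq> pb_tot T"
  proof (rule image_subsetI)
    fix u assume "u \<in> U"
    from tp_smul_tot[OF s[OF this]]
    show "((\<lambda>(c, v). pb_smul T c v) \<circ> p) u \<in> pb_tot T" by (simp add: split_beta)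
  qed
  ultimately show "plot_of n U ((\<lambda>(c, v). pb_smul (T\<lparr>pb_diff := Dp\<rparr>) c v) \<circ> p) \<in> Dp"
    unfolding Dp_plot_iff using PD(1) by simp
next
  fix n U p assume P: "(n, U, p) \<in> DX"
  note PD = diffeology_plotD[OF dX P]
  have "plot_of n U (pb_zero TB' \<circ> p) \<in> pb_diff TB'" by (rule vpb_zero_plot[OF VB' P])
  moreover have "plot_of n U (pb_zero TB' \<circ> p) = plot_of n U (tm \<circ> (pb_zero T \<circ> p))"
  proof (rule plot_of_cong)
    fix u assume "u \<in> U"
    then have "p u \<in> X" using PD(3) by blast
    from tmap_zero[OF lin[OF this], where L=L and X=X]
    show "(pb_zero TB' \<circ> p) u = (tm \<circ> (pb_zero T \<circ> p)) u" by simp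
  qed
  moreover have "(pb_zero T \<circ> p) ` U \<subseteq> pb_tot T"
  proof (rule image_subsetI)
    fix u assume "u \<in> U"
    then have "p u \<in> X" using PD(3) by blast
    from tp_zero_tot[OF this, of L B] show "(pb_zero T \<circ> p) u \<in> pb_tot T" by simp
  qed
  ultimately show "plot_of n U (pb_zero (T\<lparr>pb_diff := Dp\<rparr>) \<circ> p) \<in> Dp"
    unfolding Dp_plot_iff using PD(1) by simp
qed

lemma Dp_gens: "gens_ok L B Dp"
  unfolding gens_ok_def
proof (intro ballI, clarify)
  fix n U p assume P: "(n, U, p) \<in> fibprod_diff L B"
  note PD = fibprod_diffD[OF P]
  have ab: "fst (p u) \<in> pb_tot L \<and> snd (p u) \<in> pb_tot B \<and> pb_proj L (fst (p u)) = pb_proj B (snd (p u))"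
    if u: "u \<in> U" for u
    using PD(5) u unfolding fibprod_def by auto
  have fibs: "pb_proj L (fst (p u)) \<in> X \<and> fst (p u) \<in> fib L (pb_proj L (fst (p u))) \<and>
     snd (p u) \<in> fib B (pb_proj L (fst (p u)))" if u: "u \<in> U" for u
  proof -
    have "pb_proj L (fst (p u)) \<in> X" using ab[OF u] smooth_betw_mem[OF Lp] by blast
    then show ?thesis using ab[OF u] unfolding fib_def by simp
  qed
  have im: "tens L B (fst (p u)) (snd (p u)) \<in> pb_tot T" if u: "u \<in> U" for u
  proof -
    have "tens L B (fst (p u)) (snd (p u)) \<in> fib T (pb_proj L (fst (p u)))"
      using fibs[OF u] by (intro tens_fib) simp_all
    then show ?thesis unfolding fib_def by simp
  qed
  have q: "plot_of n U (\<lambda>u. (fst (p u), g (snd (p u)))) \<in> fibprod_diff L B'" by (rule gplot[OF P])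
  have "plot_of n U (\<lambda>u. tens L B' (fst (restrict (\<lambda>u. (fst (p u), g (snd (p u)))) U u))
        (snd (restrict (\<lambda>u. (fst (p u), g (snd (p u)))) U u))) \<in> pb_diff TB'"
    using tb_gens[OF dX Lp, of B'] q[unfolded plot_of_eq_iff] unfolding gens_ok_def by blast
  moreover have "plot_of n U (\<lambda>u. tens L B' (fst (restrict (\<lambda>u. (fst (p u), g (snd (p u)))) U u))
        (snd (restrict (\<lambda>u. (fst (p u), g (snd (p u)))) U u))) =
      plot_of n U (tm \<circ> (\<lambda>u. tens L B (fst (p u)) (snd (p u))))"
  proof (rule plot_of_cong)
    fix u assume u: "u \<in> U"
    have x: "pb_proj L (fst (p u)) \<in> X" using fibs[OF u] by blast
    show "tens L B' (fst (restrict (\<lambda>u. (fst (p u), g (snd (p u)))) U u))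
        (snd (restrict (\<lambda>u. (fst (p u), g (snd (p u)))) U u)) =
      (tm \<circ> (\<lambda>u. tens L B (fst (p u)) (snd (p u)))) u"
      using tmap_tens[OF lin[OF x], of "fst (p u)" L "snd (p u)"] fibs[OF u] u by simp
  qed
  ultimately show "plot_of n U (\<lambda>u. tens L B (fst (p u)) (snd (p u))) \<in> Dp"
    unfolding Dp_plot_iff using PD(1) im by auto
qed

lemma tm_smooth:
  assumes "(n, U, p) \<in> pb_diff (tensor_bundle X DX L B)"
  shows "plot_of n U (tm \<circ> p) \<in> pb_diff TB'"
proof -
  have "Dp \<in> tfam X DX L B" unfolding tfam_def using Dp_vpb Dp_gens by blast
  then have "(n, U, p) \<in> Dp" using tb_sub assms by blast
  then show ?thesis unfolding Dp_def by auto
qed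

end


section \<open>Direct sum facts\<close>

lemma dsum_simps[simp]:
  "pb_tot (dsum B C) = fibprod B C"
  "pb_diff (dsum B C) = fibprod_diff B C"
  "pb_proj (dsum B C) (v, w) = pb_proj B v"
  "pb_add (dsum B C) (v, w) (v', w') = (pb_add B v v', pb_add C w w')"
  "pb_smul (dsum B C) c (v, w) = (pb_smul B c v, pb_smul C c w)"
  "pb_zero (dsum B C) x = (pb_zero B x, pb_zero C x)"
  unfolding dsum_def by simp_all

lemma fib_dsum: "(v, w) \<in> fib (dsum B C) x \<longleftrightarrow> v \<in> fib B x \<and> w \<in> fib C x"
  unfolding fib_def by (auto simp: fibprod_def)

lemma vpb_zero_fib:
  assumes "is_vpb X DX B" "x \<in> X"
  shows "pb_zero B x \<in> fib B x"
  using vs_facts(1)[OF is_vpbD(4)[OF assms]] .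

lemma flin_Incl1:
  assumes V1: "is_vpb X DX B1" and V2: "is_vpb X DX B2" and x: "x \<in> X"
  shows "flin B1 (dsum B1 B2) (Incl1 B1 B2) x"
proof -
  note vs1 = is_vpbD(4)[OF V1 x] and vs2 = is_vpbD(4)[OF V2 x]
  have z2: "pb_zero B2 x \<in> fib B2 x" by (rule vpb_zero_fib[OF V2 x])
  have I: "Incl1 B1 B2 b = (b, pb_zero B2 x)" if "b \<in> fib B1 x" for b
    using that unfolding Incl1_def fib_def by simp
  show ?thesis unfolding flin_def
  proof (intro conjI ballI allI)
    fix b assume b: "b \<in> fib B1 x"
    show "Incl1 B1 B2 b \<in> fib (dsum B1 B2) x" unfolding I[OF b] fib_dsum using b z2 by simp
  next
    fix b b' assume b: "b \<in> fib B1 x" and b': "b' \<in> fib B1 x"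
    have s: "pb_add B1 b b' \<in> fib B1 x" by (rule vs_facts(2)[OF vs1 b b'])
    show "Incl1 B1 B2 (pb_add B1 b b') = pb_add (dsum B1 B2) (Incl1 B1 B2 b) (Incl1 B1 B2 b')"
      unfolding I[OF s] I[OF b] I[OF b'] dsum_simps vs_facts(6)[OF vs2 z2] ..
  next
    fix c b assume b: "b \<in> fib B1 x"
    have s: "pb_smul B1 c b \<in> fib B1 x" by (rule vs_facts(3)[OF vs1 b])
    show "Incl1 B1 B2 (pb_smul B1 c b) = pb_smul (dsum B1 B2) c (Incl1 B1 B2 b)"
      unfolding I[OF s] I[OF b] dsum_simps vs_smul_zero[OF vs2] ..
  qed
qed

lemma flin_Incl2:
  assumes V1: "is_vpb X DX B1" and V2: "is_vpb X DX B2" and x: "x \<in> X"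
  shows "flin B2 (dsum B1 B2) (Incl2 B1 B2) x"
proof -
  note vs1 = is_vpbD(4)[OF V1 x] and vs2 = is_vpbD(4)[OF V2 x]
  have z1: "pb_zero B1 x \<in> fib B1 x" by (rule vpb_zero_fib[OF V1 x])
  have I: "Incl2 B1 B2 b = (pb_zero B1 x, b)" if "b \<in> fib B2 x" for b
    using that unfolding Incl2_def fib_def by simp
  show ?thesis unfolding flin_def
  proof (intro conjI ballI allI)
    fix b assume b: "b \<in> fib B2 x"
    show "Incl2 B1 B2 b \<in> fib (dsum B1 B2) x" unfolding I[OF b] fib_dsum using b z1 by simp
  next
    fix b b' assume b: "b \<in> fib B2 x" and b': "b' \<in> fib B2 x"
    have s: "pb_add B2 b b' \<in> fib B2 x" by (rule vs_facts(2)[OF vs2 b b'])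
    show "Incl2 B1 B2 (pb_add B2 b b') = pb_add (dsum B1 B2) (Incl2 B1 B2 b) (Incl2 B1 B2 b')"
      unfolding I[OF s] I[OF b] I[OF b'] dsum_simps vs_facts(6)[OF vs1 z1] ..
  next
    fix c b assume b: "b \<in> fib B2 x"
    have s: "pb_smul B2 c b \<in> fib B2 x" by (rule vs_facts(3)[OF vs2 b])
    show "Incl2 B1 B2 (pb_smul B2 c b) = pb_smul (dsum B1 B2) c (Incl2 B1 B2 b)"
      unfolding I[OF s] I[OF b] dsum_simps vs_smul_zero[OF vs1] ..
  qed
qed

lemma vpb_tot_proj: "is_vpb X DX B \<Longrightarrow> v \<in> pb_tot B \<Longrightarrow> pb_proj B v \<in> X"
  by (rule smooth_betw_mem[OF is_vpbD(3)])

lemma vpb_zero_tot: "is_vpb X DX B \<Longrightarrow> x \<in> X \<Longrightarrow> pb_zero B x \<in> pb_tot B \<and> pb_proj B (pb_zero B x) = x"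
proof -
  assume a: "is_vpb X DX B" "x \<in> X"
  have "pb_zero B x \<in> fib B x" by (rule vpb_zero_fib[OF a])
  then show ?thesis unfolding fib_def by simp
qed

lemma gplot_Incl1:
  assumes V1: "is_vpb X DX B1" and V2: "is_vpb X DX B2"
    and P: "(n, U, p) \<in> fibprod_diff L B1"
  shows "plot_of n U (\<lambda>u. (fst (p u), Incl1 B1 B2 (snd (p u)))) \<in> fibprod_diff L (dsum B1 B2)"
proof -
  note PD = fibprod_diffD[OF P]
  have pu: "fst (p u) \<in> pb_tot L \<and> snd (p u) \<in> pb_tot B1 \<and> pb_proj L (fst (p u)) = pb_proj B1 (snd (p u))"
    if "u \<in> U" for u using PD(5) that unfolding fibprod_def by auto
  have s1: "plot_of n U (\<lambda>u. snd (p u)) \<in> pb_diff B1" using PD(4) by (simp add: comp_def)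
  have pr: "plot_of n U (pb_proj B1 \<circ> (\<lambda>u. snd (p u))) \<in> DX" by (rule vpb_proj_plot[OF V1 s1])
  have "plot_of n U (pb_zero B2 \<circ> restrict (pb_proj B1 \<circ> (\<lambda>u. snd (p u))) U) \<in> pb_diff B2"
    by (rule vpb_zero_plot[OF V2 pr[unfolded plot_of_eq_iff]])
  then have "plot_of n U (pb_zero B2 \<circ> (pb_proj B1 \<circ> (\<lambda>u. snd (p u)))) \<in> pb_diff B2"
    by (simp only: plot_of_comp_restrict)
  then have z: "plot_of n U (\<lambda>u. pb_zero B2 (pb_proj B1 (snd (p u)))) \<in> pb_diff B2"
    by (simp add: comp_def)
  have I: "plot_of n U (\<lambda>u. Incl1 B1 B2 (snd (p u))) \<in> fibprod_diff B1 B2"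
    unfolding Incl1_def
  proof (rule fibprod_diffI[OF PD(1) s1 z])
    fix u assume u: "u \<in> U"
    have x: "pb_proj B1 (snd (p u)) \<in> X" using vpb_tot_proj[OF V1] pu[OF u] by blast
    show "(snd (p u), pb_zero B2 (pb_proj B1 (snd (p u)))) \<in> fibprod B1 B2"
      using pu[OF u] vpb_zero_tot[OF V2 x] by (simp add: fibprod_def)
  qed
  show ?thesis
  proof (rule fibprod_diffI[OF PD(1)])
    show "plot_of n U (\<lambda>u. fst (p u)) \<in> pb_diff L" using PD(3) by (simp add: comp_def)
    show "plot_of n U (\<lambda>u. Incl1 B1 B2 (snd (p u))) \<in> pb_diff (dsum B1 B2)" using I by simp
    fix u assume u: "u \<in> U"
    have x: "pb_proj B1 (snd (p u)) \<in> X" using vpb_tot_proj[OF V1] pu[OF u] by blast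
    show "(fst (p u), Incl1 B1 B2 (snd (p u))) \<in> fibprod L (dsum B1 B2)"
      using pu[OF u] vpb_zero_tot[OF V2 x] by (simp add: fibprod_def Incl1_def)
  qed
qed

lemma gplot_Incl2:
  assumes V1: "is_vpb X DX B1" and V2: "is_vpb X DX B2"
    and P: "(n, U, p) \<in> fibprod_diff L B2"
  shows "plot_of n U (\<lambda>u. (fst (p u), Incl2 B1 B2 (snd (p u)))) \<in> fibprod_diff L (dsum B1 B2)"
proof -
  note PD = fibprod_diffD[OF P]
  have pu: "fst (p u) \<in> pb_tot L \<and> snd (p u) \<in> pb_tot B2 \<and> pb_proj L (fst (p u)) = pb_proj B2 (snd (p u))"
    if "u \<in> U" for u using PD(5) that unfolding fibprod_def by auto
  have s1: "plot_of n U (\<lambda>u. snd (p u)) \<in> pb_diff B2" using PD(4) by (simp add: comp_def)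
  have pr: "plot_of n U (pb_proj B2 \<circ> (\<lambda>u. snd (p u))) \<in> DX" by (rule vpb_proj_plot[OF V2 s1])
  have "plot_of n U (pb_zero B1 \<circ> restrict (pb_proj B2 \<circ> (\<lambda>u. snd (p u))) U) \<in> pb_diff B1"
    by (rule vpb_zero_plot[OF V1 pr[unfolded plot_of_eq_iff]])
  then have "plot_of n U (pb_zero B1 \<circ> (pb_proj B2 \<circ> (\<lambda>u. snd (p u)))) \<in> pb_diff B1"
    by (simp only: plot_of_comp_restrict)
  then have z: "plot_of n U (\<lambda>u. pb_zero B1 (pb_proj B2 (snd (p u)))) \<in> pb_diff B1"
    by (simp add: comp_def)
  have I: "plot_of n U (\<lambda>u. Incl2 B1 B2 (snd (p u))) \<in> fibprod_diff B1 B2"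
    unfolding Incl2_def
  proof (rule fibprod_diffI[OF PD(1) z s1])
    fix u assume u: "u \<in> U"
    have x: "pb_proj B2 (snd (p u)) \<in> X" using vpb_tot_proj[OF V2] pu[OF u] by blast
    show "(pb_zero B1 (pb_proj B2 (snd (p u))), snd (p u)) \<in> fibprod B1 B2"
      using pu[OF u] vpb_zero_tot[OF V1 x] by (simp add: fibprod_def)
  qed
  show ?thesis
  proof (rule fibprod_diffI[OF PD(1)])
    show "plot_of n U (\<lambda>u. fst (p u)) \<in> pb_diff L" using PD(3) by (simp add: comp_def)
    show "plot_of n U (\<lambda>u. Incl2 B1 B2 (snd (p u))) \<in> pb_diff (dsum B1 B2)" using I by simp
    fix u assume u: "u \<in> U"
    have x: "pb_proj B2 (snd (p u)) \<in> X" using vpb_tot_proj[OF V2] pu[OF u] by blast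
    show "(fst (p u), Incl2 B1 B2 (snd (p u))) \<in> fibprod L (dsum B1 B2)"
      using pu[OF u] vpb_zero_tot[OF V1 x] by (simp add: fibprod_def Incl2_def)
  qed
qed

lemma Lam1_simps[simp]:
  "pb_tot (Lam1 X DX) = (\<lambda>(x, \<omega>). lcls DX x \<omega>) ` (X \<times> Omega1 DX)"
  "pb_proj (Lam1 X DX) = fst"
  unfolding Lam1_def by simp_all

lemma lcls_fst[simp]: "fst (lcls DX x \<omega>) = x"
  unfolding lcls_def by simp

lemma Lam1_proj:
  assumes dX: "diffeology X DX"
  shows "smooth_betw (pb_tot (Lam1 X DX)) (pb_diff (Lam1 X DX)) X DX (pb_proj (Lam1 X DX))"
  unfolding smooth_betw_def
proof (intro conjI ballI)
  fix v assume "v \<in> pb_tot (Lam1 X DX)"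
  then show "pb_proj (Lam1 X DX) v \<in> X" by auto
next
  fix P assume P: "P \<in> pb_diff (Lam1 X DX)"
  obtain n U p where nUp: "P = (n, U, p)" by (cases P) auto
  have Q: "(n, U, p) \<in> quot_diff (prod_diff (subset_diff DX X) (Omega1_diff DX)) (\<lambda>(x, \<omega>). lcls DX x \<omega>)"
    using P nUp unfolding Lam1_def by simp
  have op: "open_in_Rn n U"
    and loc: "\<And>u. u \<in> U \<Longrightarrow> \<exists>V r. open_in_Rn n V \<and> u \<in> V \<and> V \<subseteq> U \<and>
        (n, V, r) \<in> prod_diff (subset_diff DX X) (Omega1_diff DX) \<and>
        (\<forall>v\<in>V. p v = (\<lambda>(x, \<omega>). lcls DX x \<omega>) (r v))"
    using Q unfolding quot_diff_def by auto
  have "plot_of n U (fst \<circ> p) \<in> DX"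
  proof (rule diffeology_local[OF dX op])
    show "(fst \<circ> p) ` U \<subseteq> X"
    proof (rule image_subsetI)
      fix u assume u: "u \<in> U"
      obtain V r where V: "open_in_Rn n V" "u \<in> V" "V \<subseteq> U"
        "(n, V, r) \<in> prod_diff (subset_diff DX X) (Omega1_diff DX)"
        "\<forall>v\<in>V. p v = (\<lambda>(x, \<omega>). lcls DX x \<omega>) (r v)" using loc[OF u] by blast
      have "plot_of n V (fst \<circ> r) \<in> subset_diff DX X" using prod_diffD(3)[OF V(4)] .
      then have "(fst \<circ> r) ` V \<subseteq> X" unfolding subset_diff_def plot_of_eq_iff by auto
      then have "fst (r u) \<in> X" using V(2) by auto
      moreover have "fst (p u) = fst (r u)" using V(2,5) by (simp add: split_beta)
      ultimately show "(fst \<circ> p) u \<in> X" by simp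
    qed
    fix u assume u: "u \<in> U"
    obtain V r where V: "open_in_Rn n V" "u \<in> V" "V \<subseteq> U"
      "(n, V, r) \<in> prod_diff (subset_diff DX X) (Omega1_diff DX)"
      "\<forall>v\<in>V. p v = (\<lambda>(x, \<omega>). lcls DX x \<omega>) (r v)" using loc[OF u] by blast
    have "plot_of n V (fst \<circ> r) \<in> subset_diff DX X" using prod_diffD(3)[OF V(4)] .
    then have "plot_of n V (fst \<circ> r) \<in> DX" unfolding subset_diff_def plot_of_eq_iff by auto
    moreover have "plot_of n V (fst \<circ> r) = plot_of n V (fst \<circ> p)"
      by (rule plot_of_cong) (use V(5) in \<open>simp add: split_beta\<close>)
    ultimately show "\<exists>V. open_in_Rn n V \<and> u \<in> V \<and> V \<subseteq> U \<and> plot_of n V (fst \<circ> p) \<in> DX"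
      using V(1-3) by auto
  qed
  then show "case P of (n, U, p) \<Rightarrow> plot_of n U (pb_proj (Lam1 X DX) \<circ> p) \<in> DX"
    unfolding nUp by simp
qed


section \<open>Analysis on R^n inside nat => real\<close>

lemma shift_0[simp]: "shift x i 0 = x"
  unfolding shift_def by simp

lemma shift_shift: "shift (shift x k a) k b = shift x k (a + b)"
  unfolding shift_def by (rule ext) simp

lemma shift_app: "shift x k t i = x i + (if i = k then t else 0)"
  unfolding shift_def by simp

lemma Rn_shift: "x \<in> Rn n \<Longrightarrow> k < n \<Longrightarrow> shift x k t \<in> Rn n"
  unfolding Rn_def shift_def by auto

lemma open_in_Rn_subset: "open_in_Rn n U \<Longrightarrow> U \<subseteq> Rn n"
  unfolding open_in_Rn_def by blast

lemma open_in_RnD: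
  assumes "open_in_Rn n U" "x \<in> U"
  obtains e where "e > 0" "\<And>y. y \<in> Rn n \<Longrightarrow> (\<forall>i<n. \<bar>y i - x i\<bar> < e) \<Longrightarrow> y \<in> U"
  using assms unfolding open_in_Rn_def by blast

lemma ev_abs_lt: "e > 0 \<Longrightarrow> eventually (\<lambda>t::real. \<bar>t\<bar> < e) (nhds 0)"
proof -
  assume e: "e > 0"
  have "eventually (\<lambda>t. t \<in> ball (0::real) e) (nhds 0)"
    by (rule eventually_nhds_in_open) (use e in auto)
  then show ?thesis by (rule eventually_mono) (simp add: dist_real_def)
qed

lemma shift_ev_U:
  assumes op: "open_in_Rn n U" and x: "x \<in> U" and k: "k < n"
  shows "eventually (\<lambda>t. shift x k t \<in> U) (nhds 0)"
proof -
  obtain e where e: "e > 0" "\<And>y. y \<in> Rn n \<Longrightarrow> (\<forall>i<n. \<bar>y i - x i\<bar> < e) \<Longrightarrow> y \<in> U"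
    using open_in_RnD[OF op x] by blast
  have xR: "x \<in> Rn n" using op x unfolding open_in_Rn_def by blast
  show ?thesis
  proof (rule eventually_mono[OF ev_abs_lt[OF e(1)]])
    fix t :: real assume t: "\<bar>t\<bar> < e"
    show "shift x k t \<in> U"
      by (rule e(2)[OF Rn_shift[OF xR k]]) (use t e(1) in \<open>auto simp: shift_app\<close>)
  qed
qed

lemma pd_local:
  assumes op: "open_in_Rn n U" and x: "x \<in> U" and k: "k < n"
    and eq: "\<And>y. y \<in> U \<Longrightarrow> f y = g y"
  shows "pd k f x = pd k g x"
  unfolding pd_def
proof (rule deriv_cong_ev)
  show "eventually (\<lambda>t. f (shift x k t) = g (shift x k t)) (nhds 0)"
    using shift_ev_U[OF op x k] by (rule eventually_mono) (rule eq)
qed simp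

lemma iter_pd_Cons: "iter_pd (k # ks) f = pd k (iter_pd ks f)"
  unfolding iter_pd_def by simp

lemma iter_pd_Nil: "iter_pd [] f = f"
  unfolding iter_pd_def by simp

lemma iter_pd_append: "iter_pd (ks @ [i]) f = iter_pd ks (pd i f)"
  unfolding iter_pd_def by simp

lemma iter_pd_local:
  assumes op: "open_in_Rn n U" and ks: "set ks \<subseteq> {..<n}"
    and eq: "\<And>y. y \<in> U \<Longrightarrow> f y = g y"
  shows "\<And>x. x \<in> U \<Longrightarrow> iter_pd ks f x = iter_pd ks g x"
  using ks
proof (induction ks)
  case Nil
  then show ?case using eq by (simp add: iter_pd_Nil)
next
  case (Cons k ks)
  then have k: "k < n" and ks': "set ks \<subseteq> {..<n}" by auto
  show ?case unfolding iter_pd_Cons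
    by (rule pd_local[OF op Cons.prems(1) k]) (rule Cons.IH[OF _ ks'])
qed

lemma differentiable_ev_cong:
  fixes f g :: "real \<Rightarrow> real"
  assumes "f differentiable (at 0)" "eventually (\<lambda>t. f t = g t) (nhds 0)"
  shows "g differentiable (at 0)"
proof -
  obtain D where D: "(f has_real_derivative D) (at 0)"
    using assms(1) by (rule real_differentiableE)
  have "(g has_field_derivative D) (at 0)"
    using D DERIV_cong_ev[OF refl assms(2) refl] by simp
  then show ?thesis unfolding real_differentiable_def by blast
qed

lemma smooth_fnD:
  assumes "smooth_fn n U f" "set ks \<subseteq> {..<n}"
  shows "continuous_on U (iter_pd ks f)"
    "\<And>i x. i < n \<Longrightarrow> x \<in> U \<Longrightarrow> (\<lambda>t. iter_pd ks f (shift x i t)) differentiable at 0"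
proof -
  note h = assms(1)[unfolded smooth_fn_def, rule_format, OF assms(2)]
  show "continuous_on U (iter_pd ks f)" using h by (elim conjE)
  fix i x assume "i < n" "x \<in> U"
  then show "(\<lambda>t. iter_pd ks f (shift x i t)) differentiable at 0" using h by blast
qed

lemma smooth_fn_local:
  assumes op: "open_in_Rn n U" and sm: "smooth_fn n U f"
    and eq: "\<And>y. y \<in> U \<Longrightarrow> f y = g y"
  shows "smooth_fn n U g"
  unfolding smooth_fn_def
proof (intro allI impI, intro conjI)
  fix ks :: "nat list" assume ks: "set ks \<subseteq> {..<n}"
  have e: "\<And>x. x \<in> U \<Longrightarrow> iter_pd ks f x = iter_pd ks g x" by (rule iter_pd_local[OF op ks eq])
  show "continuous_on U (iter_pd ks g)"
    using smooth_fnD(1)[OF sm ks] e by (metis continuous_on_cong)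
  show "\<forall>i<n. \<forall>x\<in>U. (\<lambda>t. iter_pd ks g (shift x i t)) differentiable at 0"
  proof (intro allI impI ballI)
    fix i x assume i: "i < n" and x: "x \<in> U"
    have "(\<lambda>t. iter_pd ks f (shift x i t)) differentiable at 0"
      by (rule smooth_fnD(2)[OF sm ks i x])
    moreover have "eventually (\<lambda>t. iter_pd ks f (shift x i t) = iter_pd ks g (shift x i t)) (nhds 0)"
      using shift_ev_U[OF op x i] by (rule eventually_mono) (rule e)
    ultimately show "(\<lambda>t. iter_pd ks g (shift x i t)) differentiable at 0"
      by (rule differentiable_ev_cong)
  qed
qed

lemma smooth_fn_pd:
  assumes op: "open_in_Rn n U" and sm: "smooth_fn n U f" and i: "i < n"
  shows "smooth_fn n U (pd i f)"
  unfolding smooth_fn_def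
proof (intro allI impI, intro conjI)
  fix ks :: "nat list" assume ks: "set ks \<subseteq> {..<n}"
  have ks': "set (ks @ [i]) \<subseteq> {..<n}" using ks i by auto
  show "continuous_on U (iter_pd ks (pd i f))"
    using smooth_fnD(1)[OF sm ks'] unfolding iter_pd_append .
  show "\<forall>j<n. \<forall>x\<in>U. (\<lambda>t. iter_pd ks (pd i f) (shift x j t)) differentiable at 0"
    using smooth_fnD(2)[OF sm ks'] unfolding iter_pd_append by blast
qed

lemma open_fun_box:
  fixes A :: "rv set"
  assumes "open A" "y \<in> A"
  shows "\<exists>r>0. \<exists>F. finite F \<and> (\<forall>v. (\<forall>i\<in>F. \<bar>v i - y i\<bar> < r) \<longrightarrow> v \<in> A)"
proof -
  have "openin (product_topology (\<lambda>i. euclidean) UNIV) A" using assms(1) unfolding open_fun_def .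
  from product_topology_open_contains_basis[OF this assms(2)]
  obtain Xs where Xs: "y \<in> (\<Pi>\<^sub>E i\<in>UNIV. Xs i)" "\<And>i. open (Xs i)" "finite {i. Xs i \<noteq> UNIV}"
    "(\<Pi>\<^sub>E i\<in>UNIV. Xs i) \<subseteq> A" by auto
  let ?F = "{i. Xs i \<noteq> UNIV}"
  have "\<forall>i\<in>?F. \<exists>r>0. ball (y i) r \<subseteq> Xs i"
  proof
    fix i assume "i \<in> ?F"
    have "y i \<in> Xs i" using Xs(1) by auto
    then show "\<exists>r>0. ball (y i) r \<subseteq> Xs i" using Xs(2) open_contains_ball by blast
  qed
  then obtain rr where rr: "\<And>i. i \<in> ?F \<Longrightarrow> rr i > 0 \<and> ball (y i) (rr i) \<subseteq> Xs i" by metis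
  define r where "r = Min (insert 1 (rr ` ?F))"
  have fin: "finite (insert 1 (rr ` ?F))" using Xs(3) by simp
  have r0: "r > 0" unfolding r_def using fin rr by (subst Min_gr_iff) auto
  have rle: "\<And>i. i \<in> ?F \<Longrightarrow> r \<le> rr i" unfolding r_def using fin by (auto intro: Min_le)
  have "\<forall>v. (\<forall>i\<in>?F. \<bar>v i - y i\<bar> < r) \<longrightarrow> v \<in> A"
  proof (intro allI impI)
    fix v assume v: "\<forall>i\<in>?F. \<bar>v i - y i\<bar> < r"
    have "v i \<in> Xs i" for i
    proof (cases "i \<in> ?F")
      case True
      have "\<bar>v i - y i\<bar> < rr i" using v True rle[OF True] by fastforce
      then have "v i \<in> ball (y i) (rr i)" by (simp add: dist_real_def abs_minus_commute)
      then show ?thesis using rr[OF True] by blast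
    next
      case False
      then show ?thesis by simp
    qed
    then have "v \<in> (\<Pi>\<^sub>E i\<in>UNIV. Xs i)" by auto
    then show "v \<in> A" using Xs(4) by blast
  qed
  then show ?thesis using r0 Xs(3) by blast
qed

lemma continuous_on_Rn_box:
  fixes g :: "rv \<Rightarrow> real"
  assumes c: "continuous_on U g" and y: "y \<in> U" and U: "U \<subseteq> Rn n" and e: "e > 0"
  shows "\<exists>r>0. \<forall>v\<in>U. (\<forall>i<n. \<bar>v i - y i\<bar> < r) \<longrightarrow> \<bar>g v - g y\<bar> < e"
proof -
  have "open (ball (g y) e)" "g y \<in> ball (g y) e" using e by auto
  then obtain A where A: "open A" "y \<in> A" "\<forall>v\<in>U. v \<in> A \<longrightarrow> g v \<in> ball (g y) e"
    using c y unfolding continuous_on_topological by metis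
  obtain r F where rF: "r > 0" "finite F" "\<forall>v. (\<forall>i\<in>F. \<bar>v i - y i\<bar> < r) \<longrightarrow> v \<in> A"
    using open_fun_box[OF A(1,2)] by blast
  have "\<forall>v\<in>U. (\<forall>i<n. \<bar>v i - y i\<bar> < r) \<longrightarrow> \<bar>g v - g y\<bar> < e"
  proof (intro ballI impI)
    fix v assume v: "v \<in> U" "\<forall>i<n. \<bar>v i - y i\<bar> < r"
    have "\<bar>v i - y i\<bar> < r" for i
    proof (cases "i < n")
      case True then show ?thesis using v by blast
    next
      case False
      then have "v i = 0" "y i = 0" using U v y unfolding Rn_def by auto
      then show ?thesis using rF by simp
    qed
    then have "v \<in> A" using rF by blast
    then have "g v \<in> ball (g y) e" using A v by blast
    then show "\<bar>g v - g y\<bar> < e" by (simp add: dist_real_def abs_minus_commute)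
  qed
  then show ?thesis using rF by blast
qed


section \<open>Chain rule for partial derivatives\<close>

lemma seg_bound:
  fixes f :: "rv \<Rightarrow> real"
  assumes fd: "\<And>x. x \<in> U \<Longrightarrow> (\<lambda>t. f (shift x k t)) differentiable (at 0)"
    and zU: "\<And>s. s \<in> closed_segment 0 \<Delta> \<Longrightarrow> shift z k s \<in> U"
    and bnd: "\<And>s. s \<in> closed_segment 0 \<Delta> \<Longrightarrow> \<bar>pd k f (shift z k s) - c\<bar> \<le> \<epsilon>"
  shows "\<bar>f (shift z k \<Delta>) - f z - c * \<Delta>\<bar> \<le> \<epsilon> * \<bar>\<Delta>\<bar>"
proof -
  let ?S = "closed_segment 0 \<Delta>"
  let ?F = "\<lambda>s. f (shift z k s)"
  let ?\<psi> = "\<lambda>s. ?F s - c * s"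
  have der: "(?\<psi> has_field_derivative (pd k f (shift z k s) - c)) (at s within ?S)" if s: "s \<in> ?S" for s
  proof -
    let ?v = "shift z k s"
    have "(\<lambda>r. f (shift ?v k r)) differentiable (at 0)" by (rule fd[OF zU[OF s]])
    then have "DERIV (\<lambda>r. f (shift ?v k r)) 0 :> pd k f ?v"
      unfolding pd_def by (simp add: DERIV_deriv_iff_real_differentiable)
    then have "DERIV (\<lambda>r. ?F (r + s)) 0 :> pd k f ?v"
      by (simp add: shift_shift add.commute)
    then have "DERIV ?F (0 + s) :> pd k f ?v" by (simp only: DERIV_shift)
    then have "DERIV ?F s :> pd k f ?v" by simp
    moreover have "DERIV (\<lambda>s. c * s) s :> c" using DERIV_cmult_Id by blast
    ultimately have "DERIV ?\<psi> s :> pd k f ?v - c" by (rule DERIV_diff)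
    then show ?thesis by (rule has_field_derivative_at_within)
  qed
  have "norm (?\<psi> \<Delta> - ?\<psi> 0) \<le> \<epsilon> * norm (\<Delta> - 0)"
    by (rule field_differentiable_bound[OF convex_closed_segment der]) (use bnd in auto)
  then show ?thesis by (simp add: algebra_simps)
qed

lemma chain_pd:
  fixes f :: "rv \<Rightarrow> real" and \<gamma> :: "real \<Rightarrow> rv" and d :: "nat \<Rightarrow> real"
  assumes op: "open_in_Rn n U"
    and fd: "\<And>i x. i < n \<Longrightarrow> x \<in> U \<Longrightarrow> (\<lambda>t. f (shift x i t)) differentiable (at 0)"
    and fc: "\<And>i. i < n \<Longrightarrow> continuous_on U (pd i f)"
    and gU: "eventually (\<lambda>t. \<gamma> t \<in> U) (nhds 0)"
    and gd: "\<And>i. i < n \<Longrightarrow> ((\<lambda>t. \<gamma> t i) has_real_derivative d i) (at 0)"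
  shows "((\<lambda>t. f (\<gamma> t)) has_real_derivative (\<Sum>i<n. pd i f (\<gamma> 0) * d i)) (at 0)"
proof -
  define y where "y = \<gamma> 0"
  have yU: "y \<in> U" unfolding y_def by (rule eventually_nhds_x_imp_x[OF gU])
  have URn: "U \<subseteq> Rn n" by (rule open_in_Rn_subset[OF op])
  have yR: "y \<in> Rn n" using yU URn by blast
  obtain e where e: "e > 0" "\<And>v. v \<in> Rn n \<Longrightarrow> (\<forall>i<n. \<bar>v i - y i\<bar> < e) \<Longrightarrow> v \<in> U"
    using open_in_RnD[OF op yU] by blast
  have gU': "eventually (\<lambda>t. \<gamma> t \<in> U) (at 0)"
    using gU unfolding eventually_at_filter by (rule eventually_mono) simp
  define z where "z = (\<lambda>k t. (\<lambda>i. if i < k then \<gamma> t i else y i))"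
  have close: "eventually (\<lambda>t. \<forall>i\<in>{..<n}. \<bar>\<gamma> t i - y i\<bar> < \<rho>) (at 0)" if \<rho>: "\<rho> > 0" for \<rho>
  proof (rule eventually_ball_finite)
    show "finite {..<n}" by simp
    show "\<forall>i\<in>{..<n}. eventually (\<lambda>t. \<bar>\<gamma> t i - y i\<bar> < \<rho>) (at 0)"
    proof
      fix i assume "i \<in> {..<n}"
      then have "isCont (\<lambda>t. \<gamma> t i) 0" using gd DERIV_isCont by blast
      then have "((\<lambda>t. \<gamma> t i) \<longlongrightarrow> y i) (at 0)" unfolding isCont_def y_def .
      from tendstoD[OF this \<rho>] show "eventually (\<lambda>t. \<bar>\<gamma> t i - y i\<bar> < \<rho>) (at 0)"
        by (simp add: dist_real_def)
    qed
  qed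
  have trm: "((\<lambda>t. (f (z (Suc k) t) - f (z k t)) / t) \<longlongrightarrow> pd k f y * d k) (at 0)" if k: "k < n" for k
  proof -
    define c where "c = pd k f y"
    define \<Delta> where "\<Delta> = (\<lambda>t. \<gamma> t k - y k)"
    have zs: "z (Suc k) t = shift (z k t) k (\<Delta> t)" for t
      unfolding z_def shift_def \<Delta>_def by (rule ext) auto
    have A: "eventually (\<lambda>t. \<bar>f (z (Suc k) t) - f (z k t) - c * \<Delta> t\<bar> \<le> \<epsilon> * \<bar>\<Delta> t\<bar>) (at 0)"
      if \<epsilon>: "\<epsilon> > 0" for \<epsilon>
    proof -
      obtain r where r: "r > 0" "\<And>v. v \<in> U \<Longrightarrow> (\<forall>i<n. \<bar>v i - y i\<bar> < r) \<Longrightarrow> \<bar>pd k f v - pd k f y\<bar> < \<epsilon>"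
        using continuous_on_Rn_box[OF fc[OF k] yU URn \<epsilon>] by blast
      define \<rho> where "\<rho> = min e r"
      have \<rho>: "\<rho> > 0" unfolding \<rho>_def using e r by simp
      show ?thesis
      proof (rule eventually_mono[OF close[OF \<rho>]])
        fix t assume ct: "\<forall>i\<in>{..<n}. \<bar>\<gamma> t i - y i\<bar> < \<rho>"
        have dl: "\<bar>\<Delta> t\<bar> < \<rho>" using ct k unfolding \<Delta>_def by auto
        have zR: "z k t \<in> Rn n" using yR k unfolding Rn_def z_def by auto
        have pts: "shift (z k t) k s \<in> U \<and> \<bar>pd k f (shift (z k t) k s) - c\<bar> \<le> \<epsilon>"
          if s: "s \<in> closed_segment 0 (\<Delta> t)" for s
        proof -
          have sl: "\<bar>s\<bar> \<le> \<bar>\<Delta> t\<bar>" using s by (auto simp: closed_segment_eq_real_ivl split: if_splits)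
          have cl: "\<forall>i<n. \<bar>shift (z k t) k s i - y i\<bar> < \<rho>"
          proof (intro allI impI)
            fix i assume i: "i < n"
            show "\<bar>shift (z k t) k s i - y i\<bar> < \<rho>"
            proof (cases "i < k")
              case True
              then show ?thesis using ct i unfolding z_def shift_def by auto
            next
              case False
              then show ?thesis using sl dl \<rho> unfolding z_def shift_def by auto
            qed
          qed
          have vU: "shift (z k t) k s \<in> U"
            by (rule e(2)[OF Rn_shift[OF zR k]]) (use cl \<rho>_def in auto)
          have "\<bar>pd k f (shift (z k t) k s) - pd k f y\<bar> < \<epsilon>"
            by (rule r(2)[OF vU]) (use cl \<rho>_def in auto)
          then show ?thesis using vU unfolding c_def by simp
        qed
        have "\<bar>f (shift (z k t) k (\<Delta> t)) - f (z k t) - c * \<Delta> t\<bar> \<le> \<epsilon> * \<bar>\<Delta> t\<bar>"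
          by (rule seg_bound[where U=U]) (use fd[OF k] pts in auto)
        then show "\<bar>f (z (Suc k) t) - f (z k t) - c * \<Delta> t\<bar> \<le> \<epsilon> * \<bar>\<Delta> t\<bar>" unfolding zs .
      qed
    qed
    have dq: "((\<lambda>t. \<Delta> t / t) \<longlongrightarrow> d k) (at 0)"
      using gd[OF k] unfolding DERIV_def \<Delta>_def y_def by simp
    have B: "((\<lambda>t. (f (z (Suc k) t) - f (z k t) - c * \<Delta> t) / t) \<longlongrightarrow> 0) (at 0)"
      unfolding tendsto_iff
    proof (intro allI impI)
      fix \<epsilon> :: real assume \<epsilon>: "\<epsilon> > 0"
      define \<epsilon>' where "\<epsilon>' = \<epsilon> / (2 * (\<bar>d k\<bar> + 1))"
      have \<epsilon>': "\<epsilon>' > 0" unfolding \<epsilon>'_def using \<epsilon> by (simp add: add_pos_nonneg)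
      have ev1: "eventually (\<lambda>t. \<bar>\<Delta> t / t - d k\<bar> < 1) (at 0)"
        using tendstoD[OF dq, of 1] by (simp add: dist_real_def)
      show "eventually (\<lambda>t. dist ((f (z (Suc k) t) - f (z k t) - c * \<Delta> t) / t) 0 < \<epsilon>) (at 0)"
      proof (rule eventually_mono[OF eventually_conj[OF A[OF \<epsilon>'] ev1]])
        fix t assume h: "\<bar>f (z (Suc k) t) - f (z k t) - c * \<Delta> t\<bar> \<le> \<epsilon>' * \<bar>\<Delta> t\<bar> \<and> \<bar>\<Delta> t / t - d k\<bar> < 1"
        let ?R = "f (z (Suc k) t) - f (z k t) - c * \<Delta> t"
        have q: "\<bar>\<Delta> t / t\<bar> \<le> \<bar>d k\<bar> + 1" using h by linarith
        have "\<bar>?R / t\<bar> = \<bar>?R\<bar> / \<bar>t\<bar>" by (simp add: abs_divide)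
        also have "\<dots> \<le> \<epsilon>' * \<bar>\<Delta> t\<bar> / \<bar>t\<bar>" using h by (simp add: divide_right_mono)
        also have "\<dots> = \<epsilon>' * \<bar>\<Delta> t / t\<bar>" by (simp add: abs_divide)
        also have "\<dots> \<le> \<epsilon>' * (\<bar>d k\<bar> + 1)" by (rule mult_left_mono[OF q]) (use \<epsilon>' in simp)
        also have "\<dots> = \<epsilon> / 2" unfolding \<epsilon>'_def by (simp add: field_simps)
        also have "\<dots> < \<epsilon>" using \<epsilon> by simp
        finally show "dist (?R / t) 0 < \<epsilon>" by (simp add: dist_real_def)
      qed
    qed
    have "((\<lambda>t. (f (z (Suc k) t) - f (z k t) - c * \<Delta> t) / t + c * (\<Delta> t / t)) \<longlongrightarrow> 0 + c * d k) (at 0)"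
      by (intro tendsto_add B tendsto_mult_left dq)
    moreover have "(f (z (Suc k) t) - f (z k t) - c * \<Delta> t) / t + c * (\<Delta> t / t) = (f (z (Suc k) t) - f (z k t)) / t" for t
      by (simp add: diff_divide_distrib)
    ultimately show ?thesis unfolding c_def by simp
  qed
  have tele: "eventually (\<lambda>t. (\<Sum>k<n. (f (z (Suc k) t) - f (z k t)) / t) = (f (\<gamma> (0 + t)) - f (\<gamma> 0)) / t) (at 0)"
  proof (rule eventually_mono[OF gU'])
    fix t assume gt: "\<gamma> t \<in> U"
    have zn: "z n t = \<gamma> t"
    proof (rule ext)
      fix i show "z n t i = \<gamma> t i"
        using gt URn yR unfolding z_def Rn_def by auto
    qed
    have z0: "z 0 t = y" unfolding z_def by simp
    have "(\<Sum>k<n. (f (z (Suc k) t) - f (z k t)) / t) = (\<Sum>k<n. f (z (Suc k) t) - f (z k t)) / t"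
      by (simp add: sum_divide_distrib)
    also have "\<dots> = (f (z n t) - f (z 0 t)) / t" using sum_lessThan_telescope[of "\<lambda>k. f (z k t)" n] by simp
    finally show "(\<Sum>k<n. (f (z (Suc k) t) - f (z k t)) / t) = (f (\<gamma> (0 + t)) - f (\<gamma> 0)) / t"
      unfolding zn z0 y_def by simp
  qed
  have "((\<lambda>t. \<Sum>k<n. (f (z (Suc k) t) - f (z k t)) / t) \<longlongrightarrow> (\<Sum>k<n. pd k f y * d k)) (at 0)"
    by (intro tendsto_sum trm) simp
  then have "((\<lambda>t. (f (\<gamma> (0 + t)) - f (\<gamma> 0)) / t) \<longlongrightarrow> (\<Sum>k<n. pd k f y * d k)) (at 0)"
    by (rule Lim_transform_eventually[OF _ tele])
  then show ?thesis unfolding DERIV_def y_def .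
qed


section \<open>The differential of a smooth function is a 1-form\<close>

lemma dform_at: "(n, U, p) \<in> DX \<Longrightarrow>
    dform DX h (n, U, p) = restrict (\<lambda>u i. if i < n then pd i (h \<circ> p) u else 0) U"
  unfolding dform_def by simp

lemma real_plot_smooth:
  assumes "smooth_betw X DX UNIV real_diff h" "(n, U, p) \<in> DX"
  shows "smooth_fn n U (restrict (h \<circ> p) U)"
  using smooth_betwD[OF assms] unfolding real_diff_def plot_of_def by simp

lemma dform_Omega1:
  assumes dX: "diffeology X DX" and hs: "smooth_betw X DX UNIV real_diff h"
  shows "dform DX h \<in> Omega1 DX"
  unfolding Omega1_def mem_Collect_eq
proof (intro conjI)
  show "dform DX h \<in> extensional DX" unfolding dform_def by simp
next
  show "\<forall>(n, U, p)\<in>DX. dform DX h (n, U, p) \<in> extensional U \<and> (\<forall>u\<in>U. dform DX h (n, U, p) u \<in> Rn n) \<and>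
      (\<forall>i<n. smooth_fn n U (\<lambda>u. dform DX h (n, U, p) u i))"
  proof (intro ballI, clarify, intro conjI)
    fix n U p assume P: "(n, U, p) \<in> DX"
    note D = dform_at[OF P, of h]
    show "dform DX h (n, U, p) \<in> extensional U" unfolding D by simp
    show "\<forall>u\<in>U. dform DX h (n, U, p) u \<in> Rn n" unfolding D Rn_def by simp
    show "\<forall>i<n. smooth_fn n U (\<lambda>u. dform DX h (n, U, p) u i)"
    proof (intro allI impI)
      fix i assume i: "i < n"
      have op: "open_in_Rn n U" by (rule diffeology_plotD(1)[OF dX P])
      let ?f = "restrict (h \<circ> p) U"
      have sm: "smooth_fn n U ?f" by (rule real_plot_smooth[OF hs P])
      have "smooth_fn n U (pd i ?f)" by (rule smooth_fn_pd[OF op sm i])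
      then show "smooth_fn n U (\<lambda>u. dform DX h (n, U, p) u i)"
      proof (rule smooth_fn_local[OF op])
        fix y assume y: "y \<in> U"
        have "pd i ?f y = pd i (h \<circ> p) y" by (rule pd_local[OF op y i]) simp
        then show "pd i ?f y = dform DX h (n, U, p) y i" unfolding D using y i by simp
      qed
    qed
  qed
next
  show "\<forall>(n, U, p)\<in>DX. \<forall>m W F. open_in_Rn m W \<and> smooth_map m W n F \<and> F ` W \<subseteq> U \<longrightarrow>
      (\<forall>w\<in>W. \<forall>j<m. dform DX h (plot_of m W (p \<circ> F)) w j =
          (\<Sum>i<n. dform DX h (n, U, p) (F w) i * pd j (\<lambda>v. F v i) w))"
  proof (intro ballI)
    fix PP assume PP: "PP \<in> DX"
    obtain n U p where nUp: "PP = (n, U, p)" by (cases PP) auto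
    have P: "(n, U, p) \<in> DX" using PP nUp by simp
    show "case PP of (n, U, p) \<Rightarrow> \<forall>m W F. open_in_Rn m W \<and> smooth_map m W n F \<and> F ` W \<subseteq> U \<longrightarrow>
      (\<forall>w\<in>W. \<forall>j<m. dform DX h (plot_of m W (p \<circ> F)) w j =
          (\<Sum>i<n. dform DX h (n, U, p) (F w) i * pd j (\<lambda>v. F v i) w))"
      unfolding nUp prod.case
  proof (intro allI impI ballI)
    fix m W F w j
    assume hyp: "open_in_Rn m W \<and> smooth_map m W n F \<and> F ` W \<subseteq> U"
      and w: "w \<in> W" and j: "j < m"
    have opW: "open_in_Rn m W" and smF: "smooth_map m W n F" and FW: "F ` W \<subseteq> U" using hyp by auto
    have op: "open_in_Rn n U" by (rule diffeology_plotD(1)[OF dX P])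
    have PF: "plot_of m W (p \<circ> F) \<in> DX" by (rule diffeology_comp[OF dX P opW smF FW])
    then have PF': "(m, W, restrict (p \<circ> F) W) \<in> DX" unfolding plot_of_def .
    let ?f = "restrict (h \<circ> p) U"
    have sm: "smooth_fn n U ?f" by (rule real_plot_smooth[OF hs P])
    have Fi: "\<And>i. i < n \<Longrightarrow> smooth_fn m W (\<lambda>v. F v i)" using smF unfolding smooth_map_def by blast
    define \<gamma> where "\<gamma> = (\<lambda>t. F (shift w j t))"
    define d where "d = (\<lambda>i. pd j (\<lambda>v. F v i) w)"
    have evW: "eventually (\<lambda>t. shift w j t \<in> W) (nhds 0)" by (rule shift_ev_U[OF opW w j])
    have chain: "((\<lambda>t. ?f (\<gamma> t)) has_real_derivative (\<Sum>i<n. pd i ?f (\<gamma> 0) * d i)) (at 0)"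
    proof (rule chain_pd[OF op])
      fix i x assume i: "i < n" and x: "x \<in> U"
      show "(\<lambda>t. ?f (shift x i t)) differentiable (at 0)"
        using smooth_fnD(2)[OF sm _ i x, of "[]"] by (simp add: iter_pd_Nil)
    next
      fix i assume i: "i < n"
      show "continuous_on U (pd i ?f)"
        using smooth_fnD(1)[OF sm, of "[i]"] i by (simp add: iter_pd_Cons iter_pd_Nil)
    next
      show "eventually (\<lambda>t. \<gamma> t \<in> U) (nhds 0)"
        using evW by (rule eventually_mono) (use FW \<gamma>_def in auto)
    next
      fix i assume i: "i < n"
      have "(\<lambda>t. F (shift w j t) i) differentiable (at 0)"
        using smooth_fnD(2)[OF Fi[OF i] _ j w, of "[]"] by (simp add: iter_pd_Nil)
      then have "DERIV (\<lambda>t. F (shift w j t) i) 0 :> deriv (\<lambda>t. F (shift w j t) i) 0"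
        by (simp add: DERIV_deriv_iff_real_differentiable)
      then show "((\<lambda>t. \<gamma> t i) has_real_derivative d i) (at 0)"
        unfolding \<gamma>_def d_def pd_def by simp
    qed
    have lhs: "dform DX h (plot_of m W (p \<circ> F)) w j = deriv (\<lambda>t. ?f (\<gamma> t)) 0"
    proof -
      have "dform DX h (plot_of m W (p \<circ> F)) w j = pd j (h \<circ> restrict (p \<circ> F) W) w"
        unfolding plot_of_def dform_at[OF PF'] using w j by simp
      also have "\<dots> = deriv (\<lambda>t. ?f (\<gamma> t)) 0"
        unfolding pd_def
      proof (rule deriv_cong_ev)
        show "eventually (\<lambda>t. (h \<circ> restrict (p \<circ> F) W) (shift w j t) = ?f (\<gamma> t)) (nhds 0)"
          using evW by (rule eventually_mono) (use FW \<gamma>_def in auto)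
      qed simp
      finally show ?thesis .
    qed
    have rhs: "dform DX h (n, U, p) (F w) i = pd i ?f (\<gamma> 0)" if i: "i < n" for i
    proof -
      have Fw: "F w \<in> U" using FW w by blast
      have "dform DX h (n, U, p) (F w) i = pd i (h \<circ> p) (F w)" unfolding dform_at[OF P] using Fw i by simp
      also have "\<dots> = pd i ?f (F w)" by (rule pd_local[OF op Fw i]) simp
      finally show ?thesis unfolding \<gamma>_def by simp
    qed
    show "dform DX h (plot_of m W (p \<circ> F)) w j = (\<Sum>i<n. dform DX h (n, U, p) (F w) i * pd j (\<lambda>v. F v i) w)"
      unfolding lhs DERIV_imp_deriv[OF chain] d_def using rhs by simp
  qed
  qed
qed


lemma dform_fib:
  assumes "diffeology X DX" "smooth_betw X DX UNIV real_diff h" "x \<in> X"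
  shows "lcls DX x (dform DX h) \<in> fib (Lam1 X DX) x"
proof -
  have "lcls DX x (dform DX h) \<in> pb_tot (Lam1 X DX)"
    using assms(3) dform_Omega1[OF assms(1,2)] by auto
  then show ?thesis unfolding fib_def by simp
qed

lemma sec_fib: "s \<in> sections X DX B \<Longrightarrow> x \<in> X \<Longrightarrow> s x \<in> fib B x"
  unfolding sections_def fib_def smooth_betw_def by auto

lemma sec_plot: "s \<in> sections X DX B \<Longrightarrow> (n, U, p) \<in> DX \<Longrightarrow> plot_of n U (s \<circ> p) \<in> pb_diff B"
  unfolding sections_def using smooth_betwD by blast

lemma sec_ext: "s \<in> sections X DX B \<Longrightarrow> s \<in> extensional X"
  unfolding sections_def by blast

lemma sectionsI:
  assumes "s \<in> extensional X" "\<And>x. x \<in> X \<Longrightarrow> s x \<in> fib B x"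
    "\<And>n U p. (n, U, p) \<in> DX \<Longrightarrow> plot_of n U (s \<circ> p) \<in> pb_diff B"
  shows "s \<in> sections X DX B"
  unfolding sections_def smooth_betw_def using assms unfolding fib_def by auto

lemma c1_sec:
  assumes dX: "diffeology X DX" and s: "s \<in> sections X DX (dsum B1 B2)"
  shows "restrict (fst \<circ> s) X \<in> sections X DX B1"
proof (rule sectionsI)
  show "restrict (fst \<circ> s) X \<in> extensional X" by simp
next
  fix x assume x: "x \<in> X"
  obtain v w where vw: "s x = (v, w)" by (cases "s x")
  have "s x \<in> fib (dsum B1 B2) x" by (rule sec_fib[OF s x])
  then show "restrict (fst \<circ> s) X x \<in> fib B1 x" using x vw by (simp add: fib_dsum)
next
  fix n U p assume P: "(n, U, p) \<in> DX"
  have "plot_of n U (s \<circ> p) \<in> fibprod_diff B1 B2" using sec_plot[OF s P] by simp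
  then have "plot_of n U (fst \<circ> restrict (s \<circ> p) U) \<in> pb_diff B1"
    using fibprod_diffD(3) unfolding plot_of_eq_iff by blast
  moreover have "plot_of n U (fst \<circ> restrict (s \<circ> p) U) = plot_of n U (restrict (fst \<circ> s) X \<circ> p)"
  proof (rule plot_of_cong)
    fix u assume u: "u \<in> U"
    have "p u \<in> X" using diffeology_plotD(3)[OF dX P] u by blast
    then show "(fst \<circ> restrict (s \<circ> p) U) u = (restrict (fst \<circ> s) X \<circ> p) u" using u by simp
  qed
  ultimately show "plot_of n U (restrict (fst \<circ> s) X \<circ> p) \<in> pb_diff B1" by simp
qed


lemma c2_sec:
  assumes dX: "diffeology X DX" and s: "s \<in> sections X DX (dsum B1 B2)"
  shows "restrict (snd \<circ> s) X \<in> sections X DX B2"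
proof (rule sectionsI)
  show "restrict (snd \<circ> s) X \<in> extensional X" by simp
next
  fix x assume x: "x \<in> X"
  obtain v w where vw: "s x = (v, w)" by (cases "s x")
  have "s x \<in> fib (dsum B1 B2) x" by (rule sec_fib[OF s x])
  then show "restrict (snd \<circ> s) X x \<in> fib B2 x" using x vw by (simp add: fib_dsum)
next
  fix n U p assume P: "(n, U, p) \<in> DX"
  have "plot_of n U (s \<circ> p) \<in> fibprod_diff B1 B2" using sec_plot[OF s P] by simp
  then have "plot_of n U (snd \<circ> restrict (s \<circ> p) U) \<in> pb_diff B2"
    using fibprod_diffD(4) unfolding plot_of_eq_iff by blast
  moreover have "plot_of n U (snd \<circ> restrict (s \<circ> p) U) = plot_of n U (restrict (snd \<circ> s) X \<circ> p)"
  proof (rule plot_of_cong)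
    fix u assume u: "u \<in> U"
    have "p u \<in> X" using diffeology_plotD(3)[OF dX P] u by blast
    then show "(snd \<circ> restrict (s \<circ> p) U) u = (restrict (snd \<circ> s) X \<circ> p) u" using u by simp
  qed
  ultimately show "plot_of n U (restrict (snd \<circ> s) X \<circ> p) \<in> pb_diff B2" by simp
qed


lemma func_diffD:
  assumes "(n, U, q) \<in> func_diff DX DY S"
  shows "open_in_Rn n U" "q = restrict q U" "q ` U \<subseteq> S"
    "\<And>m W p. (m, W, p) \<in> DX \<Longrightarrow>
       plot_of (n + m) (joinset n U W) (\<lambda>z. q (fpart n z) (p (spart n z))) \<in> DY"
  using assms unfolding func_diff_def by auto

lemma func_diff_plotI:
  assumes "open_in_Rn n U" "\<And>u. u \<in> U \<Longrightarrow> q u \<in> S"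
    "\<And>m W p. (m, W, p) \<in> DX \<Longrightarrow>
       plot_of (n + m) (joinset n U W) (\<lambda>z. restrict q U (fpart n z) (p (spart n z))) \<in> DY"
  shows "plot_of n U q \<in> func_diff DX DY S"
  unfolding plot_of_eq_iff[of n U q] func_diff_def mem_Collect_eq prod.case
  using assms by auto

lemma joinset_parts:
  assumes "z \<in> joinset n U W" "U \<subseteq> Rn n"
  shows "fpart n z \<in> U" "spart n z \<in> W"
proof -
  obtain u w where z: "z = (\<lambda>i. if i < n then u i else w (i - n))" "u \<in> U" "w \<in> W"
    using assms(1) unfolding joinset_def by blast
  have "u i = 0" if "i \<ge> n" for i using z(2) assms(2) that unfolding Rn_def by auto
  then have "fpart n z = u" unfolding fpart_def z(1) by (auto intro!: ext)
  then show "fpart n z \<in> U" using z by simp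
  have "spart n z = w" unfolding spart_def z(1) by (auto intro!: ext)
  then show "spart n z \<in> W" using z by simp
qed

lemma open_in_Rn_sub: "open_in_Rn n U \<Longrightarrow> U \<subseteq> Rn n"
  unfolding open_in_Rn_def by blast


locale mainset =
  fixes X :: "'a set" and DX :: "'a plot set"
    and B1 :: "('a, 'v) vpb" and B2 :: "('a, 'w) vpb"
    and N1 :: "('a \<Rightarrow> 'v) \<Rightarrow> ('a \<Rightarrow> ('a, 'a lam, 'v) tens)"
    and N2 :: "('a \<Rightarrow> 'w) \<Rightarrow> ('a \<Rightarrow> ('a, 'a lam, 'w) tens)"
  assumes dX: "diffeology X DX"
    and V1: "is_vpb X DX B1" and V2: "is_vpb X DX B2"
    and C1: "is_connection X DX B1 N1" and C2: "is_connection X DX B2 N2"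
begin

abbreviation "L \<equiv> Lam1 X DX"
abbreviation "S \<equiv> dsum B1 B2"
abbreviation "T \<equiv> tensor_bundle X DX L S"
abbreviation "T1 \<equiv> tensor_bundle X DX L B1"
abbreviation "T2 \<equiv> tensor_bundle X DX L B2"
abbreviation "TP \<equiv> tensor_pre X L S"
abbreviation "TP1 \<equiv> tensor_pre X L B1"
abbreviation "TP2 \<equiv> tensor_pre X L B2"
abbreviation "i1 \<equiv> tmap_id L S (Incl1 B1 B2)"
abbreviation "i2 \<equiv> tmap_id L S (Incl2 B1 B2)"
abbreviation "c1 s \<equiv> restrict (fst \<circ> s) X"
abbreviation "c2 s \<equiv> restrict (snd \<circ> s) X"
abbreviation "cs \<equiv> conn_sum X DX B1 B2 N1 N2"

lemma Lp: "smooth_betw (pb_tot L) (pb_diff L) X DX (pb_proj L)" by (rule Lam1_proj[OF dX])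

lemma VT: "is_vpb X DX T" by (rule tb_vpb[OF dX Lp])

sublocale I1: tmsetup X DX L B1 S "Incl1 B1 B2"
  by unfold_locales (use dX Lp flin_Incl1[OF V1 V2] gplot_Incl1[OF V1 V2] in auto)

sublocale I2: tmsetup X DX L B2 S "Incl2 B1 B2"
  by unfold_locales (use dX Lp flin_Incl2[OF V1 V2] gplot_Incl2[OF V1 V2] in auto)

lemma N1_facts:
  "\<And>s. s \<in> sections X DX B1 \<Longrightarrow> N1 s \<in> sections X DX T1"
  "\<And>s t. s \<in> sections X DX B1 \<Longrightarrow> t \<in> sections X DX B1 \<Longrightarrow> N1 (sec_add X B1 s t) = sec_add X T1 (N1 s) (N1 t)"
  "\<And>c s. s \<in> sections X DX B1 \<Longrightarrow> N1 (sec_smul X B1 c s) = sec_smul X T1 c (N1 s)"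
  "smooth_betw (sections X DX B1) (sec_diff X DX B1) (sections X DX T1) (sec_diff X DX T1) N1"
  "\<And>h s. s \<in> sections X DX B1 \<Longrightarrow> smooth_betw X DX UNIV real_diff h \<Longrightarrow>
          N1 (restrict (\<lambda>x. pb_smul B1 (h x) (s x)) X) =
          restrict (\<lambda>x. pb_add T1 (tens L B1 (lcls DX x (dform DX h)) (s x)) (pb_smul T1 (h x) (N1 s x))) X"
  using C1 unfolding is_connection_def Let_def by blast+

lemma N2_facts:
  "\<And>s. s \<in> sections X DX B2 \<Longrightarrow> N2 s \<in> sections X DX T2"
  "\<And>s t. s \<in> sections X DX B2 \<Longrightarrow> t \<in> sections X DX B2 \<Longrightarrow> N2 (sec_add X B2 s t) = sec_add X T2 (N2 s) (N2 t)"
  "\<And>c s. s \<in> sections X DX B2 \<Longrightarrow> N2 (sec_smul X B2 c s) = sec_smul X T2 c (N2 s)"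
  "smooth_betw (sections X DX B2) (sec_diff X DX B2) (sections X DX T2) (sec_diff X DX T2) N2"
  "\<And>h s. s \<in> sections X DX B2 \<Longrightarrow> smooth_betw X DX UNIV real_diff h \<Longrightarrow>
          N2 (restrict (\<lambda>x. pb_smul B2 (h x) (s x)) X) =
          restrict (\<lambda>x. pb_add T2 (tens L B2 (lcls DX x (dform DX h)) (s x)) (pb_smul T2 (h x) (N2 s x))) X"
  using C2 unfolding is_connection_def Let_def by blast+

lemma cs_val: "x \<in> X \<Longrightarrow> cs s x = pb_add TP (i1 (N1 (c1 s) x)) (i2 (N2 (c2 s) x))"
  unfolding conn_sum_def Let_def by simp

lemma cs_ext: "cs s \<in> extensional X"
  unfolding conn_sum_def Let_def by simp

lemma vsTP: "x \<in> X \<Longrightarrow> vector_space_on (fib TP x) (pb_add TP) (pb_smul TP) (pb_zero TP x)"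
  by (rule tp_vs)

lemma pt1: assumes "s \<in> sections X DX S" "x \<in> X"
  shows "N1 (c1 s) x \<in> fib TP1 x" "i1 (N1 (c1 s) x) \<in> fib TP x"
proof -
  have "N1 (c1 s) \<in> sections X DX T1" by (rule N1_facts(1)[OF c1_sec[OF dX assms(1)]])
  from sec_fib[OF this assms(2)] show a: "N1 (c1 s) x \<in> fib TP1 x" by simp
  show "i1 (N1 (c1 s) x) \<in> fib TP x" by (rule tmap_fib[OF assms(2) flin_Incl1[OF V1 V2 assms(2)] a])
qed

lemma pt2: assumes "s \<in> sections X DX S" "x \<in> X"
  shows "N2 (c2 s) x \<in> fib TP2 x" "i2 (N2 (c2 s) x) \<in> fib TP x"
proof -
  have "N2 (c2 s) \<in> sections X DX T2" by (rule N2_facts(1)[OF c2_sec[OF dX assms(1)]])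
  from sec_fib[OF this assms(2)] show a: "N2 (c2 s) x \<in> fib TP2 x" by simp
  show "i2 (N2 (c2 s) x) \<in> fib TP x" by (rule tmap_fib[OF assms(2) flin_Incl2[OF V1 V2 assms(2)] a])
qed

lemma sum_plot:
  assumes r1: "plot_of k J r1 \<in> pb_diff T1" and r2: "plot_of k J r2 \<in> pb_diff T2"
    and h: "\<And>z. z \<in> J \<Longrightarrow> \<exists>x\<in>X. r1 z \<in> fib TP1 x \<and> r2 z \<in> fib TP2 x"
  shows "plot_of k J (\<lambda>z. pb_add TP (i1 (r1 z)) (i2 (r2 z))) \<in> pb_diff T"
proof -
  have q1: "plot_of k J (i1 \<circ> r1) \<in> pb_diff T"
    using I1.tm_smooth[OF r1[unfolded plot_of_eq_iff]] by simp
  have q2: "plot_of k J (i2 \<circ> r2) \<in> pb_diff T"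
    using I2.tm_smooth[OF r2[unfolded plot_of_eq_iff]] by simp
  have "plot_of k J (\<lambda>z. pb_add T ((i1 \<circ> r1) z) ((i2 \<circ> r2) z)) \<in> pb_diff T"
  proof (rule vpb_add_plot[OF VT q1 q2])
    fix z assume z: "z \<in> J"
    obtain x where x: "x \<in> X" "r1 z \<in> fib TP1 x" "r2 z \<in> fib TP2 x" using h[OF z] by blast
    have a: "i1 (r1 z) \<in> fib TP x" by (rule tmap_fib[OF x(1) flin_Incl1[OF V1 V2 x(1)] x(2)])
    have b: "i2 (r2 z) \<in> fib TP x" by (rule tmap_fib[OF x(1) flin_Incl2[OF V1 V2 x(1)] x(3)])
    show "(i1 \<circ> r1) z \<in> pb_tot T \<and> (i2 \<circ> r2) z \<in> pb_tot T \<and> pb_proj T ((i1 \<circ> r1) z) = pb_proj T ((i2 \<circ> r2) z)"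
      using a b unfolding fib_def by simp
  qed
  then show ?thesis by simp
qed

lemma cs_sec:
  assumes s: "s \<in> sections X DX S"
  shows "cs s \<in> sections X DX T"
proof (rule sectionsI)
  show "cs s \<in> extensional X" by (rule cs_ext)
next
  fix x assume x: "x \<in> X"
  show "cs s x \<in> fib T x"
    unfolding cs_val[OF x] tb_fib by (rule vs_facts(2)[OF vsTP[OF x] pt1(2)[OF s x] pt2(2)[OF s x]])
next
  fix n U p assume P: "(n, U, p) \<in> DX"
  have pX: "\<And>u. u \<in> U \<Longrightarrow> p u \<in> X" using diffeology_plotD(3)[OF dX P] by blast
  have r1: "plot_of n U (N1 (c1 s) \<circ> p) \<in> pb_diff T1"
    by (rule sec_plot[OF N1_facts(1)[OF c1_sec[OF dX s]] P])
  have r2: "plot_of n U (N2 (c2 s) \<circ> p) \<in> pb_diff T2"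
    by (rule sec_plot[OF N2_facts(1)[OF c2_sec[OF dX s]] P])
  have "plot_of n U (\<lambda>z. pb_add TP (i1 ((N1 (c1 s) \<circ> p) z)) (i2 ((N2 (c2 s) \<circ> p) z))) \<in> pb_diff T"
    by (rule sum_plot[OF r1 r2]) (use pX pt1(1)[OF s] pt2(1)[OF s] in auto)
  moreover have "plot_of n U (\<lambda>z. pb_add TP (i1 ((N1 (c1 s) \<circ> p) z)) (i2 ((N2 (c2 s) \<circ> p) z))) =
     plot_of n U (cs s \<circ> p)"
    by (rule plot_of_cong) (simp add: cs_val pX)
  ultimately show "plot_of n U (cs s \<circ> p) \<in> pb_diff T" by simp
qed


lemma dsum_add': "pb_add (dsum B C) p q = (pb_add B (fst p) (fst q), pb_add C (snd p) (snd q))"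
  by (cases p; cases q) simp

lemma dsum_smul': "pb_smul (dsum B C) c p = (pb_smul B c (fst p), pb_smul C c (snd p))"
  by (cases p) simp

lemma sec_dsum_fib: "s \<in> sections X DX S \<Longrightarrow> x \<in> X \<Longrightarrow> fst (s x) \<in> fib B1 x \<and> snd (s x) \<in> fib B2 x"
  using sec_fib[of s X DX S x] fib_dsum[of "fst (s x)" "snd (s x)" B1 B2 x] by simp

lemma cs_add:
  assumes s: "s \<in> sections X DX S" and t: "t \<in> sections X DX S"
  shows "cs (sec_add X S s t) = sec_add X T (cs s) (cs t)"
proof (rule ext)
  fix x
  show "cs (sec_add X S s t) x = sec_add X T (cs s) (cs t) x"
  proof (cases "x \<in> X")
    case False
    then show ?thesis using cs_ext unfolding sec_add_def extensional_def by simp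
  next
    case x: True
    have e1: "c1 (sec_add X S s t) = sec_add X B1 (c1 s) (c1 t)"
      by (rule ext) (simp add: sec_add_def dsum_add')
    have e2: "c2 (sec_add X S s t) = sec_add X B2 (c2 s) (c2 t)"
      by (rule ext) (simp add: sec_add_def dsum_add')
    have n1: "N1 (c1 (sec_add X S s t)) x = pb_add TP1 (N1 (c1 s) x) (N1 (c1 t) x)"
      unfolding e1 N1_facts(2)[OF c1_sec[OF dX s] c1_sec[OF dX t]] using x by (simp add: sec_add_def)
    have n2: "N2 (c2 (sec_add X S s t)) x = pb_add TP2 (N2 (c2 s) x) (N2 (c2 t) x)"
      unfolding e2 N2_facts(2)[OF c2_sec[OF dX s] c2_sec[OF dX t]] using x by (simp add: sec_add_def)
    have "cs (sec_add X S s t) x = pb_add TP (pb_add TP (i1 (N1 (c1 s) x)) (i1 (N1 (c1 t) x)))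
         (pb_add TP (i2 (N2 (c2 s) x)) (i2 (N2 (c2 t) x)))"
      unfolding cs_val[OF x] n1 n2
        tmap_add[OF x flin_Incl1[OF V1 V2 x] pt1(1)[OF s x] pt1(1)[OF t x]]
        tmap_add[OF x flin_Incl2[OF V1 V2 x] pt2(1)[OF s x] pt2(1)[OF t x]] ..
    also have "\<dots> = pb_add TP (pb_add TP (i1 (N1 (c1 s) x)) (i2 (N2 (c2 s) x)))
         (pb_add TP (i1 (N1 (c1 t) x)) (i2 (N2 (c2 t) x)))"
      by (rule vs_swap4[OF vsTP[OF x] pt1(2)[OF s x] pt1(2)[OF t x] pt2(2)[OF s x] pt2(2)[OF t x]])
    also have "\<dots> = sec_add X T (cs s) (cs t) x"
      using x by (simp add: sec_add_def cs_val)
    finally show ?thesis .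
  qed
qed

lemma cs_smul:
  assumes s: "s \<in> sections X DX S"
  shows "cs (sec_smul X S c s) = sec_smul X T c (cs s)"
proof (rule ext)
  fix x
  show "cs (sec_smul X S c s) x = sec_smul X T c (cs s) x"
  proof (cases "x \<in> X")
    case False
    then show ?thesis using cs_ext unfolding sec_smul_def extensional_def by simp
  next
    case x: True
    have e1: "c1 (sec_smul X S c s) = sec_smul X B1 c (c1 s)"
      by (rule ext) (simp add: sec_smul_def dsum_smul')
    have e2: "c2 (sec_smul X S c s) = sec_smul X B2 c (c2 s)"
      by (rule ext) (simp add: sec_smul_def dsum_smul')
    have n1: "N1 (c1 (sec_smul X S c s)) x = pb_smul TP1 c (N1 (c1 s) x)"
      unfolding e1 N1_facts(3)[OF c1_sec[OF dX s]] using x by (simp add: sec_smul_def)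
    have n2: "N2 (c2 (sec_smul X S c s)) x = pb_smul TP2 c (N2 (c2 s) x)"
      unfolding e2 N2_facts(3)[OF c2_sec[OF dX s]] using x by (simp add: sec_smul_def)
    have "cs (sec_smul X S c s) x = pb_add TP (pb_smul TP c (i1 (N1 (c1 s) x))) (pb_smul TP c (i2 (N2 (c2 s) x)))"
      unfolding cs_val[OF x] n1 n2
        tmap_smul[OF x flin_Incl1[OF V1 V2 x] pt1(1)[OF s x]]
        tmap_smul[OF x flin_Incl2[OF V1 V2 x] pt2(1)[OF s x]] ..
    also have "\<dots> = pb_smul TP c (pb_add TP (i1 (N1 (c1 s) x)) (i2 (N2 (c2 s) x)))"
      by (rule vs_facts(8)[OF vsTP[OF x] pt1(2)[OF s x] pt2(2)[OF s x], symmetric])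
    also have "\<dots> = sec_smul X T c (cs s) x"
      using x by (simp add: sec_smul_def cs_val)
    finally show ?thesis .
  qed
qed

lemma cs_smooth:
  "smooth_betw (sections X DX S) (sec_diff X DX S) (sections X DX T) (sec_diff X DX T) cs"
  unfolding smooth_betw_def
proof (intro conjI ballI)
  fix s assume "s \<in> sections X DX S"
  then show "cs s \<in> sections X DX T" by (rule cs_sec)
next
  fix P assume P: "P \<in> sec_diff X DX S"
  obtain n U q where nUq: "P = (n, U, q)" by (cases P) auto
  have Q: "(n, U, q) \<in> func_diff DX (pb_diff S) (sections X DX S)"
    using P nUq unfolding sec_diff_def by simp
  note QD = func_diffD[OF Q]
  have URn: "U \<subseteq> Rn n" by (rule open_in_Rn_sub[OF QD(1)])
  have qs: "\<And>u. u \<in> U \<Longrightarrow> q u \<in> sections X DX S" using QD(3) by blast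
  have jp: "\<And>m W p z. (m, W, p) \<in> DX \<Longrightarrow> z \<in> joinset n U W \<Longrightarrow>
      fpart n z \<in> U \<and> p (spart n z) \<in> X"
    using joinset_parts[OF _ URn] diffeology_plotD(3)[OF dX] by blast
  have q1: "plot_of n U (\<lambda>u. c1 (q u)) \<in> sec_diff X DX B1"
    unfolding sec_diff_def
  proof (rule func_diff_plotI[OF QD(1)])
    fix u assume "u \<in> U"
    then show "c1 (q u) \<in> sections X DX B1" using c1_sec[OF dX qs] by blast
  next
    fix m W p assume W: "(m, W, p) \<in> DX"
    have "plot_of (n + m) (joinset n U W) (\<lambda>z. q (fpart n z) (p (spart n z))) \<in> fibprod_diff B1 B2"
      using QD(4)[OF W] by simp
    then have "plot_of (n + m) (joinset n U W) (fst \<circ> restrict (\<lambda>z. q (fpart n z) (p (spart n z))) (joinset n U W))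
        \<in> pb_diff B1"
      using fibprod_diffD(3) unfolding plot_of_eq_iff by blast
    moreover have "plot_of (n + m) (joinset n U W) (fst \<circ> restrict (\<lambda>z. q (fpart n z) (p (spart n z))) (joinset n U W))
      = plot_of (n + m) (joinset n U W) (\<lambda>z. restrict (\<lambda>u. c1 (q u)) U (fpart n z) (p (spart n z)))"
      by (rule plot_of_cong) (use jp[OF W] in simp)
    ultimately show "plot_of (n + m) (joinset n U W) (\<lambda>z. restrict (\<lambda>u. c1 (q u)) U (fpart n z) (p (spart n z)))
        \<in> pb_diff B1" by simp
  qed
  have q2: "plot_of n U (\<lambda>u. c2 (q u)) \<in> sec_diff X DX B2"
    unfolding sec_diff_def
  proof (rule func_diff_plotI[OF QD(1)])
    fix u assume "u \<in> U"
    then show "c2 (q u) \<in> sections X DX B2" using c2_sec[OF dX qs] by blast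
  next
    fix m W p assume W: "(m, W, p) \<in> DX"
    have "plot_of (n + m) (joinset n U W) (\<lambda>z. q (fpart n z) (p (spart n z))) \<in> fibprod_diff B1 B2"
      using QD(4)[OF W] by simp
    then have "plot_of (n + m) (joinset n U W) (snd \<circ> restrict (\<lambda>z. q (fpart n z) (p (spart n z))) (joinset n U W))
        \<in> pb_diff B2"
      using fibprod_diffD(4) unfolding plot_of_eq_iff by blast
    moreover have "plot_of (n + m) (joinset n U W) (snd \<circ> restrict (\<lambda>z. q (fpart n z) (p (spart n z))) (joinset n U W))
      = plot_of (n + m) (joinset n U W) (\<lambda>z. restrict (\<lambda>u. c2 (q u)) U (fpart n z) (p (spart n z)))"
      by (rule plot_of_cong) (use jp[OF W] in simp)
    ultimately show "plot_of (n + m) (joinset n U W) (\<lambda>z. restrict (\<lambda>u. c2 (q u)) U (fpart n z) (p (spart n z)))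
        \<in> pb_diff B2" by simp
  qed
  have m1: "plot_of n U (N1 \<circ> (\<lambda>u. c1 (q u))) \<in> sec_diff X DX T1"
    using smooth_betwD[OF N1_facts(4) q1[unfolded plot_of_eq_iff]] by simp
  have m2: "plot_of n U (N2 \<circ> (\<lambda>u. c2 (q u))) \<in> sec_diff X DX T2"
    using smooth_betwD[OF N2_facts(4) q2[unfolded plot_of_eq_iff]] by simp
  have "plot_of n U (cs \<circ> q) \<in> func_diff DX (pb_diff T) (sections X DX T)"
  proof (rule func_diff_plotI[OF QD(1)])
    fix u assume "u \<in> U"
    then show "(cs \<circ> q) u \<in> sections X DX T" using cs_sec qs by simp
  next
    fix m W p assume W: "(m, W, p) \<in> DX"
    let ?J = "joinset n U W"
    have r1: "plot_of (n + m) ?J (\<lambda>z. restrict (N1 \<circ> (\<lambda>u. c1 (q u))) U (fpart n z) (p (spart n z))) \<in> pb_diff T1"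
      using func_diffD(4)[OF m1[unfolded plot_of_eq_iff sec_diff_def] W] .
    have r2: "plot_of (n + m) ?J (\<lambda>z. restrict (N2 \<circ> (\<lambda>u. c2 (q u))) U (fpart n z) (p (spart n z))) \<in> pb_diff T2"
      using func_diffD(4)[OF m2[unfolded plot_of_eq_iff sec_diff_def] W] .
    have "plot_of (n + m) ?J (\<lambda>z. pb_add TP
        (i1 (restrict (N1 \<circ> (\<lambda>u. c1 (q u))) U (fpart n z) (p (spart n z))))
        (i2 (restrict (N2 \<circ> (\<lambda>u. c2 (q u))) U (fpart n z) (p (spart n z))))) \<in> pb_diff T"
    proof (rule sum_plot[OF r1 r2])
      fix z assume z: "z \<in> ?J"
      have u: "fpart n z \<in> U" and x: "p (spart n z) \<in> X" using jp[OF W z] by auto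
      show "\<exists>x\<in>X. restrict (N1 \<circ> (\<lambda>u. c1 (q u))) U (fpart n z) (p (spart n z)) \<in> fib TP1 x \<and>
          restrict (N2 \<circ> (\<lambda>u. c2 (q u))) U (fpart n z) (p (spart n z)) \<in> fib TP2 x"
        using u x pt1(1)[OF qs[OF u] x] pt2(1)[OF qs[OF u] x] by auto
    qed
    moreover have "plot_of (n + m) ?J (\<lambda>z. pb_add TP
        (i1 (restrict (N1 \<circ> (\<lambda>u. c1 (q u))) U (fpart n z) (p (spart n z))))
        (i2 (restrict (N2 \<circ> (\<lambda>u. c2 (q u))) U (fpart n z) (p (spart n z))))) =
      plot_of (n + m) ?J (\<lambda>z. restrict (cs \<circ> q) U (fpart n z) (p (spart n z)))"
    proof (rule plot_of_cong)
      fix z assume z: "z \<in> ?J"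
      have u: "fpart n z \<in> U" and x: "p (spart n z) \<in> X" using jp[OF W z] by auto
      show "pb_add TP
        (i1 (restrict (N1 \<circ> (\<lambda>u. c1 (q u))) U (fpart n z) (p (spart n z))))
        (i2 (restrict (N2 \<circ> (\<lambda>u. c2 (q u))) U (fpart n z) (p (spart n z)))) =
        restrict (cs \<circ> q) U (fpart n z) (p (spart n z))"
        using u x by (simp add: cs_val)
    qed
    ultimately show "plot_of (n + m) ?J (\<lambda>z. restrict (cs \<circ> q) U (fpart n z) (p (spart n z))) \<in> pb_diff T"
      by simp
  qed
  then show "case P of (n, U, p) \<Rightarrow> plot_of n U (cs \<circ> p) \<in> sec_diff X DX T"
    unfolding nUq sec_diff_def by simp
qed


lemma cs_leib:
  assumes s: "s \<in> sections X DX S" and h: "smooth_betw X DX UNIV real_diff h"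
  shows "cs (restrict (\<lambda>x. pb_smul S (h x) (s x)) X) =
     restrict (\<lambda>x. pb_add T (tens L S (lcls DX x (dform DX h)) (s x)) (pb_smul T (h x) (cs s x))) X"
proof (rule ext)
  fix x
  show "cs (restrict (\<lambda>x. pb_smul S (h x) (s x)) X) x =
     restrict (\<lambda>x. pb_add T (tens L S (lcls DX x (dform DX h)) (s x)) (pb_smul T (h x) (cs s x))) X x"
  proof (cases "x \<in> X")
    case False
    then show ?thesis using cs_ext unfolding extensional_def by simp
  next
    case x: True
    let ?w = "lcls DX x (dform DX h)"
    have w: "?w \<in> fib L x" by (rule dform_fib[OF dX h x])
    have sx: "fst (s x) \<in> fib B1 x" "snd (s x) \<in> fib B2 x" using sec_dsum_fib[OF s x] by auto
    note l1 = flin_Incl1[OF V1 V2 x] and l2 = flin_Incl2[OF V1 V2 x]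
    have e1: "c1 (restrict (\<lambda>x. pb_smul S (h x) (s x)) X) = restrict (\<lambda>x. pb_smul B1 (h x) (c1 s x)) X"
      by (rule ext) (simp add: dsum_smul')
    have e2: "c2 (restrict (\<lambda>x. pb_smul S (h x) (s x)) X) = restrict (\<lambda>x. pb_smul B2 (h x) (c2 s x)) X"
      by (rule ext) (simp add: dsum_smul')
    have n1: "N1 (c1 (restrict (\<lambda>x. pb_smul S (h x) (s x)) X)) x =
        pb_add TP1 (tens L B1 ?w (fst (s x))) (pb_smul TP1 (h x) (N1 (c1 s) x))"
      unfolding e1 N1_facts(5)[OF c1_sec[OF dX s] h] using x by simp
    have n2: "N2 (c2 (restrict (\<lambda>x. pb_smul S (h x) (s x)) X)) x =
        pb_add TP2 (tens L B2 ?w (snd (s x))) (pb_smul TP2 (h x) (N2 (c2 s) x))"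
      unfolding e2 N2_facts(5)[OF c2_sec[OF dX s] h] using x by simp
    have tf1: "tens L B1 ?w (fst (s x)) \<in> fib TP1 x" by (rule tens_fib[OF x w sx(1)])
    have tf2: "tens L B2 ?w (snd (s x)) \<in> fib TP2 x" by (rule tens_fib[OF x w sx(2)])
    have sf1: "pb_smul TP1 (h x) (N1 (c1 s) x) \<in> fib TP1 x"
      by (rule vs_facts(3)[OF tp_vs[OF x] pt1(1)[OF s x]])
    have sf2: "pb_smul TP2 (h x) (N2 (c2 s) x) \<in> fib TP2 x"
      by (rule vs_facts(3)[OF tp_vs[OF x] pt2(1)[OF s x]])
    have I1v: "Incl1 B1 B2 (fst (s x)) = (fst (s x), pb_zero B2 x)"
      using sx unfolding Incl1_def fib_def by simp
    have I2v: "Incl2 B1 B2 (snd (s x)) = (pb_zero B1 x, snd (s x))"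
      using sx unfolding Incl2_def fib_def by simp
    have if1: "Incl1 B1 B2 (fst (s x)) \<in> fib S x" using l1 sx unfolding flin_def by blast
    have if2: "Incl2 B1 B2 (snd (s x)) \<in> fib S x" using l2 sx unfolding flin_def by blast
    have sumI: "pb_add S (Incl1 B1 B2 (fst (s x))) (Incl2 B1 B2 (snd (s x))) = s x"
      unfolding I1v I2v dsum_simps
      using vs_add_zero_right[OF is_vpbD(4)[OF V1 x] sx(1)] vs_facts(6)[OF is_vpbD(4)[OF V2 x] sx(2)]
      by simp
    let ?A1 = "tens L S ?w (Incl1 B1 B2 (fst (s x)))"
    let ?A2 = "tens L S ?w (Incl2 B1 B2 (snd (s x)))"
    let ?M1 = "i1 (N1 (c1 s) x)" and ?M2 = "i2 (N2 (c2 s) x)"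
    have A1: "?A1 \<in> fib TP x" by (rule tens_fib[OF x w if1])
    have A2: "?A2 \<in> fib TP x" by (rule tens_fib[OF x w if2])
    have M1: "?M1 \<in> fib TP x" by (rule pt1(2)[OF s x])
    have M2: "?M2 \<in> fib TP x" by (rule pt2(2)[OF s x])
    note vs = vsTP[OF x]
    have "cs (restrict (\<lambda>x. pb_smul S (h x) (s x)) X) x =
        pb_add TP (pb_add TP ?A1 (pb_smul TP (h x) ?M1)) (pb_add TP ?A2 (pb_smul TP (h x) ?M2))"
      unfolding cs_val[OF x] n1 n2 tmap_add[OF x l1 tf1 sf1] tmap_add[OF x l2 tf2 sf2]
        tmap_tens[OF l1 w sx(1)] tmap_tens[OF l2 w sx(2)]
        tmap_smul[OF x l1 pt1(1)[OF s x]] tmap_smul[OF x l2 pt2(1)[OF s x]] ..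
    also have "\<dots> = pb_add TP (pb_add TP ?A1 ?A2) (pb_add TP (pb_smul TP (h x) ?M1) (pb_smul TP (h x) ?M2))"
      by (rule vs_swap4[OF vs A1 vs_facts(3)[OF vs M1] A2 vs_facts(3)[OF vs M2]])
    also have "pb_add TP ?A1 ?A2 = tens L S ?w (s x)"
      unfolding tens_add[OF w if1 if2] sumI ..
    also have "pb_add TP (pb_smul TP (h x) ?M1) (pb_smul TP (h x) ?M2) = pb_smul TP (h x) (pb_add TP ?M1 ?M2)"
      by (rule vs_facts(8)[OF vs M1 M2, symmetric])
    also have "pb_add TP (tens L S ?w (s x)) (pb_smul TP (h x) (pb_add TP ?M1 ?M2)) =
       restrict (\<lambda>x. pb_add T (tens L S (lcls DX x (dform DX h)) (s x)) (pb_smul T (h x) (cs s x))) X x"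
      using x by (simp add: cs_val)
    finally show ?thesis .
  qed
qed

lemma cs_conn: "is_connection X DX S cs"
  unfolding is_connection_def Let_def
  using cs_sec cs_add cs_smul cs_smooth cs_leib by simp

end

theorem proposition3p8:
  fixes X :: "'a set" and DX :: "'a plot set"
    and B1 :: "('a, 'v) vpb" and B2 :: "('a, 'w) vpb"
    and N1 :: "('a \<Rightarrow> 'v) \<Rightarrow> ('a \<Rightarrow> ('a, 'a lam, 'v) tens)"
    and N2 :: "('a \<Rightarrow> 'w) \<Rightarrow> ('a \<Rightarrow> ('a, 'a lam, 'w) tens)"
  assumes "diffeology X DX"
    and "is_vpb X DX B1" and "fin_dim_vpb X B1"
    and "is_vpb X DX B2" and "fin_dim_vpb X B2"
    and "is_connection X DX B1 N1" and "is_connection X DX B2 N2"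
  shows "(\<forall>s\<in>sections X DX (dsum B1 B2).
            restrict (fst \<circ> s) X \<in> sections X DX B1 \<and> restrict (snd \<circ> s) X \<in> sections X DX B2 \<and>
            conn_sum X DX B1 B2 N1 N2 s \<in> sections X DX (tensor_bundle X DX (Lam1 X DX) (dsum B1 B2)))
         \<and> is_connection X DX (dsum B1 B2) (conn_sum X DX B1 B2 N1 N2)"
proof -
  interpret M: mainset X DX B1 B2 N1 N2
    by unfold_locales (use assms in auto)
  show ?thesis
    using c1_sec[OF assms(1)] c2_sec[OF assms(1)] M.cs_sec M.cs_conn by blast
qed


end
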